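(* (i) Let $\mu\in{\cal P}(2)$ with $|\mu|=k$, and let $n\geq k$. For $\tau\in{\cal P}(2,n)$, $$d^\tau_\mu(2n)=\begin{cases}0&\text{if }|\tau|>k,\\ 0&\text{if }|\tau|=k\text{ and }\tau\neq\mu,\\ 2^{\ell(\mu)}&\text{if }\tau=\mu.\end{cases}$$ If $|\tau|=j<k$, then $$d^\tau_\mu(2n)=\sum_{r=j\vee\lfloor\frac{k+1}{2}\rfloor}^{k-1}\left\{\sum_{s=j\vee\lfloor\frac{k+1}{2}\rfloor}^{r}(-1)^{r-s}\binom{r-j}{s-j}\,m\big((\mu,1^{2s-k}),2(\tau,1^{s-j})\big)\right\}\binom{n-j}{r-j}.$$ (ii) The set $\{f(\mu,2n):\mu\in{\cal P}(2,n)\}$ is a basis of ${\cal B}_{2n}$.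
   Context: Let $K_{2n}$ be the complete graph on $\{1,\ldots,2n\}$, ${\cal M}_{2n}$ its set of perfect matchings, and $[i,j]$ the edge joining $i,j$. For $A,B\in{\cal M}_{2n}$, $d(A,B)$ is the partition of $2n$ whose parts are the numbers of vertices of the connected components of the spanning subgraph with edge set $A\cup B$; it has the form $2\nu$ with $\nu\vdash n$. The group $S_{2n}$ acts on ${\mathbb C}[{\cal M}_{2n}]$ by relabelling vertices. For $\nu\vdash n$, $N_{2\nu}(A)=\sum_{B:\,d(A,B)=2\nu}B$, and these operators form a basis of ${\cal B}_{2n}=\mathrm{End}_{S_{2n}}({\mathbb C}[{\cal M}_{2n}])$. ${\cal P}(2)$ is the set of partitions all of whose parts are $\geq 2$; it includes the empty partition $(0)$ of $0$. ${\cal P}(2,n)=\{\tau\in{\cal P}(2):|\tau|\leq n\}$, and $\ell(\mu)$ is the number of parts of $\mu$. For a partition $\mu$ and $m\geq|\mu|$, $(\mu,1^{m-|\mu|})$ is the partition of $m$ obtained by appending $m-|\mu|$ parts equal to $1$. For $\tau\in{\cal P}(2)$, $M_{2\tau}(2n)=N_{2(\tau,1^{n-|\tau|})}$ if $n\geq|\tau|$ and $M_{2\tau}(2n)=0$ otherwise. For $\mu\in{\cal P}(2)$ and $m\geq1$, $c_\mu(m)\in{\mathbb C}[S_m]$ is the sum of all permutations whose cycles of length $\geq2$ have lengths given by $\mu$; it is $0$ if $m<|\mu|$. Then $f(\mu,2n)\in{\cal B}_{2n}$ is the operator $x\mapsto c_\mu(2n)\cdot x$ on ${\mathbb C}[{\cal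 M}_{2n}]$. The integers $d^\tau_\mu(2n)$ are defined by the expansion $f(\mu,2n)=\sum_{\tau\in{\cal P}(2,n)}d^\tau_\mu(2n)M_{2\tau}(2n)$. Let $I=\{[1,n+1],\ldots,[n,2n]\}$ in ${\cal M}_{2n}$, and more generally $I_s=\{[1,s+1],\ldots,[s,2s]\}\in{\cal M}_{2s}$. For $\rho\vdash 2s$ and $\sigma\vdash s$, $m(\rho,2\sigma)$ is the number of permutations in $S_{2s}$ of cycle type $\rho$ sending $I_s$ to a fixed $A\in{\cal M}_{2s}$ with $d(I_s,A)=2\sigma$; this is independent of the choice of $A$. Finally, $a\vee b=\max(a,b)$. *)

theory Defs
  imports Complex_Main "HOL-Library.Multiset" "HOL-Combinatorics.Permutations"
begin

(* Partitions are multisets of positive naturals; |mu| = sum_mset mu, l(mu) = size mu. *)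

definition P2 :: "nat multiset set" where
  "P2 = {mu. \<forall>x\<in>#mu. 2 \<le> x}"

definition P2n :: "nat \<Rightarrow> nat multiset set" where
  "P2n n = {tau. tau \<in> P2 \<and> sum_mset tau \<le> n}"

definition pad1 :: "nat multiset \<Rightarrow> nat \<Rightarrow> nat multiset" where
  "pad1 mu m = mu + replicate_mset (m - sum_mset mu) 1"

definition dbl :: "nat multiset \<Rightarrow> nat multiset" where
  "dbl nu = image_mset (\<lambda>x. 2 * x) nu"

(* perfect matchings of K_{2n} on vertex set {1..2n}; an edge [i,j] is the set {i,j} *)
definition pmatch :: "nat \<Rightarrow> nat set set set" where
  "pmatch n = {A. (\<forall>e\<in>A. \<exists>i j. i \<noteq> j \<and> e = {i, j}) \<and> \<Union>A = {1..2*n}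
                 \<and> (\<forall>e\<in>A. \<forall>e'\<in>A. e \<noteq> e' \<longrightarrow> e \<inter> e' = {})}"

definition adj :: "nat set set \<Rightarrow> nat set set \<Rightarrow> (nat \<times> nat) set" where
  "adj A B = {(u, v). \<exists>e\<in>A \<union> B. u \<in> e \<and> v \<in> e}"

definition component :: "nat \<Rightarrow> nat set set \<Rightarrow> nat set set \<Rightarrow> nat \<Rightarrow> nat set" where
  "component n A B x = {y \<in> {1..2*n}. (x, y) \<in> (adj A B)\<^sup>*}"

(* d(A,B): multiset of vertex numbers of the connected components *)
definition mdist :: "nat \<Rightarrow> nat set set \<Rightarrow> nat set set \<Rightarrow> nat multiset" where
  "mdist n A B = image_mset card (mset_set (component n A B ` {1..2*n}))"

definition act :: "(nat \<Rightarrow> nat) \<Rightarrow> nat set set \<Rightarrow> nat set set" where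
  "act p A = (\<lambda>e. p ` e) ` A"

(* cycle type of a permutation of S (all cycle lengths, including fixed points) *)
definition cycle_type :: "nat set \<Rightarrow> (nat \<Rightarrow> nat) \<Rightarrow> nat multiset" where
  "cycle_type S p = image_mset card (mset_set ((\<lambda>x. {(p ^^ k) x | k. True}) ` S))"

(* An element of End(C[M_2n]) is represented by its values on the basis M_2n:
   T A is the vector (a function M_2n -> complex, zero outside) T(A).
   f(mu,2n) : A |-> c_mu(2n) . A *)
definition fop :: "nat multiset \<Rightarrow> nat \<Rightarrow> nat set set \<Rightarrow> nat set set \<Rightarrow> complex" where
  "fop mu n A = (\<lambda>B. of_nat (card {p. p permutes {1..2*n}
                     \<and> filter_mset (\<lambda>l. 2 \<le> l) (cycle_type {1..2*n} p) = mu
                     \<and> act p A = B}))"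

definition Nop :: "nat multiset \<Rightarrow> nat \<Rightarrow> nat set set \<Rightarrow> nat set set \<Rightarrow> complex" where
  "Nop nu2 n A = (\<lambda>B. if B \<in> pmatch n \<and> mdist n A B = nu2 then 1 else 0)"

definition Mop :: "nat multiset \<Rightarrow> nat \<Rightarrow> nat set set \<Rightarrow> nat set set \<Rightarrow> complex" where
  "Mop tau n = (if sum_mset tau \<le> n then Nop (dbl (pad1 tau n)) n else (\<lambda>A B. 0))"

(* d^tau_mu(2n): coefficients of the expansion f(mu,2n) = sum_{tau in P(2,n)} d^tau_mu(2n) M_{2tau}(2n) *)
definition dcoef :: "nat multiset \<Rightarrow> nat \<Rightarrow> nat multiset \<Rightarrow> complex" where
  "dcoef mu n = (THE d. (\<forall>tau. tau \<notin> P2n n \<longrightarrow> d tau = 0) \<and>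
       (\<forall>A\<in>pmatch n. fop mu n A = (\<lambda>B. \<Sum>tau\<in>P2n n. d tau * Mop tau n A B)))"

definition Imatch :: "nat \<Rightarrow> nat set set" where
  "Imatch s = {{i, s + i} | i. i \<in> {1..s}}"

(* m(rho, 2 sigma), rho a partition of 2s, sig2 = 2 sigma; A a fixed matching with d(I_s,A) = 2 sigma *)
definition mcount :: "nat multiset \<Rightarrow> nat multiset \<Rightarrow> nat" where
  "mcount rho sig2 = (let s = sum_mset rho div 2;
       A = (SOME A. A \<in> pmatch s \<and> mdist s (Imatch s) A = sig2)
     in card {p. p permutes {1..2*s} \<and> cycle_type {1..2*s} p = rho \<and> act p (Imatch s) = A})"

(* B_{2n} = End_{S_2n}(C[M_2n]) and the basis property of {f(mu,2n)} *)
definition equivariant_op :: "nat \<Rightarrow> (nat set set \<Rightarrow> nat set set \<Rightarrow> complex) \<Rightarrow> bool" where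
  "equivariant_op n T \<longleftrightarrow> (\<forall>A\<in>pmatch n. \<forall>B. B \<notin> pmatch n \<longrightarrow> T A B = 0) \<and>
     (\<forall>p. p permutes {1..2*n} \<longrightarrow> (\<forall>A\<in>pmatch n. \<forall>B. T (act p A) (act p B) = T A B))"

definition f_basis :: "nat \<Rightarrow> bool" where
  "f_basis n \<longleftrightarrow>
     (\<forall>mu\<in>P2n n. equivariant_op n (fop mu n)) \<and>
     (\<forall>c :: nat multiset \<Rightarrow> complex.
        (\<forall>A\<in>pmatch n. \<forall>B. (\<Sum>mu\<in>P2n n. c mu * fop mu n A B) = 0) \<longrightarrow> (\<forall>mu\<in>P2n n. c mu = 0)) \<and>
     (\<forall>T. equivariant_op n T \<longrightarrow>
        (\<exists>c :: nat multiset \<Rightarrow> complex. \<forall>A\<in>pmatch n. \<forall>B. T A B = (\<Sum>mu\<in>P2n n. c mu * fop mu n A B)))"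

end

theory Submission
  imports Defs "HOL-Combinatorics.Orbits"
begin

definition ismatch :: "nat set \<Rightarrow> nat set set \<Rightarrow> bool" where
  "ismatch S A \<longleftrightarrow> (\<forall>e\<in>A. \<exists>i j. i \<noteq> j \<and> e = {i, j}) \<and> \<Union>A = S \<and>
     (\<forall>e\<in>A. \<forall>e'\<in>A. e \<noteq> e' \<longrightarrow> e \<inter> e' = {})"

lemma pmatch_ismatch: "A \<in> pmatch n \<longleftrightarrow> ismatch {1..2*n} A"
  by (simp add: pmatch_def ismatch_def)

definition pt :: "nat set set \<Rightarrow> nat \<Rightarrow> nat" where
  "pt A x = (THE y. y \<noteq> x \<and> {x, y} \<in> A)"

lemma ismatch_form: "ismatch S A \<Longrightarrow> e \<in> A \<Longrightarrow> \<exists>i j. i \<noteq> j \<and> e = {i, j}"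
  unfolding ismatch_def by blast
lemma ismatch_cov: "ismatch S A \<Longrightarrow> \<Union>A = S"
  unfolding ismatch_def by blast
lemma ismatch_disj: "ismatch S A \<Longrightarrow> e \<in> A \<Longrightarrow> e' \<in> A \<Longrightarrow> e \<noteq> e' \<Longrightarrow> e \<inter> e' = {}"
  unfolding ismatch_def by blast

lemma ismatch_ex1: assumes "ismatch S A" "x \<in> S" shows "\<exists>!y. y \<noteq> x \<and> {x,y} \<in> A"
proof -
  from ismatch_cov[OF assms(1)] assms(2) obtain e where e: "e \<in> A" "x \<in> e" by blast
  from ismatch_form[OF assms(1) e(1)] obtain i j where ij: "i \<noteq> j" "e = {i,j}" by blast
  define y where "y = (if x = i then j else i)"
  have y: "y \<noteq> x" "e = {x,y}" using ij e y_def by auto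
  show ?thesis
  proof (rule ex1I[of _ y])
    show "y \<noteq> x \<and> {x, y} \<in> A" using y e by simp
    fix z assume z: "z \<noteq> x \<and> {x, z} \<in> A"
    have "x \<in> {x,z} \<inter> e" using e by simp
    then have "{x,z} = e" using ismatch_disj[OF assms(1), of "{x,z}" e] z e by blast
    then show "z = y" using y z by (auto simp: doubleton_eq_iff)
  qed
qed

context fixes S A assumes mA: "ismatch S A"
begin

lemma pt_prop: "x \<in> S \<Longrightarrow> pt A x \<noteq> x \<and> {x, pt A x} \<in> A"
  unfolding pt_def using theI'[OF ismatch_ex1[OF mA]] by blast

lemma pt_neq: "x \<in> S \<Longrightarrow> pt A x \<noteq> x" using pt_prop by blast
lemma pt_edge: "x \<in> S \<Longrightarrow> {x, pt A x} \<in> A" using pt_prop by blast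

lemma pt_eq: "x \<in> S \<Longrightarrow> y \<noteq> x \<Longrightarrow> {x, y} \<in> A \<Longrightarrow> pt A x = y"
  using ismatch_ex1[OF mA] pt_prop by blast

lemma edge_sub: "e \<in> A \<Longrightarrow> e \<subseteq> S" using ismatch_cov[OF mA] by blast

lemma pt_in: "x \<in> S \<Longrightarrow> pt A x \<in> S" using pt_edge edge_sub by blast

lemma pt_pt: "x \<in> S \<Longrightarrow> pt A (pt A x) = x"
proof -
  assume x: "x \<in> S"
  have "{pt A x, x} \<in> A" using pt_edge[OF x] by (simp add: insert_commute)
  then show ?thesis using pt_eq[of "pt A x" x] pt_in[OF x] pt_neq[OF x] by simp
qed

lemma edge_form: "e \<in> A \<Longrightarrow> x \<in> e \<Longrightarrow> e = {x, pt A x}"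
proof -
  assume e: "e \<in> A" "x \<in> e"
  then obtain i j where ij: "i \<noteq> j" "e = {i,j}" using ismatch_form[OF mA] by blast
  define y where "y = (if x = i then j else i)"
  have y: "y \<noteq> x" "e = {x,y}" using ij e y_def by auto
  have "x \<in> S" using e edge_sub by blast
  then have "pt A x = y" using pt_eq y e by simp
  then show ?thesis using y by simp
qed

lemma edge_card: "e \<in> A \<Longrightarrow> card e = 2"
  using ismatch_form[OF mA] by fastforce

lemma A_eq: "A = (\<lambda>x. {x, pt A x}) ` S"
proof
  show "A \<subseteq> (\<lambda>x. {x, pt A x}) ` S"
  proof
    fix e assume e: "e \<in> A"
    then obtain i j where ij: "i \<noteq> j" "e = {i,j}" using ismatch_form[OF mA] by blast
    then have "e = {i, pt A i}" using edge_form e by blast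
    moreover have "i \<in> S" using e ij edge_sub by blast
    ultimately show "e \<in> (\<lambda>x. {x, pt A x}) ` S" by blast
  qed
qed (use pt_edge in blast)

lemma edges_disj: "e \<in> A \<Longrightarrow> e' \<in> A \<Longrightarrow> e \<noteq> e' \<Longrightarrow> e \<inter> e' = {}"
  using ismatch_disj[OF mA] by blast

lemma edge_eq: "e \<in> A \<Longrightarrow> e' \<in> A \<Longrightarrow> x \<in> e \<Longrightarrow> x \<in> e' \<Longrightarrow> e = e'"
  using edges_disj by blast

lemma Union_A: "\<Union>A = S" using ismatch_cov[OF mA] .

lemma finA: "finite S \<Longrightarrow> finite A"
  using A_eq by (metis finite_imageI)

lemma card_A: "finite S \<Longrightarrow> card S = 2 * card A"
proof -
  assume f: "finite S"
  have "card S = card (\<Union>A)" using Union_A by simp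
  also have "\<dots> = (\<Sum>e\<in>A. card e)"
    by (rule card_Union_disjoint) (use finA f edge_sub edges_disj in \<open>auto simp: pairwise_def disjnt_def intro: finite_subset\<close>)
  also have "\<dots> = 2 * card A" using edge_card by simp
  finally show ?thesis .
qed

end

fun wk :: "nat set set \<Rightarrow> nat set set \<Rightarrow> nat \<Rightarrow> nat \<Rightarrow> nat" where
  "wk A B x 0 = x"
| "wk A B x (Suc i) = (if even i then pt A else pt B) (wk A B x i)"

declare wk.simps(2)[simp del]

definition per :: "nat set set \<Rightarrow> nat set set \<Rightarrow> nat \<Rightarrow> nat" where
  "per A B x = (LEAST p. 0 < p \<and> wk A B x p = x)"

definition compG :: "nat set \<Rightarrow> nat set set \<Rightarrow> nat set set \<Rightarrow> nat \<Rightarrow> nat set" where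
  "compG S A B x = {y \<in> S. (x, y) \<in> (adj A B)\<^sup>*}"

definition mdistG :: "nat set \<Rightarrow> nat set set \<Rightarrow> nat set set \<Rightarrow> nat multiset" where
  "mdistG S A B = image_mset card (mset_set (compG S A B ` S))"

lemma mdist_eq: "mdist n A B = mdistG {1..2*n} A B"
  unfolding mdist_def mdistG_def compG_def component_def by simp

locale mm =
  fixes S A B
  assumes fin: "finite S" and mA: "ismatch S A" and mB: "ismatch S B"
begin

definition stp :: "nat \<Rightarrow> nat \<Rightarrow> nat" where
  "stp i = (if even i then pt A else pt B)"

lemma wk_Suc: "wk A B x (Suc i) = stp i (wk A B x i)" by (simp add: stp_def wk.simps(2))

lemma stp_in: "y \<in> S \<Longrightarrow> stp i y \<in> S"
  using pt_in[OF mA] pt_in[OF mB] by (simp add: stp_def)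
lemma stp_inv: "y \<in> S \<Longrightarrow> stp i (stp i y) = y"
  using pt_pt[OF mA] pt_pt[OF mB] by (simp add: stp_def)
lemma stp_neq: "y \<in> S \<Longrightarrow> stp i y \<noteq> y"
  using pt_neq[OF mA] pt_neq[OF mB] by (simp add: stp_def)
lemma stp_par: "even i = even j \<Longrightarrow> stp i = stp j"
  by (simp add: stp_def)

lemma wk_in: "x \<in> S \<Longrightarrow> wk A B x i \<in> S"
  by (induction i) (auto simp: wk_Suc stp_in)

lemma wk_back: "x \<in> S \<Longrightarrow> wk A B x i = stp i (wk A B x (Suc i))"
  by (simp add: wk_Suc stp_inv wk_in)

lemma noodd_aux: "x \<in> S \<Longrightarrow> wk A B x (d + 2*m + 1) \<noteq> wk A B x d"
proof (induction m arbitrary: d)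
  case 0
  then show ?case using stp_neq wk_in by (simp add: wk_Suc)
next
  case (Suc m)
  show ?case
  proof
    assume h: "wk A B x (d + 2 * Suc m + 1) = wk A B x d"
    have "wk A B x (d + 2*m + 2) = stp (d + 2*m+2) (wk A B x (d + 2 * Suc m + 1))"
      using wk_back[OF Suc.prems, of "d + 2*m+2"] by simp
    also have "\<dots> = stp d (wk A B x d)" using h stp_par[of "d+2*m+2" d] by simp
    also have "\<dots> = wk A B x (Suc d)" by (simp add: wk_Suc)
    finally have "wk A B x (Suc d + 2*m + 1) = wk A B x (Suc d)" by simp
    then show False using Suc.IH[OF Suc.prems] by blast
  qed
qed

lemma noodd: assumes "x \<in> S" "odd (c + d)" shows "wk A B x c \<noteq> wk A B x d"
proof -
  { fix c d :: nat assume "d < c" "odd (c + d)"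
    then have "c = d + 2*((c - d) div 2) + 1" by presburger
    then obtain m where "c = d + 2*m + 1" by blast
    then have "wk A B x c \<noteq> wk A B x d" using noodd_aux[OF assms(1)] by simp }
  note * = this
  show ?thesis
  proof (cases "d < c")
    case True then show ?thesis using * assms(2) by blast
  next
    case False
    then have "c < d \<or> c = d" by auto
    then show ?thesis using *[of c d] assms(2) by (auto simp: add.commute)
  qed
qed

lemma wkback: assumes "x \<in> S" "wk A B x (d + c) = wk A B x d" shows "wk A B x c = x"
  using assms(2)
proof (induction d)
  case 0 then show ?case by simp
next
  case (Suc d)
  have ev: "even c"
  proof (rule ccontr)
    assume "odd c"
    then have "odd (Suc d + c + Suc d)" by simp
    from noodd[OF assms(1) this] Suc.prems show False by simp
  qed
  have eq1: "stp (d + c) = stp d" by (rule stp_par) (use ev in simp)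
  have "wk A B x (d + c) = stp (d + c) (wk A B x (Suc (d + c)))" by (rule wk_back[OF assms(1)])
  then have "wk A B x (d + c) = stp d (wk A B x (Suc d))" using Suc.prems eq1 by simp
  then have "wk A B x (d + c) = wk A B x d" using wk_back[OF assms(1), of d] by simp
  then show ?case by (rule Suc.IH)
qed

lemma ex_period: assumes "x \<in> S" shows "\<exists>p>0. wk A B x p = x"
proof -
  have sub: "wk A B x ` {0..card S} \<subseteq> S" using wk_in[OF assms] by blast
  have "\<not> inj_on (wk A B x) {0..card S}"
  proof
    assume "inj_on (wk A B x) {0..card S}"
    then have "card (wk A B x ` {0..card S}) = card S + 1" by (simp add: card_image)
    moreover have "card (wk A B x ` {0..card S}) \<le> card S" using card_mono[OF fin sub] .
    ultimately show False by simp
  qed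
  then obtain i j where ij: "i \<noteq> j" "wk A B x i = wk A B x j" unfolding inj_on_def by blast
  have *: "\<exists>p>0. wk A B x p = x" if "i < j" "wk A B x i = wk A B x j" for i j
  proof -
    have "wk A B x (i + (j - i)) = wk A B x i" using that by simp
    then have "wk A B x (j - i) = x" using wkback[OF assms] by blast
    then show ?thesis using \<open>i < j\<close> by (intro exI[of _ "j - i"]) simp
  qed
  show ?thesis
  proof (cases "i < j")
    case True then show ?thesis using * ij by blast
  next
    case False then have "j < i" using ij by simp
    then show ?thesis using *[of j i] ij by simp
  qed
qed

context fixes x assumes xS: "x \<in> S"
begin

lemma per_prop: "0 < per A B x \<and> wk A B x (per A B x) = x"
  unfolding per_def using LeastI_ex[OF ex_period[OF xS]] .

lemma per_pos: "0 < per A B x" using per_prop by blast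
lemma wk_per: "wk A B x (per A B x) = x" using per_prop by blast
lemma per_min: "0 < q \<Longrightarrow> q < per A B x \<Longrightarrow> wk A B x q \<noteq> x"
  unfolding per_def using not_less_Least by blast

lemma per_even: "even (per A B x)"
  using noodd[OF xS, of "per A B x" 0] wk_per by auto

lemma per_ge2: "2 \<le> per A B x" using per_even per_pos by presburger

lemma wk_periodic: "wk A B x (i + per A B x) = wk A B x i"
proof (induction i)
  case 0 then show ?case using wk_per by simp
next
  case (Suc i)
  have "wk A B x (Suc i + per A B x) = stp (i + per A B x) (wk A B x (i + per A B x))"
    by (simp add: wk_Suc)
  also have "\<dots> = stp i (wk A B x i)" using Suc.IH stp_par[of "i + per A B x" i] per_even by simp
  finally show ?case by (simp add: wk_Suc)
qed

lemma wk_mod: "wk A B x i = wk A B x (i mod per A B x)"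
proof (induction i rule: less_induct)
  case (less i)
  show ?case
  proof (cases "i < per A B x")
    case True then show ?thesis by simp
  next
    case False
    define m where "m = i - per A B x"
    have m: "i = m + per A B x" using False m_def by simp
    have "m < i" using m per_pos by simp
    then show ?thesis using less.IH[of m] m wk_periodic by (simp add: mod_add_self2)
  qed
qed

lemma wk_inj: "inj_on (wk A B x) {..<per A B x}"
proof (rule inj_onI)
  fix i j assume i: "i \<in> {..<per A B x}" and j: "j \<in> {..<per A B x}" and e: "wk A B x i = wk A B x j"
  have *: False if "i < j" "j < per A B x" "wk A B x i = wk A B x j" for i j
  proof -
    have "wk A B x (i + (j - i)) = wk A B x i" using that by simp
    then have "wk A B x (j - i) = x" using wkback[OF xS] by blast
    then show False using per_min[of "j - i"] that by simp
  qed
  show "i = j"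
  proof (rule ccontr)
    assume "i \<noteq> j"
    then have "i < j \<or> j < i" by arith
    then show False using *[of i j] *[of j i] i j e by auto
  qed
qed

lemma al_wk_even: "even i \<Longrightarrow> pt A (wk A B x i) = wk A B x (Suc i)"
  by (simp add: wk_Suc stp_def)
lemma al_wk_odd: "odd i \<Longrightarrow> pt A (wk A B x i) = wk A B x (i - 1)"
proof -
  assume o: "odd i"
  define m where "m = i - 1"
  have m: "i = Suc m" "even m" using o m_def by presburger+
  have "wk A B x i = pt A (wk A B x m)" using m by (simp add: wk_Suc stp_def)
  then show ?thesis using m pt_pt[OF mA] wk_in[OF xS] by simp
qed
lemma be_wk_odd: "odd i \<Longrightarrow> pt B (wk A B x i) = wk A B x (Suc i)"
  by (simp add: wk_Suc stp_def)
lemma be_wk_even: "even i \<Longrightarrow> pt B (wk A B x i) = wk A B x (i + per A B x - 1)"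
proof -
  assume e: "even i"
  define m where "m = i + per A B x - 1"
  have m: "i + per A B x = Suc m" using per_pos m_def by simp
  have om: "odd m" using m e per_even by presburger
  have "wk A B x (Suc m) = wk A B x i" using wk_periodic[of i] m by simp
  moreover have "wk A B x (Suc m) = pt B (wk A B x m)" using om by (simp add: wk_Suc stp_def)
  ultimately have "pt B (wk A B x i) = pt B (pt B (wk A B x m))" by simp
  also have "\<dots> = wk A B x m" using pt_pt[OF mB] wk_in[OF xS] by simp
  finally show ?thesis using m_def by simp
qed

end
end

lemma count_img_mset_set: "finite X \<Longrightarrow> count (image_mset f (mset_set X)) y = card {x\<in>X. f x = y}"
proof -
  assume fX: "finite X"
  have "count (image_mset f (mset_set X)) y = (\<Sum>x\<in>f -` {y} \<inter> X. count (mset_set X) x)"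
    using count_image_mset[of f "mset_set X" y] fX by simp
  also have "\<dots> = (\<Sum>x\<in>f -` {y} \<inter> X. 1)" using fX by (intro sum.cong) auto
  also have "\<dots> = card (f -` {y} \<inter> X)" by simp
  also have "f -` {y} \<inter> X = {x\<in>X. f x = y}" by auto
  finally show ?thesis .
qed

lemma mset_bij:
  assumes "finite X" "finite Y" "image_mset g (mset_set X) = image_mset h (mset_set Y)"
  shows "\<exists>f. bij_betw f X Y \<and> (\<forall>x\<in>X. h (f x) = g x)"
  using assms
proof (induction X arbitrary: Y rule: finite_induct)
  case empty
  then have "mset_set Y = {#}" by simp
  then have "Y = {}" using empty.prems(1) mset_set_empty_iff[of Y] by simp
  then show ?case by (auto simp: bij_betw_def)
next
  case (insert a X)
  have "image_mset g (mset_set (insert a X)) = add_mset (g a) (image_mset g (mset_set X))"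
    using insert.hyps by simp
  then have "g a \<in># image_mset h (mset_set Y)" using insert.prems(2) by simp
  then obtain b where b: "b \<in> Y" "h b = g a" using insert.prems(1) by auto
  have "mset_set Y = add_mset b (mset_set (Y - {b}))" using mset_set.remove[OF insert.prems(1) b(1)] .
  then have "image_mset h (mset_set Y) = add_mset (g a) (image_mset h (mset_set (Y - {b})))" using b by simp
  then have eq: "image_mset g (mset_set X) = image_mset h (mset_set (Y - {b}))"
    using insert.prems(2) insert.hyps by simp
  obtain f0 where f0: "bij_betw f0 X (Y - {b})" "\<forall>x\<in>X. h (f0 x) = g x"
    using insert.IH[of "Y - {b}"] insert.prems(1) eq by auto
  define f where "f = f0(a := b)"
  have "bij_betw f X (Y - {b})"
    by (rule bij_betw_cong[THEN iffD2, OF _ f0(1)]) (use insert.hyps(2) f_def in auto)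
  moreover have "bij_betw f {a} {b}" by (simp add: f_def bij_betw_def)
  ultimately have "bij_betw f (X \<union> {a}) ((Y - {b}) \<union> {b})" by (intro bij_betw_combine) auto
  moreover have "X \<union> {a} = insert a X" "(Y - {b}) \<union> {b} = Y" using b by auto
  moreover have "\<forall>x\<in>insert a X. h (f x) = g x" using f0(2) b insert.hyps(2) f_def by auto
  ultimately show ?case by auto
qed

context mm begin

lemma adj_char: "(u,v) \<in> adj A B \<Longrightarrow> u \<in> S \<and> v \<in> S \<and> (v = u \<or> v = pt A u \<or> v = pt B u)"
proof -
  assume "(u,v) \<in> adj A B"
  then obtain e where e: "e \<in> A \<union> B" "u \<in> e" "v \<in> e" unfolding adj_def by blast
  show ?thesis
  proof (cases "e \<in> A")
    case True
    have "e = {u, pt A u}" by (rule edge_form[OF mA True e(2)])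
    moreover have "e \<subseteq> S" using edge_sub[OF mA] True by blast
    ultimately show ?thesis using e by auto
  next
    case False
    then have eB: "e \<in> B" using e by blast
    have "e = {u, pt B u}" by (rule edge_form[OF mB eB e(2)])
    moreover have "e \<subseteq> S" using edge_sub[OF mB] eB by blast
    ultimately show ?thesis using e by auto
  qed
qed

lemma adj_A: "u \<in> S \<Longrightarrow> (u, pt A u) \<in> adj A B"
  unfolding adj_def using pt_edge[OF mA] by blast
lemma adj_B: "u \<in> S \<Longrightarrow> (u, pt B u) \<in> adj A B"
  unfolding adj_def using pt_edge[OF mB] by blast
lemma adj_stp: "u \<in> S \<Longrightarrow> (u, stp i u) \<in> adj A B"
  using adj_A adj_B by (simp add: stp_def)
lemma adj_sym: "(u,v) \<in> adj A B \<Longrightarrow> (v,u) \<in> adj A B"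
  unfolding adj_def by blast

lemma rt_sym: "(u,v) \<in> (adj A B)\<^sup>* \<Longrightarrow> (v,u) \<in> (adj A B)\<^sup>*"
proof (induction rule: rtrancl_induct)
  case base then show ?case by simp
next
  case (step y z)
  have "(z,y) \<in> adj A B" using adj_sym[OF step(2)] .
  then show ?case using step(3) by (rule converse_rtrancl_into_rtrancl)
qed

lemma wk_reach: "x \<in> S \<Longrightarrow> (x, wk A B x i) \<in> (adj A B)\<^sup>*"
proof (induction i)
  case 0 then show ?case by simp
next
  case (Suc i)
  have "(wk A B x i, stp i (wk A B x i)) \<in> adj A B" using adj_stp wk_in[OF Suc.prems] by blast
  then show ?case using Suc by (simp add: wk_Suc)
qed

lemma range_wk: "x \<in> S \<Longrightarrow> range (wk A B x) = wk A B x ` {..<per A B x}"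
proof
  assume x: "x \<in> S"
  show "range (wk A B x) \<subseteq> wk A B x ` {..<per A B x}"
  proof
    fix y assume "y \<in> range (wk A B x)"
    then obtain i where yi: "y = wk A B x i" by blast
    have "y = wk A B x (i mod per A B x)" using yi wk_mod[OF x, of i] by (rule trans)
    moreover have "i mod per A B x < per A B x" using per_pos[OF x] by simp
    ultimately show "y \<in> wk A B x ` {..<per A B x}" by blast
  qed
qed auto

definition iaf :: "nat \<Rightarrow> nat \<Rightarrow> nat" where
  "iaf P i = (if even i then Suc i else i - 1) mod P"
definition ibf :: "nat \<Rightarrow> nat \<Rightarrow> nat" where
  "ibf P i = (if odd i then Suc i else i + P - 1) mod P"

lemma al_wk: assumes x: "x \<in> S" shows "pt A (wk A B x i) = wk A B x (iaf (per A B x) i)"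
proof -
  have "pt A (wk A B x i) = wk A B x (if even i then Suc i else i - 1)"
    using al_wk_even[OF x, of i] al_wk_odd[OF x, of i] by (cases "even i") simp_all
  also have "\<dots> = wk A B x (iaf (per A B x) i)" unfolding iaf_def by (rule wk_mod[OF x])
  finally show ?thesis .
qed

lemma be_wk: assumes x: "x \<in> S" shows "pt B (wk A B x i) = wk A B x (ibf (per A B x) i)"
proof -
  have "pt B (wk A B x i) = wk A B x (if odd i then Suc i else i + per A B x - 1)"
    using be_wk_even[OF x, of i] be_wk_odd[OF x, of i] by (cases "even i") simp_all
  also have "\<dots> = wk A B x (ibf (per A B x) i)" unfolding ibf_def by (rule wk_mod[OF x])
  finally show ?thesis .
qed

lemma reach_wk: assumes "x \<in> S" "(x,y) \<in> (adj A B)\<^sup>*" shows "y \<in> range (wk A B x)"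
  using assms(2)
proof (induction rule: rtrancl_induct)
  case base
  show ?case by (metis rangeI wk.simps(1))
next
  case (step y z)
  then obtain i where i: "y = wk A B x i" by blast
  have "z = y \<or> z = pt A y \<or> z = pt B y" using adj_char step(2) by blast
  then show ?case using al_wk[OF assms(1)] be_wk[OF assms(1)] i step(3) by auto
qed

lemma comp_wk: "x \<in> S \<Longrightarrow> compG S A B x = wk A B x ` {..<per A B x}"
proof -
  assume x: "x \<in> S"
  have "compG S A B x = range (wk A B x)"
    unfolding compG_def using reach_wk[OF x] wk_reach[OF x] wk_in[OF x] by auto
  then show ?thesis using range_wk[OF x] by simp
qed

lemma card_comp: "x \<in> S \<Longrightarrow> card (compG S A B x) = per A B x"
  using comp_wk[of x] card_image[OF wk_inj[of x]] by simp

lemma self_comp: "x \<in> S \<Longrightarrow> x \<in> compG S A B x"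
  unfolding compG_def by simp

lemma comp_sub: "compG S A B x \<subseteq> S"
  unfolding compG_def by blast

lemma comp_fin: "finite (compG S A B x)"
  using comp_sub fin finite_subset by blast

lemma comp_eq: assumes "y \<in> compG S A B x" shows "compG S A B y = compG S A B x"
proof -
  have xy: "(x,y) \<in> (adj A B)\<^sup>*" using assms unfolding compG_def by blast
  have yx: "(y,x) \<in> (adj A B)\<^sup>*" using rt_sym[OF xy] .
  have "(y,z) \<in> (adj A B)\<^sup>* \<longleftrightarrow> (x,z) \<in> (adj A B)\<^sup>*" for z
    using rtrancl_trans[OF xy, of z] rtrancl_trans[OF yx, of z] by blast
  then show ?thesis unfolding compG_def by simp
qed

lemma comp_disj: "compG S A B x \<inter> compG S A B y \<noteq> {} \<Longrightarrow> compG S A B x = compG S A B y"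
proof -
  assume "compG S A B x \<inter> compG S A B y \<noteq> {}"
  then obtain z where z: "z \<in> compG S A B x" "z \<in> compG S A B y" by blast
  show ?thesis using comp_eq[OF z(1)] comp_eq[OF z(2)] by simp
qed

lemma comp_closed_A: "y \<in> compG S A B x \<Longrightarrow> pt A y \<in> compG S A B x"
proof -
  assume y: "y \<in> compG S A B x"
  then have yS: "y \<in> S" using comp_sub by blast
  have "(x, pt A y) \<in> (adj A B)\<^sup>*" using y adj_A[OF yS] unfolding compG_def by auto
  then show ?thesis unfolding compG_def using pt_in[OF mA yS] by blast
qed

lemma comp_closed_B: "y \<in> compG S A B x \<Longrightarrow> pt B y \<in> compG S A B x"
proof -
  assume y: "y \<in> compG S A B x"
  then have yS: "y \<in> S" using comp_sub by blast
  have "(x, pt B y) \<in> (adj A B)\<^sup>*" using y adj_B[OF yS] unfolding compG_def by auto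
  then show ?thesis unfolding compG_def using pt_in[OF mB yS] by blast
qed

lemma comps_fin: "finite (compG S A B ` S)" using fin by simp

lemma Union_comps: "\<Union>(compG S A B ` S) = S"
  using comp_sub self_comp by blast

lemma sum_mdist: "sum_mset (mdistG S A B) = card S"
proof -
  have "sum_mset (mdistG S A B) = sum card (compG S A B ` S)"
    unfolding mdistG_def by (simp add: sum_unfold_sum_mset)
  also have "\<dots> = card (\<Union>(compG S A B ` S))"
  proof (rule card_Union_disjoint[symmetric])
    show "pairwise disjnt (compG S A B ` S)"
      unfolding pairwise_def disjnt_def using comp_disj by blast
  qed (use comp_fin in auto)
  also have "\<dots> = card S" using Union_comps by simp
  finally show ?thesis .
qed

lemma mdist_mem: "m \<in># mdistG S A B \<Longrightarrow> even m \<and> 2 \<le> m"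
proof -
  assume "m \<in># mdistG S A B"
  then obtain x where x: "x \<in> S" "m = card (compG S A B x)" unfolding mdistG_def using fin by auto
  then show ?thesis using card_comp per_even per_ge2 by simp
qed

lemma per2: assumes "x \<in> S" shows "per A B x = 2 \<longleftrightarrow> pt A x = pt B x"
proof -
  have w2: "wk A B x 2 = pt B (pt A x)"
    by (simp add: numeral_2_eq_2 wk_Suc stp_def)
  have "per A B x = 2 \<longleftrightarrow> wk A B x 2 = x"
  proof
    assume "per A B x = 2" then show "wk A B x 2 = x" using wk_per[OF assms] by simp
  next
    assume "wk A B x 2 = x"
    then have "per A B x \<le> 2" unfolding per_def by (intro Least_le) simp
    then show "per A B x = 2" using per_ge2[OF assms] by simp
  qed
  also have "\<dots> \<longleftrightarrow> pt A x = pt B x"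
  proof
    assume h: "wk A B x 2 = x"
    have "pt B x = pt B (pt B (pt A x))" using h w2 by simp
    also have "\<dots> = pt A x" using pt_pt[OF mB] pt_in[OF mA assms] by simp
    finally show "pt A x = pt B x" by simp
  next
    assume "pt A x = pt B x"
    then show "wk A B x 2 = x" using w2 pt_pt[OF mB assms] by simp
  qed
  finally show ?thesis .
qed

lemma comps2_eq: "{C \<in> compG S A B ` S. card C = 2} = A \<inter> B"
proof
  show "{C \<in> compG S A B ` S. card C = 2} \<subseteq> A \<inter> B"
  proof
    fix C assume "C \<in> {C \<in> compG S A B ` S. card C = 2}"
    then obtain x where x: "x \<in> S" "C = compG S A B x" "card C = 2" by blast
    then have p2: "per A B x = 2" using card_comp by simp
    then have e: "pt A x = pt B x" using per2[OF x(1)] by simp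
    have "C = wk A B x ` {..<2}" using comp_wk[OF x(1)] p2 x(2) by simp
    also have "{..<2::nat} = {0,1}" by auto
    finally have "C = {x, pt A x}" by (simp add: wk_Suc stp_def)
    then show "C \<in> A \<inter> B" using pt_edge[OF mA x(1)] pt_edge[OF mB x(1)] e by simp
  qed
next
  show "A \<inter> B \<subseteq> {C \<in> compG S A B ` S. card C = 2}"
  proof
    fix e assume e: "e \<in> A \<inter> B"
    obtain i j where ij: "i \<noteq> j" "e = {i,j}" using ismatch_form[OF mA] e by blast
    have iS: "i \<in> S" using edge_sub[OF mA] e ij by blast
    have "e = {i, pt A i}" using edge_form[OF mA] e ij by blast
    moreover have "e = {i, pt B i}" using edge_form[OF mB] e ij by blast
    ultimately have eq: "pt A i = pt B i" using pt_neq[OF mA iS] pt_neq[OF mB iS]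
      by (metis doubleton_eq_iff)
    then have p2: "per A B i = 2" using per2[OF iS] by simp
    have "compG S A B i = wk A B i ` {..<2}" using comp_wk[OF iS] p2 by simp
    also have "{..<2::nat} = {0,1}" by auto
    finally have "compG S A B i = e" using \<open>e = {i, pt A i}\<close> by (simp add: wk_Suc stp_def)
    then show "e \<in> {C \<in> compG S A B ` S. card C = 2}" using iS edge_card[OF mA] e by force
  qed
qed

lemma count2: "count (mdistG S A B) 2 = card (A \<inter> B)"
  unfolding mdistG_def using count_img_mset_set[OF comps_fin, of card 2] comps2_eq by simp

end

locale mm2 = c1: mm S A B + c2: mm S' A' B' for S A B S' A' B'
begin

lemma act_eqI:
  assumes q: "bij_betw q S S'" and m1: "ismatch S M" and m2: "ismatch S' M'"
    and c: "\<And>y. y \<in> S \<Longrightarrow> q (pt M y) = pt M' (q y)"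
  shows "act q M = M'"
proof -
  have "act q M = (\<lambda>e. q ` e) ` ((\<lambda>x. {x, pt M x}) ` S)" unfolding act_def using A_eq[OF m1] by simp
  also have "\<dots> = (\<lambda>x. {q x, pt M' (q x)}) ` S" using c by (auto simp: image_image)
  also have "\<dots> = (\<lambda>z. {z, pt M' z}) ` (q ` S)" by (auto simp: image_image)
  also have "\<dots> = M'" using A_eq[OF m2] q unfolding bij_betw_def by simp
  finally show ?thesis .
qed

end

context mm2 begin

theorem iso_exists:
  assumes md: "mdistG S A B = mdistG S' A' B'"
  shows "\<exists>q. bij_betw q S S' \<and> act q A = A' \<and> act q B = B'"
proof -
  define X where "X = compG S A B ` S"
  define X' where "X' = compG S' A' B' ` S'"
  obtain f where f: "bij_betw f X X'" "\<forall>C\<in>X. card (f C) = card C"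
    using mset_bij[of X X' card card] c1.comps_fin c2.comps_fin md unfolding mdistG_def X_def X'_def
    by auto
  define rep :: "nat set \<Rightarrow> nat" where "rep = (\<lambda>C. SOME x. x \<in> C)"
  have rep1: "rep C \<in> S \<and> compG S A B (rep C) = C" if CC: "C \<in> X" for C
  proof -
    obtain x where x: "x \<in> S" "C = compG S A B x" using CC unfolding X_def by blast
    then have "x \<in> C" using c1.self_comp by simp
    then have r: "rep C \<in> C" unfolding rep_def by (rule someI)
    have "compG S A B (rep C) = C" using c1.comp_eq[of "rep C" x] x r by simp
    then show ?thesis using r x c1.comp_sub by blast
  qed
  have rep2: "rep D \<in> S' \<and> compG S' A' B' (rep D) = D" if DD: "D \<in> X'" for D
  proof -
    obtain x where x: "x \<in> S'" "D = compG S' A' B' x" using DD unfolding X'_def by blast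
    then have "x \<in> D" using c2.self_comp by simp
    then have r: "rep D \<in> D" unfolding rep_def by (rule someI)
    have "compG S' A' B' (rep D) = D" using c2.comp_eq[of "rep D" x] x r by simp
    then show ?thesis using r x c2.comp_sub by blast
  qed
  define r where "r y = rep (compG S A B y)" for y
  define r' where "r' y = rep (f (compG S A B y))" for y
  define P where "P y = per A B (r y)" for y
  define idx where "idx y = inv_into {..<P y} (wk A B (r y)) y" for y
  define q where "q y = wk A' B' (r' y) (idx y)" for y
  have CX: "compG S A B y \<in> X" if "y \<in> S" for y using that unfolding X_def by blast
  have fCX: "f (compG S A B y) \<in> X'" if "y \<in> S" for y using CX[OF that] f(1) unfolding bij_betw_def by blast
  have ry: "r y \<in> S" "compG S A B (r y) = compG S A B y" if "y \<in> S" for y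
    using rep1[OF CX[OF that]] unfolding r_def by auto
  have r'y: "r' y \<in> S'" "compG S' A' B' (r' y) = f (compG S A B y)" if "y \<in> S" for y
    using rep2[OF fCX[OF that]] unfolding r'_def by auto
  have Pe: "per A' B' (r' y) = P y" if y: "y \<in> S" for y
  proof -
    have "per A' B' (r' y) = card (compG S' A' B' (r' y))" using c2.card_comp[OF r'y(1)[OF y]] by simp
    also have "\<dots> = card (compG S A B y)" using r'y(2)[OF y] f(2) CX[OF y] by simp
    also have "\<dots> = card (compG S A B (r y))" using ry(2)[OF y] by simp
    also have "\<dots> = P y" unfolding P_def using c1.card_comp[OF ry(1)[OF y]] .
    finally show ?thesis .
  qed
  have Ppos: "0 < P y" if "y \<in> S" for y unfolding P_def using c1.per_pos[OF ry(1)[OF that]] .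
  have yin: "y \<in> wk A B (r y) ` {..<P y}" if y: "y \<in> S" for y
  proof -
    have "y \<in> compG S A B (r y)" using ry(2)[OF y] c1.self_comp[OF y] by simp
    then show ?thesis using c1.comp_wk[OF ry(1)[OF y]] unfolding P_def by simp
  qed
  have idx: "idx y < P y" "wk A B (r y) (idx y) = y" if y: "y \<in> S" for y
    using inv_into_into[OF yin[OF y]] f_inv_into_f[OF yin[OF y]] unfolding idx_def by auto
  have sameC: "r z = r y" "r' z = r' y" "P z = P y" if "compG S A B z = compG S A B y" for z y
    using that unfolding r_def r'_def P_def by auto
  have idx_eq: "idx z = i" if z: "z \<in> S" and y: "y \<in> S" and C: "compG S A B z = compG S A B y"
    and i: "i < P y" and w: "wk A B (r y) i = z" for z y i
  proof -
    have "wk A B (r y) (idx z) = wk A B (r y) i" using idx(2)[OF z] sameC[OF C] w by simp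
    moreover have "idx z < P y" using idx(1)[OF z] sameC[OF C] by simp
    ultimately show ?thesis using c1.wk_inj[OF ry(1)[OF y]] i unfolding P_def inj_on_def by auto
  qed
  have qin: "q y \<in> f (compG S A B y)" if y: "y \<in> S" for y
  proof -
    have "q y \<in> wk A' B' (r' y) ` {..<per A' B' (r' y)}" unfolding q_def using idx(1)[OF y] Pe[OF y] by simp
    then show ?thesis using c2.comp_wk[OF r'y(1)[OF y]] r'y(2)[OF y] by simp
  qed
  have qS: "q y \<in> S'" if "y \<in> S" for y using qin[OF that] r'y(2)[OF that] c2.comp_sub by blast
  have commA: "q (pt A y) = pt A' (q y)" if y: "y \<in> S" for y
  proof -
    define z where "z = pt A y"
    have zC: "z \<in> compG S A B y" unfolding z_def using c1.comp_closed_A[OF c1.self_comp[OF y]] .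
    have zS: "z \<in> S" using zC c1.comp_sub by blast
    have Cz: "compG S A B z = compG S A B y" using c1.comp_eq[OF zC] .
    have "z = pt A (wk A B (r y) (idx y))" using idx(2)[OF y] z_def by simp
    also have "\<dots> = wk A B (r y) (c1.iaf (P y) (idx y))" using c1.al_wk[OF ry(1)[OF y]] unfolding P_def .
    finally have zw: "wk A B (r y) (c1.iaf (P y) (idx y)) = z" by simp
    have lt: "c1.iaf (P y) (idx y) < P y" unfolding c1.iaf_def using Ppos[OF y] by simp
    have iz: "idx z = c1.iaf (P y) (idx y)" using idx_eq[OF zS y Cz lt zw] .
    have "q z = wk A' B' (r' y) (c1.iaf (P y) (idx y))" unfolding q_def using iz sameC[OF Cz] by simp
    also have "\<dots> = wk A' B' (r' y) (c2.iaf (per A' B' (r' y)) (idx y))"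
      using Pe[OF y] unfolding c1.iaf_def c2.iaf_def by simp
    also have "\<dots> = pt A' (q y)" unfolding q_def using c2.al_wk[OF r'y(1)[OF y]] by simp
    finally show ?thesis unfolding z_def .
  qed
  have commB: "q (pt B y) = pt B' (q y)" if y: "y \<in> S" for y
  proof -
    define z where "z = pt B y"
    have zC: "z \<in> compG S A B y" unfolding z_def using c1.comp_closed_B[OF c1.self_comp[OF y]] .
    have zS: "z \<in> S" using zC c1.comp_sub by blast
    have Cz: "compG S A B z = compG S A B y" using c1.comp_eq[OF zC] .
    have "z = pt B (wk A B (r y) (idx y))" using idx(2)[OF y] z_def by simp
    also have "\<dots> = wk A B (r y) (c1.ibf (P y) (idx y))" using c1.be_wk[OF ry(1)[OF y]] unfolding P_def .
    finally have zw: "wk A B (r y) (c1.ibf (P y) (idx y)) = z" by simp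
    have lt: "c1.ibf (P y) (idx y) < P y" unfolding c1.ibf_def using Ppos[OF y] by simp
    have iz: "idx z = c1.ibf (P y) (idx y)" using idx_eq[OF zS y Cz lt zw] .
    have "q z = wk A' B' (r' y) (c1.ibf (P y) (idx y))" unfolding q_def using iz sameC[OF Cz] by simp
    also have "\<dots> = wk A' B' (r' y) (c2.ibf (per A' B' (r' y)) (idx y))"
      using Pe[OF y] unfolding c1.ibf_def c2.ibf_def by simp
    also have "\<dots> = pt B' (q y)" unfolding q_def using c2.be_wk[OF r'y(1)[OF y]] by simp
    finally show ?thesis unfolding z_def .
  qed
  have inj: "inj_on q S"
  proof (rule inj_onI)
    fix y1 y2 assume y1: "y1 \<in> S" and y2: "y2 \<in> S" and e: "q y1 = q y2"
    have "q y1 \<in> f (compG S A B y1) \<inter> f (compG S A B y2)" using qin[OF y1] qin[OF y2] e by simp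
    then have "f (compG S A B y1) \<inter> f (compG S A B y2) \<noteq> {}" by blast
    then have "compG S' A' B' (r' y1) \<inter> compG S' A' B' (r' y2) \<noteq> {}" using r'y(2)[OF y1] r'y(2)[OF y2] by simp
    then have "compG S' A' B' (r' y1) = compG S' A' B' (r' y2)" by (rule c2.comp_disj)
    then have fe: "f (compG S A B y1) = f (compG S A B y2)" using r'y(2)[OF y1] r'y(2)[OF y2] by simp
    have injf: "inj_on f X" using f(1) unfolding bij_betw_def by simp
    have C: "compG S A B y1 = compG S A B y2" by (rule inj_onD[OF injf fe CX[OF y1] CX[OF y2]])
    have w: "wk A' B' (r' y2) (idx y1) = wk A' B' (r' y2) (idx y2)" using e sameC[OF C] unfolding q_def by simp
    have l1: "idx y1 \<in> {..<per A' B' (r' y2)}" using idx(1)[OF y1] Pe[OF y2] sameC[OF C] by simp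
    have l2: "idx y2 \<in> {..<per A' B' (r' y2)}" using idx(1)[OF y2] Pe[OF y2] by simp
    have ii: "idx y1 = idx y2" by (rule inj_onD[OF c2.wk_inj[OF r'y(1)[OF y2]] w l1 l2])
    have "y1 = wk A B (r y1) (idx y1)" using idx(2)[OF y1] by simp
    also have "\<dots> = wk A B (r y2) (idx y2)" using ii sameC[OF C] by simp
    also have "\<dots> = y2" using idx(2)[OF y2] .
    finally show "y1 = y2" .
  qed
  have surj: "S' \<subseteq> q ` S"
  proof
    fix z assume z: "z \<in> S'"
    define D where "D = compG S' A' B' z"
    have DX: "D \<in> X'" unfolding D_def X'_def using z by blast
    define C where "C = inv_into X f D"
    have CX': "C \<in> X" "f C = D" unfolding C_def using f(1) DX
      by (auto simp: bij_betw_def inv_into_into f_inv_into_f)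
    obtain x where x: "x \<in> S" "C = compG S A B x" using CX'(1) unfolding X_def by blast
    have zD: "z \<in> compG S' A' B' (r' x)" using r'y(2)[OF x(1)] x(2) CX'(2) D_def c2.self_comp[OF z] by simp
    then obtain i where i: "i < per A' B' (r' x)" "z = wk A' B' (r' x) i"
      using c2.comp_wk[OF r'y(1)[OF x(1)]] by auto
    define y where "y = wk A B (r x) i"
    have yC: "y \<in> compG S A B x"
      using c1.comp_wk[OF ry(1)[OF x(1)]] ry(2)[OF x(1)] i(1) Pe[OF x(1)] unfolding y_def P_def by auto
    have yS: "y \<in> S" using yC c1.comp_sub by blast
    have Cy: "compG S A B y = compG S A B x" using c1.comp_eq[OF yC] .
    have "idx y = i" using idx_eq[OF yS x(1) Cy, of i] i(1) Pe[OF x(1)] y_def by simp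
    then have "q y = z" unfolding q_def using sameC[OF Cy] i(2) by simp
    then show "z \<in> q ` S" using yS by blast
  qed
  have bij: "bij_betw q S S'" unfolding bij_betw_def using inj qS surj by blast
  have "act q A = A'" by (rule act_eqI[OF bij c1.mA c2.mA commA])
  moreover have "act q B = B'" by (rule act_eqI[OF bij c1.mB c2.mB commB])
  ultimately show ?thesis using bij by blast
qed

end

lemma ismatch_act: assumes m: "ismatch S A" and q: "inj_on q S" shows "ismatch (q ` S) (act q A)"
proof -
  have f: "\<forall>e\<in>act q A. \<exists>i j. i \<noteq> j \<and> e = {i,j}"
  proof
    fix e' assume "e' \<in> act q A"
    then obtain e where e: "e \<in> A" "e' = q ` e" unfolding act_def by blast
    obtain i j where ij: "i \<noteq> j" "e = {i,j}" using ismatch_form[OF m e(1)] by blast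
    have "i \<in> S" "j \<in> S" using edge_sub[OF m e(1)] ij by auto
    then have "q i \<noteq> q j" using q ij(1) unfolding inj_on_def by blast
    then show "\<exists>i j. i \<noteq> j \<and> e' = {i,j}" using e ij by auto
  qed
  have c: "\<Union>(act q A) = q ` S" using ismatch_cov[OF m] unfolding act_def by blast
  have d: "\<forall>e\<in>act q A. \<forall>e'\<in>act q A. e \<noteq> e' \<longrightarrow> e \<inter> e' = {}"
  proof (intro ballI impI)
    fix e1 e2 assume e12: "e1 \<in> act q A" "e2 \<in> act q A" "e1 \<noteq> e2"
    then obtain f1 f2 where ff: "f1 \<in> A" "f2 \<in> A" "e1 = q ` f1" "e2 = q ` f2" unfolding act_def by blast
    then have "f1 \<noteq> f2" using e12(3) by blast
    then have "f1 \<inter> f2 = {}" using ismatch_disj[OF m ff(1) ff(2)] by blast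
    moreover have "f1 \<subseteq> S" "f2 \<subseteq> S" using edge_sub[OF m] ff by auto
    ultimately have "q ` f1 \<inter> q ` f2 = {}" using inj_on_image_Int[OF q, of f1 f2] by simp
    then show "e1 \<inter> e2 = {}" using ff by simp
  qed
  show ?thesis unfolding ismatch_def using f c d by blast
qed

lemma pt_act: assumes m: "ismatch S A" and q: "inj_on q S" and x: "x \<in> S"
  shows "pt (act q A) (q x) = q (pt A x)"
proof -
  have m': "ismatch (q ` S) (act q A)" by (rule ismatch_act[OF m q])
  have "pt A x \<in> S" using pt_in[OF m x] .
  then have ne: "q (pt A x) \<noteq> q x" using pt_neq[OF m x] q x unfolding inj_on_def by metis
  have "q ` {x, pt A x} \<in> act q A" unfolding act_def using pt_edge[OF m x] by blast
  then have "{q x, q (pt A x)} \<in> act q A" by simp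
  then show ?thesis using pt_eq[OF m', of "q x" "q (pt A x)"] ne x by simp
qed

lemma act_Pow: "A \<subseteq> Pow S \<Longrightarrow> act q A \<subseteq> Pow (q ` S)"
  unfolding act_def by blast

lemma act_inj: assumes q: "inj_on q S" and "M1 \<subseteq> Pow S" "M2 \<subseteq> Pow S" "act q M1 = act q M2"
  shows "M1 = M2"
proof -
  have i1: "inj_on (image q) (Pow S)" using inj_on_image_Pow[OF q] .
  have "inj_on (image (image q)) (Pow (Pow S))" using inj_on_image_Pow[OF i1] .
  then show ?thesis using assms(2-4) unfolding act_def inj_on_def by blast
qed

lemma act_comp: "act f (act g A) = act (f \<circ> g) A"
  unfolding act_def by (auto simp: image_comp)

lemma Pow_match: "ismatch S A \<Longrightarrow> A \<subseteq> Pow S"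
  using edge_sub by blast

lemma mm_act: "mm S A B \<Longrightarrow> inj_on q S \<Longrightarrow> mm (q ` S) (act q A) (act q B)"
  unfolding mm_def using ismatch_act by blast

context mm begin

context fixes q :: "nat \<Rightarrow> nat" assumes q: "inj_on q S"
begin

lemma wk_act: "x \<in> S \<Longrightarrow> wk (act q A) (act q B) (q x) i = q (wk A B x i)"
proof (induction i)
  case 0 then show ?case by simp
next
  case (Suc i)
  have w: "wk A B x i \<in> S" using wk_in[OF Suc.prems] .
  show ?case using Suc pt_act[OF mA q w] pt_act[OF mB q w] by (simp add: wk.simps(2))
qed

lemma per_act: assumes x: "x \<in> S" shows "per (act q A) (act q B) (q x) = per A B x"
proof -
  have "(0 < p \<and> wk (act q A) (act q B) (q x) p = q x) \<longleftrightarrow> (0 < p \<and> wk A B x p = x)" for p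
    using wk_act[OF x, of p] q wk_in[OF x, of p] x unfolding inj_on_def by metis
  then show ?thesis unfolding per_def by simp
qed

lemma comp_act: assumes x: "x \<in> S"
  shows "compG (q ` S) (act q A) (act q B) (q x) = q ` compG S A B x"
proof -
  interpret m2: mm "q ` S" "act q A" "act q B" using mm_act[OF mm_axioms q] .
  have qx: "q x \<in> q ` S" using x by blast
  have "compG (q ` S) (act q A) (act q B) (q x) = wk (act q A) (act q B) (q x) ` {..<per A B x}"
    using m2.comp_wk[OF qx] per_act[OF x] by simp
  also have "\<dots> = q ` (wk A B x ` {..<per A B x})" using wk_act[OF x] by (auto simp: image_image)
  also have "\<dots> = q ` compG S A B x" using comp_wk[OF x] by simp
  finally show ?thesis .
qed

lemma mdist_act: "mdistG (q ` S) (act q A) (act q B) = mdistG S A B"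
proof -
  have "compG (q ` S) (act q A) (act q B) ` (q ` S) = image q ` (compG S A B ` S)"
    using comp_act by (auto simp: image_image)
  moreover have inj: "inj_on (image q) (compG S A B ` S)"
    by (rule inj_on_subset[OF inj_on_image_Pow[OF q]]) (use comp_sub in auto)
  ultimately have "mset_set (compG (q ` S) (act q A) (act q B) ` (q ` S)) =
      image_mset (image q) (mset_set (compG S A B ` S))"
    using image_mset_mset_set[OF inj] by simp
  then have "mdistG (q ` S) (act q A) (act q B) = image_mset (card \<circ> image q) (mset_set (compG S A B ` S))"
    unfolding mdistG_def by (simp add: multiset.map_comp)
  also have "\<dots> = image_mset card (mset_set (compG S A B ` S))"
  proof (rule image_mset_cong)
    fix C assume "C \<in># mset_set (compG S A B ` S)"
    then have "C \<subseteq> S" using comp_sub fin by auto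
    then show "(card \<circ> image q) C = card C" using card_image[OF inj_on_subset[OF q]] by simp
  qed
  finally show ?thesis unfolding mdistG_def .
qed

end
end

definition cnt :: "nat multiset \<Rightarrow> bool \<Rightarrow> nat set \<Rightarrow> nat set set \<Rightarrow> nat set set \<Rightarrow> nat" where
  "cnt mu b S A B = card {p. p permutes S \<and> filter_mset (\<lambda>l. 2 \<le> l) (cycle_type S p) = mu \<and> act p A = B
       \<and> (b \<longrightarrow> (\<forall>e\<in>A. \<exists>x\<in>e. p x \<noteq> x))}"

lemma fop_cnt: "fop mu n A B = of_nat (cnt mu False {1..2*n} A B)"
  unfolding fop_def cnt_def by simp

lemma funpow_permutes_in: "p permutes S \<Longrightarrow> x \<in> S \<Longrightarrow> (p ^^ k) x \<in> S"
  by (induction k) (auto simp: permutes_in_image)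

lemma cycle_type_transport:
  assumes q: "bij_betw q S S'" and p: "p permutes S" and fS: "finite S"
    and c: "\<And>x. x \<in> S \<Longrightarrow> c (q x) = q (p x)"
  shows "cycle_type S' c = cycle_type S p"
proof -
  have iq: "inj_on q S" using q by (simp add: bij_betw_def)
  have S': "S' = q ` S" using q by (simp add: bij_betw_def)
  define Ob where "Ob x = {(p ^^ k) x | k. True}" for x
  have ck: "(c ^^ k) (q x) = q ((p ^^ k) x)" if "x \<in> S" for x k
    using that by (induction k) (auto simp: c funpow_permutes_in[OF p])
  have Osub: "Ob x \<subseteq> S" if "x \<in> S" for x using funpow_permutes_in[OF p that] unfolding Ob_def by blast
  have Oc: "{(c ^^ k) (q x) | k. True} = q ` Ob x" if "x \<in> S" for x
    using ck[OF that] unfolding Ob_def by auto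
  have "(\<lambda>z. {(c ^^ k) z | k. True}) ` S' = image q ` (Ob ` S)"
    unfolding S' using Oc by (auto simp: image_image)
  moreover have inj: "inj_on (image q) (Ob ` S)"
    by (rule inj_on_subset[OF inj_on_image_Pow[OF iq]]) (use Osub in auto)
  ultimately have "mset_set ((\<lambda>z. {(c ^^ k) z | k. True}) ` S') = image_mset (image q) (mset_set (Ob ` S))"
    using image_mset_mset_set[OF inj] by simp
  then have "cycle_type S' c = image_mset (card \<circ> image q) (mset_set (Ob ` S))"
    unfolding cycle_type_def by (simp add: multiset.map_comp)
  also have "\<dots> = image_mset card (mset_set (Ob ` S))"
  proof (rule image_mset_cong)
    fix C assume "C \<in># mset_set (Ob ` S)"
    then have "C \<subseteq> S" using Osub fS by auto
    then show "(card \<circ> image q) C = card C" using card_image[OF inj_on_subset[OF iq]] by simp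
  qed
  finally show ?thesis unfolding cycle_type_def Ob_def by simp
qed

lemma cnt_transport:
  assumes q: "bij_betw q S S'" and fS: "finite S" and AS: "A \<subseteq> Pow S" and BS: "B \<subseteq> Pow S"
  shows "cnt mu b S' (act q A) (act q B) = cnt mu b S A B"
proof -
  have iq: "inj_on q S" using q by (simp add: bij_betw_def)
  have S': "S' = q ` S" using q by (simp add: bij_betw_def)
  define cj where "cj = (\<lambda>\<pi> x. if x \<in> S' then q (\<pi> (inv_into S q x)) else x)"
  have bij: "bij_betw cj {\<pi>. \<pi> permutes S} {\<pi>. \<pi> permutes S'}"
    unfolding cj_def by (rule bij_betw_permutations[OF q])
  define Q where "Q p \<longleftrightarrow> filter_mset (\<lambda>l. 2 \<le> l) (cycle_type S p) = mu \<and> act p A = B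
       \<and> (b \<longrightarrow> (\<forall>e\<in>A. \<exists>x\<in>e. p x \<noteq> x))" for p
  define Q' where "Q' p \<longleftrightarrow> filter_mset (\<lambda>l. 2 \<le> l) (cycle_type S' p) = mu \<and> act p (act q A) = act q B
       \<and> (b \<longrightarrow> (\<forall>e\<in>act q A. \<exists>x\<in>e. p x \<noteq> x))" for p
  have key: "Q' (cj p) \<longleftrightarrow> Q p" if p: "p permutes S" for p
  proof -
    have c: "cj p (q x) = q (p x)" if "x \<in> S" for x
      unfolding cj_def using that iq S' by auto
    have ct: "cycle_type S' (cj p) = cycle_type S p"
      by (rule cycle_type_transport[OF q p fS c])
    have pe: "p ` e \<subseteq> S" if "e \<subseteq> S" for e using that permutes_in_image[OF p] by blast
    have "act (cj p) (act q A) = act q (act p A)"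
    proof -
      have "cj p ` (q ` e) = q ` (p ` e)" if "e \<in> A" for e
      proof -
        have eS: "e \<subseteq> S" using that AS by blast
        have "cj p ` (q ` e) = (\<lambda>x. cj p (q x)) ` e" by (simp add: image_image)
        also have "\<dots> = (\<lambda>x. q (p x)) ` e" by (rule image_cong) (use c eS in auto)
        also have "\<dots> = q ` (p ` e)" by (simp add: image_image)
        finally show ?thesis .
      qed
      then show ?thesis unfolding act_def by (auto simp: image_image)
    qed
    moreover have "act p A \<subseteq> Pow S" using AS pe unfolding act_def by blast
    ultimately have a: "act (cj p) (act q A) = act q B \<longleftrightarrow> act p A = B"
      using act_inj[OF iq, of "act p A" B] BS by auto
    have t: "(\<forall>e\<in>act q A. \<exists>x\<in>e. cj p x \<noteq> x) \<longleftrightarrow> (\<forall>e\<in>A. \<exists>x\<in>e. p x \<noteq> x)"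
    proof -
      have "(\<exists>x\<in>q ` e. cj p x \<noteq> x) \<longleftrightarrow> (\<exists>x\<in>e. p x \<noteq> x)" if "e \<in> A" for e
      proof -
        have eS: "e \<subseteq> S" using that AS by blast
        have "(\<exists>x\<in>q ` e. cj p x \<noteq> x) \<longleftrightarrow> (\<exists>x\<in>e. cj p (q x) \<noteq> q x)" by blast
        also have "\<dots> \<longleftrightarrow> (\<exists>x\<in>e. q (p x) \<noteq> q x)" using c eS by (intro bex_cong) auto
        also have "\<dots> \<longleftrightarrow> (\<exists>x\<in>e. p x \<noteq> x)"
        proof (rule bex_cong)
          fix x assume x: "x \<in> e"
          have "x \<in> S" "p x \<in> S" using x eS pe[OF eS] by auto
          then show "q (p x) \<noteq> q x \<longleftrightarrow> p x \<noteq> x" by (simp add: inj_on_eq_iff[OF iq])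
        qed simp
        finally show ?thesis .
      qed
      then show ?thesis unfolding act_def by auto
    qed
    show ?thesis unfolding Q_def Q'_def using ct a t by simp
  qed
  have img: "cj ` {p. p permutes S \<and> Q p} = {p. p permutes S' \<and> Q' p}"
  proof
    show "cj ` {p. p permutes S \<and> Q p} \<subseteq> {p. p permutes S' \<and> Q' p}"
      using bij key unfolding bij_betw_def by auto
  next
    show "{p. p permutes S' \<and> Q' p} \<subseteq> cj ` {p. p permutes S \<and> Q p}"
    proof
      fix p' assume p': "p' \<in> {p. p permutes S' \<and> Q' p}"
      then have "p' \<in> cj ` {\<pi>. \<pi> permutes S}" using bij unfolding bij_betw_def by auto
      then obtain p where p: "p permutes S" "p' = cj p" by auto
      then have "Q p" using key p' by auto
      then show "p' \<in> cj ` {p. p permutes S \<and> Q p}" using p by blast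
    qed
  qed
  have "bij_betw cj {p. p permutes S \<and> Q p} {p. p permutes S' \<and> Q' p}"
    by (rule bij_betw_subset[OF bij _ img]) auto
  then have "card {p. p permutes S' \<and> Q' p} = card {p. p permutes S \<and> Q p}"
    by (simp add: bij_betw_same_card)
  then show ?thesis unfolding cnt_def Q_def Q'_def by simp
qed

context fixes p :: "nat \<Rightarrow> nat" and S :: "nat set"
  assumes p: "p permutes S" and fS: "finite S"
begin

lemma perm_p: "permutation p" using p fS permutation_permutes by blast

lemma orb_eq: "{(p ^^ k) x | k. True} = orbit p x"
  using orbit_altdef_permutation[OF perm_p] by simp

lemma orb_sub: "x \<in> S \<Longrightarrow> orbit p x \<subseteq> S"
  using permutes_orbit_subset[OF p] .

lemma orb_self: "x \<in> orbit p x"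
  using permutation_self_in_orbit[OF perm_p] .

lemma orb_same: "y \<in> orbit p x \<Longrightarrow> orbit p y = orbit p x"
  by (rule orbit_cyclic_eq3[OF cyclic_on_orbit[OF p fS, of x]])

lemma orb_fin: "finite (orbit p x)"
  using finite_orbit[OF orb_self] .

lemma orb_disj: "orbit p x \<inter> orbit p y \<noteq> {} \<Longrightarrow> orbit p x = orbit p y"
proof -
  assume "orbit p x \<inter> orbit p y \<noteq> {}"
  then obtain z where "z \<in> orbit p x" "z \<in> orbit p y" by blast
  then show ?thesis using orb_same[of z x] orb_same[of z y] by simp
qed

lemma ct_eq: "cycle_type S p = image_mset card (mset_set (orbit p ` S))"
  unfolding cycle_type_def orb_eq ..

lemma sum_ct: "sum_mset (cycle_type S p) = card S"
proof -
  have "sum_mset (cycle_type S p) = sum card (orbit p ` S)"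
    unfolding ct_eq by (simp add: sum_unfold_sum_mset)
  also have "\<dots> = card (\<Union>(orbit p ` S))"
  proof (rule card_Union_disjoint[symmetric])
    show "pairwise disjnt (orbit p ` S)"
      unfolding pairwise_def disjnt_def using orb_disj by blast
  qed (use fS orb_fin in auto)
  also have "\<Union>(orbit p ` S) = S" using orb_sub orb_self by blast
  finally show ?thesis .
qed

lemma ct_pos: "m \<in># cycle_type S p \<Longrightarrow> 1 \<le> m"
proof -
  assume "m \<in># cycle_type S p"
  then obtain x where "m = card (orbit p x)" unfolding ct_eq using fS by auto
  then show ?thesis using orb_fin[of x] orb_self[of x] by (auto simp: card_gt_0_iff Suc_le_eq)
qed

lemma orb_card2: "2 \<le> card (orbit p x) \<longleftrightarrow> p x \<noteq> x"
proof
  assume c: "2 \<le> card (orbit p x)"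
  show "p x \<noteq> x"
  proof
    assume "p x = x"
    then have "orbit p x = {x}" using orbit_eq_singleton_iff[of p x] by simp
    then show False using c by simp
  qed
next
  assume ne: "p x \<noteq> x"
  have "{x, p x} \<subseteq> orbit p x" using orb_self orbit.base by auto
  then have "card {x, p x} \<le> card (orbit p x)" using card_mono orb_fin by blast
  then show "2 \<le> card (orbit p x)" using ne by simp
qed

lemma sum_filter_ct: "sum_mset (filter_mset (\<lambda>l. 2 \<le> l) (cycle_type S p)) = card {x\<in>S. p x \<noteq> x}"
proof -
  define OS where "OS = orbit p ` S"
  have fOS: "finite OS" unfolding OS_def using fS by simp
  have "filter_mset (\<lambda>l. 2 \<le> l) (cycle_type S p) = image_mset card (mset_set {ob\<in>OS. 2 \<le> card ob})"
    unfolding ct_eq OS_def[symmetric] filter_mset_image_mset using fOS by simp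
  then have "sum_mset (filter_mset (\<lambda>l. 2 \<le> l) (cycle_type S p)) = sum card {ob\<in>OS. 2 \<le> card ob}"
    by (simp add: sum_unfold_sum_mset)
  also have "\<dots> = card (\<Union>{ob\<in>OS. 2 \<le> card ob})"
  proof (rule card_Union_disjoint[symmetric])
    show "pairwise disjnt {ob\<in>OS. 2 \<le> card ob}"
      unfolding pairwise_def disjnt_def OS_def using orb_disj by blast
  qed (use fOS orb_fin OS_def in auto)
  also have "\<Union>{ob\<in>OS. 2 \<le> card ob} = {x\<in>S. p x \<noteq> x}"
  proof
    show "\<Union>{ob\<in>OS. 2 \<le> card ob} \<subseteq> {x\<in>S. p x \<noteq> x}"
    proof
      fix y assume "y \<in> \<Union>{ob\<in>OS. 2 \<le> card ob}"
      then obtain x where x: "x \<in> S" "y \<in> orbit p x" "2 \<le> card (orbit p x)" unfolding OS_def by blast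
      have yS: "y \<in> S" using orb_sub[OF x(1)] x(2) by blast
      have "orbit p y = orbit p x" using orb_same[OF x(2)] .
      then have "p y \<noteq> y" using orb_card2[of y] x(3) by simp
      then show "y \<in> {x\<in>S. p x \<noteq> x}" using yS by simp
    qed
  next
    show "{x\<in>S. p x \<noteq> x} \<subseteq> \<Union>{ob\<in>OS. 2 \<le> card ob}"
    proof
      fix y assume y: "y \<in> {x\<in>S. p x \<noteq> x}"
      then have "2 \<le> card (orbit p y)" using orb_card2 by simp
      then show "y \<in> \<Union>{ob\<in>OS. 2 \<le> card ob}" using y orb_self unfolding OS_def by blast
    qed
  qed
  finally show ?thesis .
qed

lemma ct_filter_pad:
  assumes "\<forall>x\<in>#mu. 2 \<le> x" "sum_mset mu \<le> card S"
  shows "filter_mset (\<lambda>l. 2 \<le> l) (cycle_type S p) = mu \<longleftrightarrow> cycle_type S p = pad1 mu (card S)"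
proof -
  define c where "c = cycle_type S p"
  have split: "c = filter_mset (\<lambda>l. 2 \<le> l) c + filter_mset (\<lambda>l. \<not> 2 \<le> l) c"
    by (simp add: multiset_partition)
  have ones: "filter_mset (\<lambda>l. \<not> 2 \<le> l) c = replicate_mset (count c 1) 1"
  proof (rule multiset_eqI)
    fix a
    show "count (filter_mset (\<lambda>l. \<not> 2 \<le> l) c) a = count (replicate_mset (count c 1) 1) a"
    proof (cases "a = 1")
      case True then show ?thesis by simp
    next
      case False
      have "a \<in># c \<Longrightarrow> 1 \<le> a" using ct_pos unfolding c_def by blast
      then show ?thesis using False by (cases "a \<in># c") (auto simp: not_in_iff)
    qed
  qed
  have sc: "sum_mset c = card S" unfolding c_def by (rule sum_ct)
  show ?thesis
  proof
    assume h: "filter_mset (\<lambda>l. 2 \<le> l) (cycle_type S p) = mu"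
    have "sum_mset c = sum_mset (filter_mset (\<lambda>l. 2 \<le> l) c + filter_mset (\<lambda>l. \<not> 2 \<le> l) c)"
      using arg_cong[OF split, of sum_mset] .
    also have "\<dots> = sum_mset (filter_mset (\<lambda>l. 2 \<le> l) c) + sum_mset (filter_mset (\<lambda>l. \<not> 2 \<le> l) c)"
      by (rule sum_mset.union)
    also have "\<dots> = sum_mset mu + count c 1" using ones h unfolding c_def by simp
    finally have "card S = sum_mset mu + count c 1" using sc by simp
    then have "count c 1 = card S - sum_mset mu" by simp
    then show "cycle_type S p = pad1 mu (card S)" using split ones h unfolding c_def pad1_def by simp
  next
    assume h: "cycle_type S p = pad1 mu (card S)"
    have "filter_mset (\<lambda>l. 2 \<le> l) mu = mu" using assms(1) by (simp add: filter_mset_eq_conv)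
    moreover have "filter_mset (\<lambda>l. 2 \<le> l) (replicate_mset k (1::nat)) = {#}" for k
      by (induction k) auto
    ultimately show "filter_mset (\<lambda>l. 2 \<le> l) (cycle_type S p) = mu" using h unfolding pad1_def by simp
  qed
qed

end

lemma ct_subset:
  assumes p: "p permutes U" and US: "U \<subseteq> S" and fS: "finite S"
  shows "cycle_type S p = cycle_type U p + replicate_mset (card (S - U)) 1"
proof -
  have fU: "finite U" using US fS finite_subset by blast
  have pS: "p permutes S" using permutes_subset[OF p US] .
  have e1: "cycle_type S p = image_mset card (mset_set (orbit p ` S))" using ct_eq[OF pS fS] .
  have e2: "cycle_type U p = image_mset card (mset_set (orbit p ` U))" using ct_eq[OF p fU] .
  have fx: "p x = x" if "x \<notin> U" for x using p that unfolding permutes_def by blast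
  have sing: "orbit p x = {x}" if "x \<notin> U" for x using fx[OF that] orbit_eq_singleton_iff[of p x] by simp
  have "orbit p ` S = orbit p ` U \<union> orbit p ` (S - U)" using US by blast
  moreover have "orbit p ` (S - U) = (\<lambda>x. {x}) ` (S - U)" using sing by auto
  moreover have "orbit p ` U \<inter> (\<lambda>x. {x}) ` (S - U) = {}"
  proof -
    have "orbit p x \<subseteq> U" if "x \<in> U" for x using orb_sub[OF p fU that] .
    then show ?thesis by auto
  qed
  ultimately have "mset_set (orbit p ` S) = mset_set (orbit p ` U) + mset_set ((\<lambda>x. {x}) ` (S - U))"
    using mset_set_Union[of "orbit p ` U" "(\<lambda>x. {x}) ` (S - U)"] fU fS by simp
  moreover have "image_mset card (mset_set ((\<lambda>x. {x}) ` (S - U))) = replicate_mset (card (S - U)) 1"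
  proof -
    have "inj_on (\<lambda>x. {x}) (S - U)" by (auto simp: inj_on_def)
    then have "mset_set ((\<lambda>x. {x}) ` (S - U)) = image_mset (\<lambda>x. {x}) (mset_set (S - U))"
      using image_mset_mset_set[of "\<lambda>x. {x}" "S - U"] by simp
    then have "image_mset card (mset_set ((\<lambda>x. {x}) ` (S - U))) = image_mset (\<lambda>x. 1) (mset_set (S - U))"
      by (simp add: multiset.map_comp comp_def)
    also have "\<dots> = replicate_mset (card (S - U)) 1" by (simp add: image_mset_const_eq)
    finally show ?thesis .
  qed
  ultimately show ?thesis using e1 e2 by simp
qed

lemma ct_subset_filter:
  assumes p: "p permutes U" and US: "U \<subseteq> S" and fS: "finite S"
  shows "filter_mset (\<lambda>l. 2 \<le> l) (cycle_type S p) = filter_mset (\<lambda>l. 2 \<le> l) (cycle_type U p)"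
proof -
  have "filter_mset (\<lambda>l. 2 \<le> l) (replicate_mset k (1::nat)) = {#}" for k
    by (induction k) auto
  then show ?thesis using ct_subset[OF assms] by simp
qed

lemma ismatch_union: assumes m1: "ismatch S1 A1" and m2: "ismatch S2 A2" and dj: "S1 \<inter> S2 = {}"
  shows "ismatch (S1 \<union> S2) (A1 \<union> A2)"
proof -
  have f: "\<forall>e\<in>A1 \<union> A2. \<exists>i j. i \<noteq> j \<and> e = {i,j}" using ismatch_form[OF m1] ismatch_form[OF m2] by blast
  have c: "\<Union>(A1 \<union> A2) = S1 \<union> S2" using ismatch_cov[OF m1] ismatch_cov[OF m2] by blast
  have d: "\<forall>e\<in>A1 \<union> A2. \<forall>e'\<in>A1 \<union> A2. e \<noteq> e' \<longrightarrow> e \<inter> e' = {}"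
  proof (intro ballI impI)
    fix e e' assume e: "e \<in> A1 \<union> A2" and e': "e' \<in> A1 \<union> A2" and ne: "e \<noteq> e'"
    show "e \<inter> e' = {}"
    proof (cases "e \<in> A1")
      case e1: True
      show ?thesis
      proof (cases "e' \<in> A1")
        case True show ?thesis by (rule ismatch_disj[OF m1 e1 True ne])
      next
        case False then have "e' \<in> A2" using e' by blast
        then show ?thesis using edge_sub[OF m1 e1] edge_sub[OF m2 \<open>e' \<in> A2\<close>] dj by blast
      qed
    next
      case False then have e2: "e \<in> A2" using e by blast
      show ?thesis
      proof (cases "e' \<in> A1")
        case True then show ?thesis using edge_sub[OF m1 True] edge_sub[OF m2 e2] dj by blast
      next
        case False then have "e' \<in> A2" using e' by blast
        then show ?thesis using ismatch_disj[OF m2 e2 _ ne] by blast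
      qed
    qed
  qed
  show ?thesis unfolding ismatch_def using f c d by blast
qed

lemma pt_union1: assumes m1: "ismatch S1 A1" and m2: "ismatch S2 A2" and dj: "S1 \<inter> S2 = {}" and x: "x \<in> S1"
  shows "pt (A1 \<union> A2) x = pt A1 x"
proof (rule pt_eq[OF ismatch_union[OF m1 m2 dj]])
  show "x \<in> S1 \<union> S2" using x by simp
  show "pt A1 x \<noteq> x" using pt_neq[OF m1 x] .
  show "{x, pt A1 x} \<in> A1 \<union> A2" using pt_edge[OF m1 x] by simp
qed

locale mmU = m1: mm S1 A1 B1 + m2: mm S2 A2 B2 for S1 A1 B1 S2 A2 B2 +
  assumes dj: "S1 \<inter> S2 = {}"
begin

lemma dj2: "S2 \<inter> S1 = {}" using dj by blast

lemma mmu: "mm (S1 \<union> S2) (A1 \<union> A2) (B1 \<union> B2)"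
  unfolding mm_def using m1.fin m2.fin ismatch_union[OF m1.mA m2.mA dj] ismatch_union[OF m1.mB m2.mB dj] by simp

lemma ptA1: "x \<in> S1 \<Longrightarrow> pt (A1 \<union> A2) x = pt A1 x" using pt_union1[OF m1.mA m2.mA dj] .
lemma ptB1: "x \<in> S1 \<Longrightarrow> pt (B1 \<union> B2) x = pt B1 x" using pt_union1[OF m1.mB m2.mB dj] .
lemma ptA2: "x \<in> S2 \<Longrightarrow> pt (A1 \<union> A2) x = pt A2 x" using pt_union1[OF m2.mA m1.mA dj2] by (simp add: Un_commute)
lemma ptB2: "x \<in> S2 \<Longrightarrow> pt (B1 \<union> B2) x = pt B2 x" using pt_union1[OF m2.mB m1.mB dj2] by (simp add: Un_commute)

lemma wk_u1: "x \<in> S1 \<Longrightarrow> wk (A1 \<union> A2) (B1 \<union> B2) x i = wk A1 B1 x i"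
proof (induction i)
  case 0 then show ?case by simp
next
  case (Suc i)
  have w: "wk A1 B1 x i \<in> S1" using m1.wk_in[OF Suc.prems] .
  show ?case using Suc ptA1[OF w] ptB1[OF w] by (simp add: wk.simps(2))
qed

lemma wk_u2: "x \<in> S2 \<Longrightarrow> wk (A1 \<union> A2) (B1 \<union> B2) x i = wk A2 B2 x i"
proof (induction i)
  case 0 then show ?case by simp
next
  case (Suc i)
  have w: "wk A2 B2 x i \<in> S2" using m2.wk_in[OF Suc.prems] .
  show ?case using Suc ptA2[OF w] ptB2[OF w] by (simp add: wk.simps(2))
qed

lemma per_u1: "x \<in> S1 \<Longrightarrow> per (A1 \<union> A2) (B1 \<union> B2) x = per A1 B1 x"
  unfolding per_def using wk_u1 by simp
lemma per_u2: "x \<in> S2 \<Longrightarrow> per (A1 \<union> A2) (B1 \<union> B2) x = per A2 B2 x"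
  unfolding per_def using wk_u2 by simp

lemma comp_u1: assumes x: "x \<in> S1"
  shows "compG (S1 \<union> S2) (A1 \<union> A2) (B1 \<union> B2) x = compG S1 A1 B1 x"
proof -
  interpret u: mm "S1 \<union> S2" "A1 \<union> A2" "B1 \<union> B2" by (rule mmu)
  have "compG (S1 \<union> S2) (A1 \<union> A2) (B1 \<union> B2) x = wk (A1 \<union> A2) (B1 \<union> B2) x ` {..<per (A1 \<union> A2) (B1 \<union> B2) x}"
    using u.comp_wk x by simp
  also have "\<dots> = wk A1 B1 x ` {..<per A1 B1 x}" using per_u1[OF x] wk_u1[OF x] by simp
  also have "\<dots> = compG S1 A1 B1 x" using m1.comp_wk[OF x] by simp
  finally show ?thesis .
qed

lemma comp_u2: assumes x: "x \<in> S2"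
  shows "compG (S1 \<union> S2) (A1 \<union> A2) (B1 \<union> B2) x = compG S2 A2 B2 x"
proof -
  interpret u: mm "S1 \<union> S2" "A1 \<union> A2" "B1 \<union> B2" by (rule mmu)
  have "compG (S1 \<union> S2) (A1 \<union> A2) (B1 \<union> B2) x = wk (A1 \<union> A2) (B1 \<union> B2) x ` {..<per (A1 \<union> A2) (B1 \<union> B2) x}"
    using u.comp_wk x by simp
  also have "\<dots> = wk A2 B2 x ` {..<per A2 B2 x}" using per_u2[OF x] wk_u2[OF x] by simp
  also have "\<dots> = compG S2 A2 B2 x" using m2.comp_wk[OF x] by simp
  finally show ?thesis .
qed

lemma mdist_u: "mdistG (S1 \<union> S2) (A1 \<union> A2) (B1 \<union> B2) = mdistG S1 A1 B1 + mdistG S2 A2 B2"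
proof -
  have e: "compG (S1 \<union> S2) (A1 \<union> A2) (B1 \<union> B2) ` (S1 \<union> S2) = compG S1 A1 B1 ` S1 \<union> compG S2 A2 B2 ` S2"
    using comp_u1 comp_u2 by (auto simp: image_Un)
  have d: "compG S1 A1 B1 ` S1 \<inter> compG S2 A2 B2 ` S2 = {}"
  proof -
    have "C \<noteq> D" if CD: "C \<in> compG S1 A1 B1 ` S1" "D \<in> compG S2 A2 B2 ` S2" for C D
    proof -
      obtain x where x: "x \<in> S1" "C = compG S1 A1 B1 x" using CD(1) by blast
      have "x \<in> C" "C \<subseteq> S1" using x m1.self_comp m1.comp_sub by auto
      moreover have "D \<subseteq> S2" using CD(2) m2.comp_sub by blast
      ultimately show ?thesis using dj by blast
    qed
    then show ?thesis by blast
  qed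
  show ?thesis unfolding mdistG_def e
    using mset_set_Union[OF m1.comps_fin m2.comps_fin d] by simp
qed

end

lemma mdist_same: assumes m: "ismatch S A" and f: "finite S"
  shows "mdistG S A A = replicate_mset (card A) 2"
proof -
  interpret mm S A A using m f by (simp add: mm_def)
  have c2: "card C = 2" if CC: "C \<in> compG S A A ` S" for C
  proof -
    obtain x where x: "x \<in> S" "C = compG S A A x" using CC by blast
    have "per A A x = 2" using per2[OF x(1)] by simp
    then show ?thesis using card_comp[OF x(1)] x(2) by simp
  qed
  have "compG S A A ` S = {C \<in> compG S A A ` S. card C = 2}" using c2 by blast
  also have "\<dots> = A" using comps2_eq by simp
  finally have e: "compG S A A ` S = A" .
  have "mdistG S A A = image_mset card (mset_set A)" unfolding mdistG_def e ..
  also have "\<dots> = image_mset (\<lambda>_. 2) (mset_set A)"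
    by (rule image_mset_cong) (use edge_card[OF m] finA[OF m f] in auto)
  also have "\<dots> = replicate_mset (card A) 2" by (simp add: image_mset_const_eq)
  finally show ?thesis .
qed

lemma sub_split:
  assumes m: "mm S A B" and W: "W \<subseteq> A" and AW: "A - W \<subseteq> B"
  shows "ismatch (\<Union>W) W" "ismatch (\<Union>W) (B - (A - W))" "ismatch (\<Union>(A - W)) (A - W)"
    "\<Union>W \<inter> \<Union>(A - W) = {}" "\<Union>W \<union> \<Union>(A - W) = S"
proof -
  interpret mm S A B by (rule m)
  show d: "\<Union>W \<inter> \<Union>(A - W) = {}"
  proof -
    have "e \<inter> e' = {}" if "e \<in> W" "e' \<in> A - W" for e e'
      using ismatch_disj[OF mA, of e e'] that W by blast
    then show ?thesis by blast
  qed
  show c: "\<Union>W \<union> \<Union>(A - W) = S" using W ismatch_cov[OF mA] by blast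
  show "ismatch (\<Union>W) W"
    unfolding ismatch_def using W ismatch_form[OF mA] ismatch_disj[OF mA] by blast
  show "ismatch (\<Union>(A - W)) (A - W)"
    unfolding ismatch_def using ismatch_form[OF mA] ismatch_disj[OF mA] by blast
  have cov: "\<Union>(B - (A - W)) = \<Union>W"
  proof
    show "\<Union>(B - (A - W)) \<subseteq> \<Union>W"
    proof
      fix x assume "x \<in> \<Union>(B - (A - W))"
      then obtain b where b: "b \<in> B" "b \<notin> A - W" "x \<in> b" by blast
      have xS: "x \<in> S" using edge_sub[OF mB b(1)] b(3) by blast
      have "x \<notin> \<Union>(A - W)"
      proof
        assume "x \<in> \<Union>(A - W)"
        then obtain e where e: "e \<in> A - W" "x \<in> e" by blast
        have "e \<in> B" using e(1) AW by blast
        have "e \<noteq> b" using e(1) b(2) by blast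
        then have "e \<inter> b = {}" using ismatch_disj[OF mB \<open>e \<in> B\<close> b(1)] by blast
        then show False using e(2) b(3) by blast
      qed
      then show "x \<in> \<Union>W" using xS c by blast
    qed
  next
    show "\<Union>W \<subseteq> \<Union>(B - (A - W))"
    proof
      fix x assume xW: "x \<in> \<Union>W"
      then have xS: "x \<in> S" using c by blast
      then obtain b where b: "b \<in> B" "x \<in> b" using ismatch_cov[OF mB] by blast
      have "b \<notin> A - W" using b(2) xW d by blast
      then show "x \<in> \<Union>(B - (A - W))" using b by blast
    qed
  qed
  show "ismatch (\<Union>W) (B - (A - W))"
    unfolding ismatch_def using cov ismatch_form[OF mB] ismatch_disj[OF mB] by blast
qed

lemma mdist_split:
  assumes m: "mm S A B" and W: "W \<subseteq> A" and AW: "A - W \<subseteq> B"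
  shows "mdistG S A B = mdistG (\<Union>W) W (B - (A - W)) + mdistG (\<Union>(A - W)) (A - W) (A - W)"
    "mm (\<Union>W) W (B - (A - W))"
proof -
  note ss = sub_split[OF m W AW]
  have fS: "finite S" using m mm_def by blast
  have f1: "finite (\<Union>W)" using ss(5) fS finite_subset by blast
  have f2: "finite (\<Union>(A - W))" using ss(5) fS finite_subset by blast
  show m1: "mm (\<Union>W) W (B - (A - W))" unfolding mm_def using f1 ss(1,2) by simp
  have m2: "mm (\<Union>(A - W)) (A - W) (A - W)" unfolding mm_def using f2 ss(3) by simp
  interpret mmU "\<Union>W" W "B - (A - W)" "\<Union>(A - W)" "A - W" "A - W"
    unfolding mmU_def mmU_axioms_def using m1 m2 ss(4) by simp
  have "W \<union> (A - W) = A" using W by blast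
  moreover have "B - (A - W) \<union> (A - W) = B" using AW by blast
  ultimately show "mdistG S A B = mdistG (\<Union>W) W (B - (A - W)) + mdistG (\<Union>(A - W)) (A - W) (A - W)"
    using mdist_u ss(5) by simp
qed

lemma ismatch_I: "ismatch {1..2*s} (Imatch s)"
proof -
  have f: "\<forall>e\<in>Imatch s. \<exists>i j. i \<noteq> j \<and> e = {i,j}"
  proof
    fix e assume "e \<in> Imatch s"
    then obtain i where i: "e = {i, s + i}" "i \<in> {1..s}" unfolding Imatch_def by blast
    then have "i \<noteq> s + i" by simp
    then show "\<exists>i j. i \<noteq> j \<and> e = {i,j}" using i(1) by blast
  qed
  have c: "\<Union>(Imatch s) = {1..2*s}"
  proof
    show "\<Union>(Imatch s) \<subseteq> {1..2*s}" unfolding Imatch_def by auto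
    show "{1..2*s} \<subseteq> \<Union>(Imatch s)"
    proof
      fix x assume x: "x \<in> {1..2*s}"
      show "x \<in> \<Union>(Imatch s)"
      proof (cases "x \<le> s")
        case True then have "{x, s + x} \<in> Imatch s" using x unfolding Imatch_def by auto
        then show ?thesis by blast
      next
        case False then have "{x - s, s + (x - s)} \<in> Imatch s" using x unfolding Imatch_def by auto
        moreover have "s + (x - s) = x" using False by simp
        ultimately have "{x - s, x} \<in> Imatch s" by simp
        then show ?thesis by blast
      qed
    qed
  qed
  have d: "\<forall>e\<in>Imatch s. \<forall>e'\<in>Imatch s. e \<noteq> e' \<longrightarrow> e \<inter> e' = {}"
  proof (intro ballI impI)
    fix e e' assume e: "e \<in> Imatch s" and e': "e' \<in> Imatch s" and ne: "e \<noteq> e'"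
    obtain i where i: "e = {i, s + i}" "i \<in> {1..s}" using e unfolding Imatch_def by blast
    obtain j where j: "e' = {j, s + j}" "j \<in> {1..s}" using e' unfolding Imatch_def by blast
    have "i \<noteq> j" using ne i j by blast
    then show "e \<inter> e' = {}" using i j by auto
  qed
  show ?thesis unfolding ismatch_def using f c d by blast
qed

lemma card_Imatch: "card (Imatch s) = s"
  using card_A[OF ismatch_I, of s] by simp

definition cA :: "nat \<Rightarrow> nat set set" where
  "cA t = (\<lambda>i. {2*i, 2*i+1}) ` {..<t}"
definition cB :: "nat \<Rightarrow> nat set set" where
  "cB t = insert {2*t - 1, 0} ((\<lambda>i. {2*i+1, 2*i+2}) ` {i. i + 1 < t})"

lemma cyc_A: "ismatch {..<2*t} (cA t)"
proof -
  have f: "\<forall>e\<in>cA t. \<exists>i j. i \<noteq> j \<and> e = {i,j}"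
  proof
    fix e assume "e \<in> cA t"
    then obtain i where i: "e = {2*i, 2*i+1}" unfolding cA_def by blast
    have "2*i \<noteq> 2*i+1" by simp
    then show "\<exists>i j. i \<noteq> j \<and> e = {i,j}" using i by blast
  qed
  have c: "\<Union>(cA t) = {..<2*t}"
  proof
    show "\<Union>(cA t) \<subseteq> {..<2*t}" unfolding cA_def by auto
    show "{..<2*t} \<subseteq> \<Union>(cA t)"
    proof
      fix x assume x: "x \<in> {..<2*t}"
      define i where "i = x div 2"
      have "i < t" using x i_def by auto
      moreover have "x = 2*i \<or> x = 2*i+1" using i_def by presburger
      ultimately show "x \<in> \<Union>(cA t)" unfolding cA_def by blast
    qed
  qed
  have d: "\<forall>e\<in>cA t. \<forall>e'\<in>cA t. e \<noteq> e' \<longrightarrow> e \<inter> e' = {}"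
  proof (intro ballI impI)
    fix e e' assume e: "e \<in> cA t" and e': "e' \<in> cA t" and ne: "e \<noteq> e'"
    obtain i where i: "e = {2*i, 2*i+1}" using e unfolding cA_def by blast
    obtain j where j: "e' = {2*j, 2*j+1}" using e' unfolding cA_def by blast
    have "i \<noteq> j" using ne i j by blast
    then show "e \<inter> e' = {}" using i j by (auto; presburger)
  qed
  show ?thesis unfolding ismatch_def using f c d by blast
qed

lemma cyc_B: assumes t: "1 \<le> t" shows "ismatch {..<2*t} (cB t)"
proof -
  have f: "\<forall>e\<in>cB t. \<exists>i j. i \<noteq> j \<and> e = {i,j}"
  proof
    fix e assume "e \<in> cB t"
    then have "e = {2*t - 1, 0} \<or> (\<exists>i. e = {2*i+1, 2*i+2})" unfolding cB_def by blast
    moreover have "2*t - 1 \<noteq> (0::nat)" using t by simp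
    moreover have "2*i+1 \<noteq> 2*i+(2::nat)" for i by simp
    ultimately show "\<exists>i j. i \<noteq> j \<and> e = {i,j}" by blast
  qed
  have c: "\<Union>(cB t) = {..<2*t}"
  proof
    show "\<Union>(cB t) \<subseteq> {..<2*t}" unfolding cB_def using t by auto
    show "{..<2*t} \<subseteq> \<Union>(cB t)"
    proof
      fix x assume x: "x \<in> {..<2*t}"
      show "x \<in> \<Union>(cB t)"
      proof (cases "x = 0 \<or> x = 2*t - 1")
        case True then show ?thesis unfolding cB_def by blast
      next
        case False
        then have x0: "0 < x" "x < 2*t - 1" using x by auto
        show ?thesis
        proof (cases "odd x")
          case True
          define i where "i = x div 2"
          have "x = 2*i+1" using True i_def by presburger
          moreover have "i + 1 < t" using x0 \<open>x = 2*i+1\<close> by linarith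
          ultimately show ?thesis unfolding cB_def by blast
        next
          case False
          define i where "i = x div 2 - 1"
          have "x = 2*i+2" using False i_def x0 by presburger
          moreover have "i + 1 < t" using x \<open>x = 2*i+2\<close> by simp
          ultimately show ?thesis unfolding cB_def by blast
        qed
      qed
    qed
  qed
  have d: "\<forall>e\<in>cB t. \<forall>e'\<in>cB t. e \<noteq> e' \<longrightarrow> e \<inter> e' = {}"
  proof -
    have d1: "{2*i+1, 2*i+2} \<inter> {2*t - 1, 0} = {}" if "i + 1 < t" for i using that by auto
    have d2: "{2*i+1, 2*i+2} \<inter> {2*j+1, 2*j+2} = {}" if "i \<noteq> j" for i j :: nat using that by (auto; presburger)
    show ?thesis
    proof (intro ballI impI)
      fix e e' assume e: "e \<in> cB t" and e': "e' \<in> cB t" and ne: "e \<noteq> e'"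
      have E: "e = {2*t - 1, 0} \<or> (\<exists>i. i + 1 < t \<and> e = {2*i+1, 2*i+2})" using e unfolding cB_def by blast
      have E': "e' = {2*t - 1, 0} \<or> (\<exists>i. i + 1 < t \<and> e' = {2*i+1, 2*i+2})" using e' unfolding cB_def by blast
      show "e \<inter> e' = {}"
      proof (cases "e = {2*t - 1, 0}")
        case True
        then obtain j where j: "j + 1 < t" "e' = {2*j+1, 2*j+2}" using E' ne by blast
        show ?thesis using d1[OF j(1)] True j(2) by blast
      next
        case False
        then obtain i where i: "i + 1 < t" "e = {2*i+1, 2*i+2}" using E by blast
        show ?thesis
        proof (cases "e' = {2*t - 1, 0}")
          case True then show ?thesis using d1[OF i(1)] i(2) by blast
        next
          case False
          then obtain j where j: "j + 1 < t" "e' = {2*j+1, 2*j+2}" using E' by blast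
          have "i \<noteq> j" using ne i j by blast
          then show ?thesis using d2 i j by blast
        qed
      qed
    qed
  qed
  show ?thesis unfolding ismatch_def using f c d by blast
qed

lemma cyc_mm: "1 \<le> t \<Longrightarrow> mm {..<2*t} (cA t) (cB t)"
  unfolding mm_def using cyc_A cyc_B by simp

lemma cyc_wk: assumes t: "1 \<le> t" shows "j < 2*t \<Longrightarrow> wk (cA t) (cB t) 0 j = j"
proof (induction j)
  case 0 then show ?case by simp
next
  case (Suc j)
  have IH: "wk (cA t) (cB t) 0 j = j" using Suc by simp
  show ?case
  proof (cases "even j")
    case True
    define i where "i = j div 2"
    have ji: "j = 2*i" using True i_def by simp
    have "pt (cA t) j = j + 1"
    proof (rule pt_eq[OF cyc_A])
      show "j \<in> {..<2*t}" using Suc.prems by simp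
      show "j + 1 \<noteq> j" by simp
      have "i < t" using Suc.prems ji by simp
      then show "{j, j + 1} \<in> cA t" unfolding cA_def using ji by blast
    qed
    then show ?thesis using IH True by (simp add: wk.simps(2))
  next
    case False
    define i where "i = j div 2"
    have ji: "j = 2*i+1" using False i_def by presburger
    have "pt (cB t) j = j + 1"
    proof (rule pt_eq[OF cyc_B[OF t]])
      show "j \<in> {..<2*t}" using Suc.prems by simp
      show "j + 1 \<noteq> j" by simp
      have "i + 1 < t" using Suc.prems ji by simp
      then show "{j, j + 1} \<in> cB t" unfolding cB_def using ji by (simp add: numeral_2_eq_2)
    qed
    then show ?thesis using IH False by (simp add: wk.simps(2))
  qed
qed

lemma cyc_mdist: assumes t: "1 \<le> t" shows "mdistG {..<2*t} (cA t) (cB t) = {#2*t#}"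
proof -
  interpret mm "{..<2*t}" "cA t" "cB t" using cyc_mm[OF t] .
  have z: "0 \<in> {..<2*t}" using t by simp
  have sub: "{..<2*t} \<subseteq> compG {..<2*t} (cA t) (cB t) 0"
  proof
    fix y assume y: "y \<in> {..<2*t}"
    have "(0, wk (cA t) (cB t) 0 y) \<in> (adj (cA t) (cB t))\<^sup>*" using wk_reach[OF z] .
    then have "(0, y) \<in> (adj (cA t) (cB t))\<^sup>*" using cyc_wk[OF t] y by simp
    then show "y \<in> compG {..<2*t} (cA t) (cB t) 0" unfolding compG_def using y by simp
  qed
  have C0: "compG {..<2*t} (cA t) (cB t) 0 = {..<2*t}" using sub comp_sub by blast
  have "compG {..<2*t} (cA t) (cB t) ` {..<2*t} = {{..<2*t}}"
  proof -
    have "compG {..<2*t} (cA t) (cB t) x = {..<2*t}" if "x \<in> {..<2*t}" for x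
      using comp_eq[of x 0] that C0 by simp
    then have "compG {..<2*t} (cA t) (cB t) ` {..<2*t} = (\<lambda>x. {..<2*t}) ` {..<2*t}" by (rule image_cong[OF refl])
    also have "\<dots> = {{..<2*t}}" using z by blast
    finally show ?thesis .
  qed
  then show ?thesis unfolding mdistG_def by simp
qed

lemma img_shift: "(\<lambda>x::nat. x + c) ` {..<m} = {c..<c+m}"
proof
  show "(\<lambda>x. x + c) ` {..<m} \<subseteq> {c..<c + m}" by auto
  show "{c..<c + m} \<subseteq> (\<lambda>x. x + c) ` {..<m}"
  proof
    fix x assume "x \<in> {c..<c + m}"
    then have "x = (x - c) + c" "x - c < m" by auto
    then show "x \<in> (\<lambda>x. x + c) ` {..<m}" by (metis lessThan_iff rev_image_eqI)
  qed
qed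

lemma cfg_exists: "(\<forall>t\<in>set ts. 1 \<le> t) \<Longrightarrow>
   \<exists>A B. mm {..<2 * sum_list ts} A B \<and> mdistG {..<2 * sum_list ts} A B = mset (map (\<lambda>t. 2*t) ts)"
proof (induction ts)
  case Nil
  have "mm {} {} {}" unfolding mm_def ismatch_def by simp
  moreover have "mdistG {} {} {} = {#}" unfolding mdistG_def by simp
  ultimately show ?case by auto
next
  case (Cons t ts)
  then obtain A0 B0 where AB0: "mm {..<2 * sum_list ts} A0 B0"
     "mdistG {..<2 * sum_list ts} A0 B0 = mset (map (\<lambda>t. 2*t) ts)" by auto
  have t: "1 \<le> t" using Cons.prems by simp
  define sh where "sh = (\<lambda>x::nat. x + 2*t)"
  have ish: "inj_on sh {..<2 * sum_list ts}" unfolding sh_def by (simp add: inj_on_def)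
  have shS: "sh ` {..<2 * sum_list ts} = {2*t..<2*t + 2 * sum_list ts}" unfolding sh_def by (rule img_shift)
  have m2: "mm {2*t..<2*t + 2 * sum_list ts} (act sh A0) (act sh B0)"
    using mm_act[OF AB0(1) ish] shS by simp
  have md2: "mdistG {2*t..<2*t + 2 * sum_list ts} (act sh A0) (act sh B0) = mset (map (\<lambda>t. 2*t) ts)"
    using mm.mdist_act[OF AB0(1) ish] shS AB0(2) by simp
  interpret mmU "{..<2*t}" "cA t" "cB t" "{2*t..<2*t + 2 * sum_list ts}" "act sh A0" "act sh B0"
    unfolding mmU_def mmU_axioms_def using cyc_mm[OF t] m2 by auto
  have U: "{..<2*t} \<union> {2*t..<2*t + 2 * sum_list ts} = {..<2 * sum_list (t # ts)}" by auto
  show ?case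
    using mmu mdist_u cyc_mdist[OF t] md2 U by (intro exI[of _ "cA t \<union> act sh A0"] exI[of _ "cB t \<union> act sh B0"]) simp
qed

theorem exists_B:
  assumes tau: "\<forall>x\<in>#tau. 2 \<le> x" and r: "sum_mset tau \<le> r"
  shows "\<exists>B. ismatch {1..2*r} B \<and> mdistG {1..2*r} (Imatch r) B = dbl (pad1 tau r)"
proof -
  define H where "H = pad1 tau r"
  have H1: "\<forall>x\<in>#H. 1 \<le> x" unfolding H_def pad1_def using tau by auto
  have Hs: "sum_mset H = r" unfolding H_def pad1_def using r by simp
  obtain ts where ts: "mset ts = H" using ex_mset by blast
  have ts1: "\<forall>t\<in>set ts. 1 \<le> t" using H1 ts by (metis set_mset_mset)
  have tss: "sum_list ts = r" using Hs ts by (metis sum_mset_sum_list)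
  obtain A0 B0 where AB0: "mm {..<2 * r} A0 B0" "mdistG {..<2 * r} A0 B0 = dbl H"
    using cfg_exists[OF ts1] tss ts unfolding dbl_def by auto
  define sh where "sh = (\<lambda>x::nat. x + 1)"
  have ish: "inj_on sh {..<2 * r}" unfolding sh_def by (simp add: inj_on_def)
  have shS: "sh ` {..<2 * r} = {1..2*r}"
  proof -
    have "sh ` {..<2 * r} = {1..<1 + 2*r}" unfolding sh_def by (rule img_shift)
    also have "\<dots> = {1..2*r}" by auto
    finally show ?thesis .
  qed
  define A1 where "A1 = act sh A0"
  define B1 where "B1 = act sh B0"
  have m1: "mm {1..2*r} A1 B1" using mm_act[OF AB0(1) ish] shS unfolding A1_def B1_def by simp
  have md1: "mdistG {1..2*r} A1 B1 = dbl H"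
    using mm.mdist_act[OF AB0(1) ish] shS AB0(2) unfolding A1_def B1_def by simp
  have mA1: "ismatch {1..2*r} A1" using m1 mm_def by blast
  have cA1: "card A1 = r" using card_A[OF mA1] by simp
  have mmA: "mm {1..2*r} A1 A1" unfolding mm_def using mA1 by simp
  have mmI: "mm {1..2*r} (Imatch r) (Imatch r)" unfolding mm_def using ismatch_I by simp
  interpret mm2 "{1..2*r}" A1 A1 "{1..2*r}" "Imatch r" "Imatch r"
    unfolding mm2_def using mmA mmI by simp
  have "mdistG {1..2*r} A1 A1 = mdistG {1..2*r} (Imatch r) (Imatch r)"
    using mdist_same[OF mA1] mdist_same[OF ismatch_I] cA1 card_Imatch by simp
  then obtain q where q: "bij_betw q {1..2*r} {1..2*r}" "act q A1 = Imatch r"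
    using iso_exists by blast
  have iq: "inj_on q {1..2*r}" "q ` {1..2*r} = {1..2*r}" using q(1) by (auto simp: bij_betw_def)
  have "ismatch {1..2*r} (act q B1)" using ismatch_act[OF _ iq(1), of B1] m1 iq(2) unfolding mm_def by simp
  moreover have "mdistG {1..2*r} (Imatch r) (act q B1) = dbl H"
    using mm.mdist_act[OF m1 iq(1)] iq(2) q(2) md1 by simp
  ultimately show ?thesis unfolding H_def by blast
qed

definition Bc :: "nat multiset \<Rightarrow> nat \<Rightarrow> nat set set" where
  "Bc tau r = (SOME A. A \<in> pmatch r \<and> mdist r (Imatch r) A = dbl (pad1 tau r))"

definition Gv :: "nat multiset \<Rightarrow> nat multiset \<Rightarrow> nat \<Rightarrow> nat" where
  "Gv mu tau r = cnt mu True {1..2*r} (Imatch r) (Bc tau r)"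

lemma Bc_prop: assumes tau: "\<forall>x\<in>#tau. 2 \<le> x" and r: "sum_mset tau \<le> r"
  shows "ismatch {1..2*r} (Bc tau r)" "mdistG {1..2*r} (Imatch r) (Bc tau r) = dbl (pad1 tau r)"
proof -
  have "\<exists>A. A \<in> pmatch r \<and> mdist r (Imatch r) A = dbl (pad1 tau r)"
    using exists_B[OF tau r] unfolding pmatch_ismatch mdist_eq .
  then have "Bc tau r \<in> pmatch r \<and> mdist r (Imatch r) (Bc tau r) = dbl (pad1 tau r)"
    unfolding Bc_def by (rule someI_ex)
  then show "ismatch {1..2*r} (Bc tau r)" "mdistG {1..2*r} (Imatch r) (Bc tau r) = dbl (pad1 tau r)"
    unfolding pmatch_ismatch mdist_eq by auto
qed

lemma Bc_mm: assumes tau: "\<forall>x\<in>#tau. 2 \<le> x" and r: "sum_mset tau \<le> r"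
  shows "mm {1..2*r} (Imatch r) (Bc tau r)"
  unfolding mm_def using Bc_prop[OF tau r] ismatch_I by simp

lemma cnt_iso: assumes m1: "mm S A B" and m2: "mm S' A' B'" and md: "mdistG S A B = mdistG S' A' B'"
  shows "cnt mu b S A B = cnt mu b S' A' B'"
proof -
  interpret mm2 S A B S' A' B' unfolding mm2_def using m1 m2 by simp
  obtain q where q: "bij_betw q S S'" "act q A = A'" "act q B = B'" using iso_exists[OF md] by blast
  have "cnt mu b S' (act q A) (act q B) = cnt mu b S A B"
    by (rule cnt_transport[OF q(1) c1.fin Pow_match[OF c1.mA] Pow_match[OF c1.mB]])
  then show ?thesis using q by simp
qed

lemma G_any: assumes m: "mm S A B" and md: "mdistG S A B = dbl (pad1 tau r)"
  and tau: "\<forall>x\<in>#tau. 2 \<le> x" and r: "sum_mset tau \<le> r"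
  shows "cnt mu True S A B = Gv mu tau r"
  unfolding Gv_def using cnt_iso[OF m Bc_mm[OF tau r]] md Bc_prop(2)[OF tau r] by simp

lemma dbl_add: "dbl (M + N) = dbl M + dbl N" unfolding dbl_def by simp
lemma dbl_rep: "dbl (replicate_mset k 1) = replicate_mset k 2" unfolding dbl_def by (induction k) auto
lemma dbl_rep': "dbl (replicate_mset k (Suc 0)) = replicate_mset k 2" unfolding dbl_def by (induction k) auto

lemma dbl_pad: "sum_mset tau \<le> m \<Longrightarrow> dbl (pad1 tau m) = dbl tau + replicate_mset (m - sum_mset tau) 2"
  unfolding pad1_def by (simp add: dbl_add dbl_rep dbl_rep')

lemma count_dbl_tau: assumes "\<forall>x\<in>#tau. 2 \<le> x" shows "count (dbl tau) 2 = 0"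
proof -
  have "2 \<notin># dbl tau" unfolding dbl_def using assms by auto
  then show ?thesis by (simp add: not_in_iff)
qed

theorem main_identity:
  assumes m: "mm S A B" and cS: "card S = 2 * m" and md: "mdistG S A B = dbl (pad1 tau m)"
    and tau: "\<forall>x\<in>#tau. 2 \<le> x" and j: "sum_mset tau = j" and jm: "j \<le> m"
  shows "cnt mu False S A B = (\<Sum>r = j..m. ((m - j) choose (r - j)) * Gv mu tau r)"
proof -
  interpret mm S A B by (rule m)
  have cA: "card A = m" using card_A[OF mA fin] cS by simp
  have fA: "finite A" using finA[OF mA fin] .
  have cAB: "card (A \<inter> B) = m - j"
  proof -
    have "card (A \<inter> B) = count (mdistG S A B) 2" using count2 by simp
    also have "\<dots> = count (dbl tau + replicate_mset (m - j) 2) 2" using md dbl_pad[of tau m] j jm by simp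
    also have "\<dots> = m - j" using count_dbl_tau[OF tau] by simp
    finally show ?thesis .
  qed
  have cAmB: "card (A - B) = j"
  proof -
    have "card A = card (A \<inter> B) + card (A - B)"
      using card_Un_disjoint[of "A \<inter> B" "A - B"] fA by (metis Int_Diff_Un Int_Diff_disjoint finite_Diff finite_Int)
    then show ?thesis using cA cAB jm by simp
  qed
  define Ws where "Ws = {W. W \<subseteq> A \<and> A - W \<subseteq> B}"
  have fWs: "finite Ws" unfolding Ws_def using fA by simp
  define ft where "ft U p = filter_mset (\<lambda>l. 2 \<le> l) (cycle_type U p)" for U p
  define X where "X = {p. p permutes S \<and> ft S p = mu \<and> act p A = B}"
  define wf where "wf p = {e \<in> A. \<exists>x\<in>e. p x \<noteq> x}" for p :: "nat \<Rightarrow> nat"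
  define Y where "Y W = {p. p permutes \<Union>W \<and> ft (\<Union>W) p = mu \<and> act p W = B - (A - W)
       \<and> (True \<longrightarrow> (\<forall>e\<in>W. \<exists>x\<in>e. p x \<noteq> x))}" for W
  have cntX: "cnt mu False S A B = card X" unfolding cnt_def X_def ft_def by simp
  have finX: "finite X" unfolding X_def using finite_permutations[OF fin] by (rule rev_finite_subset) blast
  have wfWs: "wf p \<in> Ws" if p: "p \<in> X" for p
  proof -
    have "A - wf p \<subseteq> B"
    proof
      fix e assume e: "e \<in> A - wf p"
      then have fixe: "\<forall>x\<in>e. p x = x" unfolding wf_def by blast
      have "p ` e = e" using fixe by auto
      moreover have "p ` e \<in> act p A" unfolding act_def using e by blast
      ultimately show "e \<in> B" using p unfolding X_def by simp
    qed
    then show ?thesis unfolding Ws_def wf_def by blast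
  qed
  have fib: "{p \<in> X. wf p = W} = Y W" if W: "W \<in> Ws" for W
  proof -
    have WA: "W \<subseteq> A" and AW: "A - W \<subseteq> B" using W unfolding Ws_def by auto
    note ss = sub_split[OF m WA AW]
    have US: "\<Union>W \<subseteq> S" using ss(5) by blast
    have dis: "e \<inter> \<Union>W = {}" if "e \<in> A - W" for e using ss(4) that by blast
    show ?thesis
    proof (intro set_eqI iffI)
      fix p assume "p \<in> {p \<in> X. wf p = W}"
      then have pS: "p permutes S" and ft: "ft S p = mu" and ap: "act p A = B" and wp: "wf p = W"
        unfolding X_def by auto
      have fo: "p x = x" if "x \<notin> \<Union>W" for x
      proof (cases "x \<in> S")
        case False then show ?thesis using pS unfolding permutes_def by blast
      next
        case True
        then obtain e where e: "e \<in> A" "x \<in> e" using ismatch_cov[OF mA] by blast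
        then have "e \<notin> W" using that by blast
        then have "e \<notin> wf p" using wp by simp
        then show ?thesis using e unfolding wf_def by blast
      qed
      have pU: "p permutes \<Union>W" unfolding permutes_def using fo pS unfolding permutes_def by blast
      have ftU: "ft (\<Union>W) p = mu" using ft ct_subset_filter[OF pU US fin] unfolding ft_def by simp
      have actW: "act p W = B - (A - W)"
      proof
        show "act p W \<subseteq> B - (A - W)"
        proof
          fix b assume "b \<in> act p W"
          then obtain e where e: "e \<in> W" "b = p ` e" unfolding act_def by blast
          have "b \<in> B" using ap e WA unfolding act_def by blast
          moreover have "b \<notin> A - W"
          proof
            assume bAW: "b \<in> A - W"
            obtain x where x: "x \<in> e" using ismatch_form[OF mA] e(1) WA by blast
            have "p x \<in> \<Union>W" using permutes_in_image[OF pU] x e(1) by blast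
            moreover have "p x \<in> b" using e(2) x by blast
            ultimately show False using dis[OF bAW] by blast
          qed
          ultimately show "b \<in> B - (A - W)" by blast
        qed
      next
        show "B - (A - W) \<subseteq> act p W"
        proof
          fix b assume b: "b \<in> B - (A - W)"
          then obtain e where e: "e \<in> A" "b = p ` e" using ap unfolding act_def by blast
          have "e \<in> W"
          proof (rule ccontr)
            assume "e \<notin> W"
            then have "e \<in> A - W" using e by blast
            then have "\<forall>x\<in>e. p x = x" using fo dis by blast
            then have "p ` e = e" by auto
            then show False using b e \<open>e \<in> A - W\<close> by simp
          qed
          then show "b \<in> act p W" using e unfolding act_def by blast
        qed
      qed
      have tW: "\<forall>e\<in>W. \<exists>x\<in>e. p x \<noteq> x" using wp unfolding wf_def by blast
      show "p \<in> Y W" unfolding Y_def using pU ftU actW tW by blast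
    next
      fix p assume "p \<in> Y W"
      then have pU: "p permutes \<Union>W" and ftU: "ft (\<Union>W) p = mu" and actW: "act p W = B - (A - W)"
        and tW: "\<forall>e\<in>W. \<exists>x\<in>e. p x \<noteq> x" unfolding Y_def by auto
      have pS: "p permutes S" using permutes_subset[OF pU US] .
      have ft: "ft S p = mu" using ftU ct_subset_filter[OF pU US fin] unfolding ft_def by simp
      have fixAW: "\<forall>x\<in>e. p x = x" if "e \<in> A - W" for e
        using dis[OF that] pU unfolding permutes_def by blast
      have "act p (A - W) = A - W"
      proof -
        have "p ` e = e" if "e \<in> A - W" for e using fixAW[OF that] by auto
        then show ?thesis unfolding act_def by (metis (no_types, lifting) image_cong image_ident)
      qed
      moreover have "A = W \<union> (A - W)" using WA by blast
      ultimately have "act p A = (B - (A - W)) \<union> (A - W)" using actW unfolding act_def by (metis image_Un)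
      also have "\<dots> = B" using AW by blast
      finally have ap: "act p A = B" .
      have wp: "wf p = W" unfolding wf_def using tW fixAW WA by blast
      show "p \<in> {p \<in> X. wf p = W}" unfolding X_def using pS ft ap wp by blast
    qed
  qed
  have cardX: "card X = (\<Sum>W\<in>Ws. card {p \<in> X. wf p = W})"
  proof -
    have "X = (\<Union>W\<in>Ws. {p \<in> X. wf p = W})" using wfWs by blast
    then have "card X = card (\<Union>W\<in>Ws. {p \<in> X. wf p = W})" by simp
    also have "\<dots> = (\<Sum>W\<in>Ws. card {p \<in> X. wf p = W})"
      by (rule card_UN_disjoint) (use fWs finX in auto)
    finally show ?thesis .
  qed
  have Ws_char: "W \<in> Ws \<longleftrightarrow> A - B \<subseteq> W \<and> W \<subseteq> A" for W unfolding Ws_def by blast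
  have cardW: "j \<le> card W \<and> card W \<le> m" if W: "W \<in> Ws" for W
  proof -
    have "A - B \<subseteq> W" "W \<subseteq> A" using W Ws_char by auto
    then show ?thesis using card_mono[OF _ \<open>A - B \<subseteq> W\<close>] card_mono[OF fA \<open>W \<subseteq> A\<close>] cAmB cA fA
      by (meson finite_subset)
  qed
  have YG: "card (Y W) = Gv mu tau (card W)" if W: "W \<in> Ws" for W
  proof -
    have WA: "W \<subseteq> A" and AW: "A - W \<subseteq> B" using W unfolding Ws_def by auto
    note ms = mdist_split[OF m WA AW]
    note ss = sub_split[OF m WA AW]
    have fAW: "finite (\<Union>(A - W))" using ss(5) fin finite_subset by blast
    have "mdistG (\<Union>(A - W)) (A - W) (A - W) = replicate_mset (card (A - W)) 2"
      by (rule mdist_same[OF ss(3) fAW])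
    moreover have "card (A - W) = m - card W" using card_Diff_subset[OF finite_subset[OF WA fA] WA] cA by simp
    ultimately have e1: "dbl tau + replicate_mset (m - j) 2 = mdistG (\<Union>W) W (B - (A - W)) + replicate_mset (m - card W) 2"
      using ms(1) md dbl_pad[of tau m] j jm by simp
    have cw: "j \<le> card W" "card W \<le> m" using cardW[OF W] by auto
    have "replicate_mset (m - j) (2::nat) = replicate_mset (card W - j) 2 + replicate_mset (m - card W) 2"
      using cw by (intro multiset_eqI) simp
    then have "mdistG (\<Union>W) W (B - (A - W)) = dbl tau + replicate_mset (card W - j) 2"
      using e1 by (metis add.assoc add_right_cancel)
    also have "\<dots> = dbl (pad1 tau (card W))" using dbl_pad[of tau "card W"] j cw by simp
    finally have mdW: "mdistG (\<Union>W) W (B - (A - W)) = dbl (pad1 tau (card W))" .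
    have "card (Y W) = cnt mu True (\<Union>W) W (B - (A - W))" unfolding Y_def cnt_def ft_def by simp
    also have "\<dots> = Gv mu tau (card W)" using G_any[OF ms(2) mdW tau] j cw by simp
    finally show ?thesis .
  qed
  have "card X = (\<Sum>W\<in>Ws. Gv mu tau (card W))"
    using cardX fib YG by simp
  also have "\<dots> = (\<Sum>r = j..m. \<Sum>W\<in>{W \<in> Ws. card W = r}. Gv mu tau (card W))"
    by (rule sum.group[symmetric]) (use fWs cardW in auto)
  also have "\<dots> = (\<Sum>r = j..m. card {W \<in> Ws. card W = r} * Gv mu tau r)"
    by (intro sum.cong) auto
  also have "\<dots> = (\<Sum>r = j..m. ((m - j) choose (r - j)) * Gv mu tau r)"
  proof (intro sum.cong refl)
    fix r assume r: "r \<in> {j..m}"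
    have fAB: "finite (A \<inter> B)" using fA by simp
    define V where "V = {V. V \<subseteq> A \<inter> B \<and> card V = r - j}"
    have "{W \<in> Ws. card W = r} = (\<lambda>V. V \<union> (A - B)) ` V"
    proof (intro set_eqI iffI)
      fix W assume "W \<in> {W \<in> Ws. card W = r}"
      then have W: "A - B \<subseteq> W" "W \<subseteq> A" "card W = r" using Ws_char by auto
      have "W = (W \<inter> B) \<union> (A - B)" using W by blast
      moreover have "card W = card (W \<inter> B) + card (A - B)"
        using card_Un_disjoint[of "W \<inter> B" "A - B"] W fA \<open>W = (W \<inter> B) \<union> (A - B)\<close>
        by (metis Diff_disjoint Int_Diff inf.absorb_iff2 finite_Diff finite_subset inf_le1 inf_assoc inf_commute)
      then have "card (W \<inter> B) = r - j" using W cAmB by simp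
      moreover have "W \<inter> B \<subseteq> A \<inter> B" using W by blast
      ultimately show "W \<in> (\<lambda>V. V \<union> (A - B)) ` V" unfolding V_def by blast
    next
      fix W assume "W \<in> (\<lambda>V. V \<union> (A - B)) ` V"
      then obtain U where U: "U \<subseteq> A \<inter> B" "card U = r - j" "W = U \<union> (A - B)" unfolding V_def by blast
      have "card W = card U + card (A - B)"
        using card_Un_disjoint[of U "A - B"] U fA finite_subset[OF U(1) fAB] by auto
      then have "card W = r" using U cAmB r by simp
      moreover have "W \<in> Ws" using U Ws_char by blast
      ultimately show "W \<in> {W \<in> Ws. card W = r}" by blast
    qed
    moreover have "inj_on (\<lambda>V. V \<union> (A - B)) V"
      unfolding V_def inj_on_def by blast
    ultimately have "card {W \<in> Ws. card W = r} = card V" by (simp add: card_image)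
    also have "\<dots> = card (A \<inter> B) choose (r - j)" unfolding V_def by (rule n_subsets[OF fAB])
    finally show "card {W \<in> Ws. card W = r} * Gv mu tau r = ((m - j) choose (r - j)) * Gv mu tau r"
      using cAB by simp
  qed
  finally show ?thesis using cntX by simp
qed

lemma sum_filter_le: "sum_mset (filter_mset P M) \<le> sum_mset (M::nat multiset)"
  by (induction M) auto

lemma cnt_zero_big: assumes fS: "finite S" and k: "card S < sum_mset mu" shows "cnt mu b S A B = 0"
proof -
  have "filter_mset (\<lambda>l. 2 \<le> l) (cycle_type S p) \<noteq> mu" if p: "p permutes S" for p
  proof
    assume h: "filter_mset (\<lambda>l. 2 \<le> l) (cycle_type S p) = mu"
    have "sum_mset mu \<le> sum_mset (cycle_type S p)" using sum_filter_le h by metis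
    also have "\<dots> = card S" using sum_ct[OF p fS] .
    finally show False using k by simp
  qed
  then show ?thesis unfolding cnt_def by (auto simp: card_eq_0_iff)
qed

lemma touch_inj:
  assumes m: "ismatch S A" and t: "\<forall>e\<in>A. \<exists>x\<in>e. p x \<noteq> x"
  obtains f where "inj_on f A" "\<forall>e\<in>A. f e \<in> e \<and> p (f e) \<noteq> f e" "f ` A \<subseteq> {x\<in>S. p x \<noteq> x}"
proof -
  define f where "f e = (SOME x. x \<in> e \<and> p x \<noteq> x)" for e
  have f: "f e \<in> e \<and> p (f e) \<noteq> f e" if e: "e \<in> A" for e
  proof -
    have "\<exists>x. x \<in> e \<and> p x \<noteq> x" using t e by blast
    then show ?thesis unfolding f_def by (rule someI_ex)
  qed
  have inj: "inj_on f A"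
  proof (rule inj_onI)
    fix e1 e2 assume e: "e1 \<in> A" "e2 \<in> A" "f e1 = f e2"
    have "f e1 \<in> e1" "f e1 \<in> e2" using f[OF e(1)] f[OF e(2)] e(3) by auto
    then show "e1 = e2" using edge_eq[OF m e(1) e(2)] by blast
  qed
  have "f ` A \<subseteq> {x\<in>S. p x \<noteq> x}" using f edge_sub[OF m] by blast
  then show ?thesis using that inj f by blast
qed

lemma touch_card: assumes m: "ismatch S A" and fS: "finite S" and t: "\<forall>e\<in>A. \<exists>x\<in>e. p x \<noteq> x"
  shows "card A \<le> card {x\<in>S. p x \<noteq> x}"
proof -
  obtain f where f: "inj_on f A" "f ` A \<subseteq> {x\<in>S. p x \<noteq> x}" using touch_inj[OF m t] by metis
  have "card A = card (f ` A)" using card_image[OF f(1)] by simp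
  also have "\<dots> \<le> card {x\<in>S. p x \<noteq> x}" using card_mono[OF _ f(2)] fS by simp
  finally show ?thesis .
qed

lemma touch_exact: assumes m: "ismatch S A" and fS: "finite S" and t: "\<forall>e\<in>A. \<exists>x\<in>e. p x \<noteq> x"
  and c: "card {x\<in>S. p x \<noteq> x} \<le> card A"
  and e: "e \<in> A" "x \<in> e" "y \<in> e" "p x \<noteq> x" "p y \<noteq> y"
  shows "x = y"
proof -
  obtain f where f: "inj_on f A" "\<forall>e\<in>A. f e \<in> e \<and> p (f e) \<noteq> f e" "f ` A \<subseteq> {x\<in>S. p x \<noteq> x}"
    using touch_inj[OF m t] by metis
  have fin: "finite {x\<in>S. p x \<noteq> x}" using fS by simp
  have "card (f ` A) = card A" using card_image[OF f(1)] .
  then have eq: "f ` A = {x\<in>S. p x \<noteq> x}" using card_subset_eq[OF fin f(3)] c card_mono[OF fin f(3)] by simp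
  have xS: "x \<in> S" "y \<in> S" using edge_sub[OF m e(1)] e(2,3) by auto
  obtain e1 where e1: "e1 \<in> A" "x = f e1" using eq xS(1) e(4) by (metis (mono_tags, lifting) imageE mem_Collect_eq)
  obtain e2 where e2: "e2 \<in> A" "y = f e2" using eq xS(2) e(5) by (metis (mono_tags, lifting) imageE mem_Collect_eq)
  have "e1 = e" using edge_eq[OF m e1(1) e(1)] f(2) e1 e(2) by blast
  moreover have "e2 = e" using edge_eq[OF m e2(1) e(1)] f(2) e2 e(3) by blast
  ultimately show ?thesis using e1 e2 by simp
qed

lemma cnt_zero_touch: assumes m: "ismatch S A" and fS: "finite S" and k: "sum_mset mu < card A"
  shows "cnt mu True S A B = 0"
proof -
  have "\<not> (filter_mset (\<lambda>l. 2 \<le> l) (cycle_type S p) = mu \<and> (\<forall>e\<in>A. \<exists>x\<in>e. p x \<noteq> x))" if p: "p permutes S" for p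
  proof
    assume h: "filter_mset (\<lambda>l. 2 \<le> l) (cycle_type S p) = mu \<and> (\<forall>e\<in>A. \<exists>x\<in>e. p x \<noteq> x)"
    have "card A \<le> card {x\<in>S. p x \<noteq> x}" using touch_card[OF m fS] h by blast
    also have "\<dots> = sum_mset mu" using sum_filter_ct[OF p fS] h by simp
    finally show False using k by simp
  qed
  then show ?thesis unfolding cnt_def by (auto simp: card_eq_0_iff)
qed

lemma cnt_zero_common: assumes m: "mm S A B" and cm: "card A = sum_mset mu" and ne: "A \<inter> B \<noteq> {}"
  shows "cnt mu True S A B = 0"
proof -
  interpret mm S A B by (rule m)
  have "\<not> (act p A = B \<and> filter_mset (\<lambda>l. 2 \<le> l) (cycle_type S p) = mu \<and> (\<forall>e\<in>A. \<exists>x\<in>e. p x \<noteq> x))"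
    if p: "p permutes S" for p
  proof
    assume h: "act p A = B \<and> filter_mset (\<lambda>l. 2 \<le> l) (cycle_type S p) = mu \<and> (\<forall>e\<in>A. \<exists>x\<in>e. p x \<noteq> x)"
    have t: "\<forall>e\<in>A. \<exists>x\<in>e. p x \<noteq> x" using h by blast
    have c: "card {x\<in>S. p x \<noteq> x} \<le> card A" using sum_filter_ct[OF p fin] h cm by simp
    obtain e where e: "e \<in> A" "e \<in> B" using ne by blast
    obtain z where z: "z \<in> e" "p z \<noteq> z" using t e(1) by blast
    have zS: "z \<in> S" using edge_sub[OF mA e(1)] z(1) by blast
    define w where "w = pt A z"
    have ew: "e = {z, w}" unfolding w_def using edge_form[OF mA e(1) z(1)] .
    have wz: "w \<noteq> z" unfolding w_def using pt_neq[OF mA zS] .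
    have pw: "p w = w"
    proof (rule ccontr)
      assume "p w \<noteq> w"
      then have "w = z" using touch_exact[OF mA fin t c e(1), of w z] ew z(2) by simp
      then show False using wz by simp
    qed
    have "p ` e \<in> B" using h e(1) unfolding act_def by blast
    moreover have "w \<in> p ` e" using pw ew by (metis imageI insertCI)
    ultimately have "p ` e = e" using edge_eq[OF mB _ e(2), of "p ` e" w] ew by simp
    then have "p z \<in> e" using z(1) by blast
    moreover have "p z \<noteq> w" using pw wz permutes_inj[OF p] unfolding inj_def by metis
    ultimately show False using ew z(2) by simp
  qed
  then show ?thesis unfolding cnt_def by (auto simp: card_eq_0_iff)
qed

context mm begin

definition col :: "nat set \<Rightarrow> bool" where
  "col M \<longleftrightarrow> M \<subseteq> S \<and> (\<forall>x\<in>S. x \<in> M \<longleftrightarrow> pt A x \<notin> M) \<and> (\<forall>x\<in>S. x \<in> M \<longleftrightarrow> pt B x \<notin> M)"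

lemma col_stp: "col M \<Longrightarrow> y \<in> S \<Longrightarrow> (stp i y \<in> M \<longleftrightarrow> y \<notin> M)"
  unfolding col_def stp_def by auto

lemma col_wk: assumes c: "col M" and x: "x \<in> S" shows "wk A B x i \<in> M \<longleftrightarrow> (x \<in> M \<longleftrightarrow> even i)"
proof (induction i)
  case 0 then show ?case by simp
next
  case (Suc i)
  have "wk A B x (Suc i) \<in> M \<longleftrightarrow> wk A B x i \<notin> M"
    using col_stp[OF c wk_in[OF x]] by (simp add: wk_Suc)
  then show ?case using Suc by simp
qed

lemma wk_par: assumes x: "x \<in> S" and e: "wk A B x i = wk A B x i'" shows "even i = even i'"
proof (rule ccontr)
  assume "even i \<noteq> even i'"
  then have "odd (i + i')" by simp
  then show False using noodd[OF x] e by blast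
qed

lemma card_col: "card {M. col M} = 2 ^ card (compG S A B ` S)"
proof -
  define X where "X = compG S A B ` S"
  define rep :: "nat set \<Rightarrow> nat" where "rep = (\<lambda>C. SOME x. x \<in> C)"
  have rep: "rep C \<in> S \<and> compG S A B (rep C) = C" if CC: "C \<in> X" for C
  proof -
    obtain x where x: "x \<in> S" "C = compG S A B x" using CC unfolding X_def by blast
    then have "x \<in> C" using self_comp by simp
    then have r: "rep C \<in> C" unfolding rep_def by (rule someI)
    have "compG S A B (rep C) = C" using comp_eq[of "rep C" x] x r by simp
    then show ?thesis using r x comp_sub by blast
  qed
  define R where "R y = rep (compG S A B y)" for y
  have CX: "compG S A B y \<in> X" if "y \<in> S" for y using that unfolding X_def by blast
  have Ry: "R y \<in> S" "compG S A B (R y) = compG S A B y" if y: "y \<in> S" for y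
    using rep[OF CX[OF y]] unfolding R_def by auto
  have Rwk: "\<exists>i. y = wk A B (R y) i" if y: "y \<in> S" for y
  proof -
    have "y \<in> compG S A B (R y)" using Ry(2)[OF y] self_comp[OF y] by simp
    then show ?thesis using comp_wk[OF Ry(1)[OF y]] by blast
  qed
  have sameR: "R z = R y" if "z \<in> compG S A B y" for z y
    unfolding R_def using comp_eq[OF that] by simp
  define phi where "phi M = restrict (\<lambda>C. rep C \<in> M) X" for M
  have inj: "inj_on phi {M. col M}"
  proof (rule inj_onI)
    fix M1 M2 assume M1: "M1 \<in> {M. col M}" and M2: "M2 \<in> {M. col M}" and e: "phi M1 = phi M2"
    have "y \<in> M1 \<longleftrightarrow> y \<in> M2" if y: "y \<in> S" for y
    proof -
      obtain i where i: "y = wk A B (R y) i" using Rwk[OF y] by blast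
      have "R y \<in> M1 \<longleftrightarrow> R y \<in> M2"
        using fun_cong[OF e, of "compG S A B y"] CX[OF y] unfolding phi_def R_def by simp
      then show ?thesis using col_wk[of M1 "R y" i] col_wk[of M2 "R y" i] M1 M2 Ry(1)[OF y] i[symmetric] by simp
    qed
    moreover have "M1 \<subseteq> S" "M2 \<subseteq> S" using M1 M2 unfolding col_def by auto
    ultimately show "M1 = M2" by blast
  qed
  have surj: "phi ` {M. col M} = X \<rightarrow>\<^sub>E (UNIV :: bool set)"
  proof
    show "phi ` {M. col M} \<subseteq> X \<rightarrow>\<^sub>E UNIV" unfolding phi_def by auto
    show "X \<rightarrow>\<^sub>E UNIV \<subseteq> phi ` {M. col M}"
    proof
      fix g assume g: "g \<in> X \<rightarrow>\<^sub>E (UNIV :: bool set)"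
      define M where "M = {y\<in>S. \<exists>i. y = wk A B (R y) i \<and> (even i \<longleftrightarrow> g (compG S A B y))}"
      have mem: "y \<in> M \<longleftrightarrow> (even i \<longleftrightarrow> g (compG S A B y))" if y: "y \<in> S" "y = wk A B (R y) i" for y i
      proof
        assume "y \<in> M"
        then obtain i' where i': "y = wk A B (R y) i'" "even i' \<longleftrightarrow> g (compG S A B y)" unfolding M_def by blast
        have "even i = even i'" using wk_par[OF Ry(1)[OF y(1)]] y(2) i'(1) by metis
        then show "even i \<longleftrightarrow> g (compG S A B y)" using i'(2) by simp
      next
        assume "even i \<longleftrightarrow> g (compG S A B y)"
        then show "y \<in> M" unfolding M_def using y by blast
      qed
      have colM: "col M"
        unfolding col_def
      proof (intro conjI ballI)
        show "M \<subseteq> S" unfolding M_def by blast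
      next
        fix y assume y: "y \<in> S"
        obtain i where i: "y = wk A B (R y) i" using Rwk[OF y] by blast
        have yC: "y \<in> compG S A B y" using self_comp[OF y] .
        define z where "z = pt A y"
        have zC: "z \<in> compG S A B y" unfolding z_def by (rule comp_closed_A[OF yC])
        have zS: "z \<in> S" using zC comp_sub by blast
        have Rz: "R z = R y" using sameR[OF zC] .
        have Cz: "compG S A B z = compG S A B y" using comp_eq[OF zC] .
        obtain i' where i': "z = wk A B (R y) i'" "even i' \<noteq> even i"
        proof (cases "even i")
          case True
          then have "z = wk A B (R y) (Suc i)" unfolding z_def using al_wk_even[OF Ry(1)[OF y] True] i[symmetric] by simp
          then show ?thesis using that True by simp
        next
          case False
          then have "z = wk A B (R y) (i - 1)" unfolding z_def using al_wk_odd[OF Ry(1)[OF y] False] i[symmetric] by simp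
          moreover have "even (i - 1)" using False by simp
          ultimately show ?thesis using that False by simp
        qed
        have "z \<in> M \<longleftrightarrow> (even i' \<longleftrightarrow> g (compG S A B y))" using mem[OF zS] i'(1) Rz Cz by simp
        moreover have "y \<in> M \<longleftrightarrow> (even i \<longleftrightarrow> g (compG S A B y))" using mem[OF y i] .
        ultimately show "y \<in> M \<longleftrightarrow> pt A y \<notin> M" using i'(2) unfolding z_def by blast
      next
        fix y assume y: "y \<in> S"
        obtain i where i: "y = wk A B (R y) i" using Rwk[OF y] by blast
        have yC: "y \<in> compG S A B y" using self_comp[OF y] .
        define z where "z = pt B y"
        have zC: "z \<in> compG S A B y" unfolding z_def by (rule comp_closed_B[OF yC])
        have zS: "z \<in> S" using zC comp_sub by blast
        have Rz: "R z = R y" using sameR[OF zC] .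
        have Cz: "compG S A B z = compG S A B y" using comp_eq[OF zC] .
        obtain i' where i': "z = wk A B (R y) i'" "even i' \<noteq> even i"
        proof (cases "even i")
          case False
          then have "z = wk A B (R y) (Suc i)" unfolding z_def using be_wk_odd[OF Ry(1)[OF y] False] i[symmetric] by simp
          then show ?thesis using that False by simp
        next
          case True
          then have "z = wk A B (R y) (i + per A B (R y) - 1)" unfolding z_def using be_wk_even[OF Ry(1)[OF y] True] i[symmetric] by simp
          moreover have "odd (i + per A B (R y) - 1)" using True per_even[OF Ry(1)[OF y]] per_pos[OF Ry(1)[OF y]] by presburger
          ultimately show ?thesis using that True by simp
        qed
        have "z \<in> M \<longleftrightarrow> (even i' \<longleftrightarrow> g (compG S A B y))" using mem[OF zS] i'(1) Rz Cz by simp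
        moreover have "y \<in> M \<longleftrightarrow> (even i \<longleftrightarrow> g (compG S A B y))" using mem[OF y i] .
        ultimately show "y \<in> M \<longleftrightarrow> pt B y \<notin> M" using i'(2) unfolding z_def by blast
      qed
      have "phi M = g"
      proof
        fix C show "phi M C = g C"
        proof (cases "C \<in> X")
          case True
          have rC: "rep C \<in> S" "compG S A B (rep C) = C" using rep[OF True] by auto
          have "R (rep C) = rep C" unfolding R_def using rC(2) by simp
          then have "rep C = wk A B (R (rep C)) 0" by simp
          then have "rep C \<in> M \<longleftrightarrow> (even (0::nat) \<longleftrightarrow> g (compG S A B (rep C)))" by (rule mem[OF rC(1)])
          then have "rep C \<in> M \<longleftrightarrow> g C" using rC(2) by simp
          then show ?thesis unfolding phi_def using True by simp
        next
          case False
          have "g C = undefined" using PiE_arb[OF g False] .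
          then show ?thesis unfolding phi_def restrict_def using False by simp
        qed
      qed
      then show "g \<in> phi ` {M. col M}" using colM by blast
    qed
  qed
  have "card {M. col M} = card (X \<rightarrow>\<^sub>E (UNIV :: bool set))"
    using card_image[OF inj] surj by simp
  also have "\<dots> = 2 ^ card X" using comps_fin unfolding X_def by (simp add: card_PiE)
  finally show ?thesis unfolding X_def .
qed

end

lemma match_sub_eq: assumes m1: "ismatch S A1" and m2: "ismatch S A2" and s: "A1 \<subseteq> A2" shows "A1 = A2"
proof
  show "A2 \<subseteq> A1"
  proof
    fix b assume b: "b \<in> A2"
    obtain i j where ij: "i \<noteq> j" "b = {i,j}" using ismatch_form[OF m2 b] by blast
    have "i \<in> S" using edge_sub[OF m2 b] ij by blast
    then obtain e where e: "e \<in> A1" "i \<in> e" using ismatch_cov[OF m1] by blast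
    have "e = b" using edge_eq[OF m2 _ b, of e i] e s ij by blast
    then show "b \<in> A1" using e by simp
  qed
qed (rule s)

context mm begin

definition sg :: "nat \<Rightarrow> nat" where "sg x = pt B (pt A x)"
definition pM :: "nat set \<Rightarrow> nat \<Rightarrow> nat" where "pM M x = (if x \<in> M then sg x else x)"

lemma sg_in: "x \<in> S \<Longrightarrow> sg x \<in> S" unfolding sg_def using pt_in[OF mA] pt_in[OF mB] by simp

lemma sg_inj: "inj_on sg S"
proof (rule inj_onI)
  fix x y assume x: "x \<in> S" and y: "y \<in> S" and e: "sg x = sg y"
  have "pt A x = pt A y" using e pt_pt[OF mB pt_in[OF mA x]] pt_pt[OF mB pt_in[OF mA y]] unfolding sg_def by metis
  then show "x = y" using pt_pt[OF mA x] pt_pt[OF mA y] by metis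
qed

lemma col_sg: "col M \<Longrightarrow> x \<in> M \<Longrightarrow> sg x \<in> M"
proof -
  assume c: "col M" and x: "x \<in> M"
  have xS: "x \<in> S" using c x unfolding col_def by blast
  have a: "pt A x \<notin> M" using c x xS unfolding col_def by blast
  have "pt A x \<in> S" using pt_in[OF mA xS] .
  then have "pt B (pt A x) \<in> M" using c a unfolding col_def by blast
  then show ?thesis unfolding sg_def .
qed

lemma card_col_M: assumes c: "col M" shows "card M = card A"
proof -
  have MS: "M \<subseteq> S" using c unfolding col_def by blast
  have img: "pt A ` M = S - M"
  proof
    show "pt A ` M \<subseteq> S - M" using c MS pt_in[OF mA] unfolding col_def by blast
    show "S - M \<subseteq> pt A ` M"
    proof
      fix y assume y: "y \<in> S - M"
      then have "pt A y \<in> M" using c unfolding col_def by blast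
      moreover have "pt A (pt A y) = y" using pt_pt[OF mA] y by blast
      ultimately show "y \<in> pt A ` M" by (metis imageI)
    qed
  qed
  have inj: "inj_on (pt A) M"
    by (rule inj_onI) (metis MS pt_pt[OF mA] subsetD)
  have "card (S - M) = card M" using card_image[OF inj] img by simp
  moreover have "card S = card M + card (S - M)" using MS fin by (metis card_Diff_subset add_diff_inverse_nat card_mono finite_subset le_add_diff_inverse not_less)
  ultimately have "card S = 2 * card M" by simp
  then show ?thesis using card_A[OF mA fin] by simp
qed

context assumes nc: "\<forall>x\<in>S. pt A x \<noteq> pt B x"
begin

lemma sg_neq: "x \<in> S \<Longrightarrow> sg x \<noteq> x"
proof
  assume x: "x \<in> S" and e: "sg x = x"
  have "pt B x = pt B (pt B (pt A x))" using e unfolding sg_def by simp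
  also have "\<dots> = pt A x" using pt_pt[OF mB pt_in[OF mA x]] .
  finally show False using nc x by metis
qed

lemma pM_perm: assumes c: "col M" shows "pM M permutes S"
proof -
  have MS: "M \<subseteq> S" using c unfolding col_def by blast
  have sgM: "sg ` M \<subseteq> M" using col_sg[OF c] by blast
  have sgMM: "sg ` M = M"
    by (rule endo_inj_surj[OF finite_subset[OF MS fin] sgM inj_on_subset[OF sg_inj MS]])
  have inj: "inj_on (pM M) S"
  proof (rule inj_onI)
    fix x y assume x: "x \<in> S" and y: "y \<in> S" and e: "pM M x = pM M y"
    show "x = y"
    proof (cases "x \<in> M"; cases "y \<in> M")
      assume "x \<in> M" "y \<in> M"
      then show "x = y" using e sg_inj x y unfolding pM_def inj_on_def by auto
    next
      assume a: "x \<in> M" "y \<notin> M"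
      then have "sg x = y" using e unfolding pM_def by simp
      then show "x = y" using col_sg[OF c a(1)] a(2) by simp
    next
      assume a: "x \<notin> M" "y \<in> M"
      then have "x = sg y" using e unfolding pM_def by simp
      then show "x = y" using col_sg[OF c a(2)] a(1) by simp
    next
      assume "x \<notin> M" "y \<notin> M"
      then show "x = y" using e unfolding pM_def by simp
    qed
  qed
  have sub: "pM M ` S \<subseteq> S" using sg_in MS unfolding pM_def by auto
  have "pM M ` S = S" by (rule endo_inj_surj[OF fin sub inj])
  then have "bij_betw (pM M) S S" using inj unfolding bij_betw_def by simp
  moreover have "pM M x = x" if "x \<notin> S" for x using that MS unfolding pM_def by auto
  ultimately show ?thesis by (rule bij_imp_permutes)
qed

lemma pM_moved: assumes c: "col M" shows "{x\<in>S. pM M x \<noteq> x} = M"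
  using c sg_neq unfolding col_def pM_def by auto

lemma pM_act: assumes c: "col M" shows "act (pM M) A = B"
proof -
  have MS: "M \<subseteq> S" using c unfolding col_def by blast
  have sub: "act (pM M) A \<subseteq> B"
  proof
    fix b assume "b \<in> act (pM M) A"
    then obtain e where e: "e \<in> A" "b = pM M ` e" unfolding act_def by blast
    obtain i j where ij: "i \<noteq> j" "e = {i,j}" using ismatch_form[OF mA e(1)] by blast
    have xS: "i \<in> S" using edge_sub[OF mA e(1)] ij by blast
    have ee: "e = {i, pt A i}" using edge_form[OF mA e(1)] ij by blast
    have aS: "pt A i \<in> S" using pt_in[OF mA xS] .
    show "b \<in> B"
    proof (cases "i \<in> M")
      case True
      then have "pt A i \<notin> M" using c xS unfolding col_def by blast
      then have "b = {sg i, pt A i}" using e(2) ee True unfolding pM_def by (auto simp: insert_commute)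
      also have "\<dots> = {pt A i, pt B (pt A i)}" unfolding sg_def by (simp add: insert_commute)
      finally show ?thesis using pt_edge[OF mB aS] by simp
    next
      case False
      then have aM: "pt A i \<in> M" using c xS unfolding col_def by blast
      then have "b = {i, sg (pt A i)}" using e(2) ee False unfolding pM_def by simp
      also have "\<dots> = {i, pt B i}" unfolding sg_def using pt_pt[OF mA xS] by simp
      finally show ?thesis using pt_edge[OF mB xS] by simp
    qed
  qed
  have p: "pM M permutes S" using pM_perm[OF c] .
  have "ismatch (pM M ` S) (act (pM M) A)" using ismatch_act[OF mA permutes_inj_on[OF p]] .
  then have "ismatch S (act (pM M) A)" using permutes_image[OF p] by simp
  then show ?thesis using match_sub_eq[OF _ mB sub] by simp
qed

lemma pM_touch: assumes c: "col M" shows "\<forall>e\<in>A. \<exists>x\<in>e. pM M x \<noteq> x"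
proof
  fix e assume e: "e \<in> A"
  obtain i j where ij: "i \<noteq> j" "e = {i,j}" using ismatch_form[OF mA e] by blast
  have xS: "i \<in> S" using edge_sub[OF mA e] ij by blast
  have ee: "e = {i, pt A i}" using edge_form[OF mA e] ij by blast
  have aS: "pt A i \<in> S" using pt_in[OF mA xS] .
  have "i \<in> M \<or> pt A i \<in> M" using c xS unfolding col_def by blast
  then show "\<exists>x\<in>e. pM M x \<noteq> x" using ee sg_neq xS aS unfolding pM_def by auto
qed

definition P0 where "P0 = {p. p permutes S \<and> act p A = B \<and> (\<forall>e\<in>A. \<exists>x\<in>e. p x \<noteq> x) \<and> card {x\<in>S. p x \<noteq> x} = card A}"

lemma P0_char: assumes p: "p \<in> P0" shows "col {x\<in>S. p x \<noteq> x}" "p = pM {x\<in>S. p x \<noteq> x}"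
proof -
  define M where "M = {x\<in>S. p x \<noteq> x}"
  have pp: "p permutes S" and ap: "act p A = B" and t: "\<forall>e\<in>A. \<exists>x\<in>e. p x \<noteq> x" and cM: "card M = card A"
    using p unfolding P0_def M_def by auto
  have ex: "x = y" if "e \<in> A" "x \<in> e" "y \<in> e" "p x \<noteq> x" "p y \<noteq> y" for e x y
    using touch_exact[OF mA fin t _ that] cM unfolding M_def by simp
  have colA: "x \<in> M \<longleftrightarrow> pt A x \<notin> M" if x: "x \<in> S" for x
  proof -
    have e: "{x, pt A x} \<in> A" using pt_edge[OF mA x] .
    have ne: "pt A x \<noteq> x" using pt_neq[OF mA x] .
    have aS: "pt A x \<in> S" using pt_in[OF mA x] .
    obtain z where z: "z \<in> {x, pt A x}" "p z \<noteq> z" using t e by blast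
    show ?thesis
    proof
      assume "x \<in> M"
      then have "p x \<noteq> x" unfolding M_def by simp
      then show "pt A x \<notin> M" using ex[OF e, of x "pt A x"] ne unfolding M_def by auto
    next
      assume "pt A x \<notin> M"
      then have "p (pt A x) = pt A x" using aS unfolding M_def by simp
      then have "z = x" using z by auto
      then show "x \<in> M" using z x unfolding M_def by simp
    qed
  qed
  have psg: "p x = sg x" if xM: "x \<in> M" for x
  proof -
    have x: "x \<in> S" using xM unfolding M_def by simp
    define a where "a = pt A x"
    have aS: "a \<in> S" unfolding a_def using pt_in[OF mA x] .
    have aM: "a \<notin> M" unfolding a_def using colA[OF x] xM by simp
    have pa: "p a = a" using aM aS unfolding M_def by simp
    have "p ` {x, a} \<in> B" using ap pt_edge[OF mA x] unfolding act_def a_def by blast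
    then have b: "{p x, a} \<in> B" using pa by simp
    have ne: "p x \<noteq> a"
    proof
      assume "p x = a"
      then have "p x = p a" using pa by simp
      then have "x = a" using permutes_inj[OF pp] unfolding inj_def by blast
      then show False using pt_neq[OF mA x] unfolding a_def by simp
    qed
    have "{a, p x} \<in> B" using b by (simp add: insert_commute)
    then have "pt B a = p x" using pt_eq[OF mB aS] ne by simp
    then show ?thesis unfolding sg_def a_def by simp
  qed
  have pM_M: "p x \<in> M" if "x \<in> M" for x
  proof -
    have x: "x \<in> S" "p x \<noteq> x" using that unfolding M_def by auto
    have "p x \<in> S" using permutes_in_image[OF pp] x(1) by simp
    moreover have "p (p x) \<noteq> p x" using x(2) permutes_inj[OF pp] unfolding inj_def by metis
    ultimately show ?thesis unfolding M_def by simp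
  qed
  have colB: "x \<in> M \<longleftrightarrow> pt B x \<notin> M" if x: "x \<in> S" for x
  proof
    assume xM: "x \<in> M"
    obtain x' where x': "p x' = x" using permutes_surj[OF pp] by (metis surj_def)
    have x'M: "x' \<in> M"
    proof (rule ccontr)
      assume "x' \<notin> M"
      then have "p x' = x'" using pp unfolding M_def permutes_def by auto
      then show False using x' xM unfolding M_def by simp
    qed
    have x'S: "x' \<in> S" using x'M unfolding M_def by simp
    have "x = pt B (pt A x')" using psg[OF x'M] x' unfolding sg_def by simp
    then have "pt B x = pt A x'" using pt_pt[OF mB pt_in[OF mA x'S]] by simp
    then show "pt B x \<notin> M" using colA[OF x'S] x'M by simp
  next
    assume bM: "pt B x \<notin> M"
    show "x \<in> M"
    proof (rule ccontr)
      assume xM: "x \<notin> M"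
      then have aM: "pt A x \<in> M" using colA[OF x] by simp
      have "p (pt A x) = sg (pt A x)" using psg[OF aM] .
      also have "\<dots> = pt B x" unfolding sg_def using pt_pt[OF mA x] by simp
      finally have "pt B x \<in> M" using pM_M[OF aM] by simp
      then show False using bM by simp
    qed
  qed
  have MS: "M \<subseteq> S" unfolding M_def by blast
  have "col M" unfolding col_def using MS colA colB by blast
  then show "col {x\<in>S. p x \<noteq> x}" unfolding M_def .
  have "p x = pM M x" for x
  proof (cases "x \<in> M")
    case True then show ?thesis using psg[OF True] by (simp add: pM_def)
  next
    case xM: False
    have "p x = x"
    proof (cases "x \<in> S")
      case True then show ?thesis using xM unfolding M_def by simp
    next
      case False then show ?thesis using pp unfolding permutes_def by blast
    qed
    then show ?thesis using xM by (simp add: pM_def)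
  qed
  then have "p = pM M" by (rule ext)
  then show "p = pM {x\<in>S. p x \<noteq> x}" unfolding M_def .
qed

lemma card_P0: "card P0 = card {M. col M}"
proof -
  have img: "P0 = pM ` {M. col M}"
  proof
    show "P0 \<subseteq> pM ` {M. col M}" using P0_char by blast
    show "pM ` {M. col M} \<subseteq> P0"
    proof
      fix p assume "p \<in> pM ` {M. col M}"
      then obtain M where M: "col M" "p = pM M" by blast
      have "card {x\<in>S. p x \<noteq> x} = card A" using pM_moved[OF M(1)] card_col_M[OF M(1)] M(2) by simp
      then show "p \<in> P0" unfolding P0_def using pM_perm[OF M(1)] pM_act[OF M(1)] pM_touch[OF M(1)] M(2) by simp
    qed
  qed
  have "inj_on pM {M. col M}"
  proof (rule inj_onI)
    fix M1 M2 assume a: "M1 \<in> {M. col M}" "M2 \<in> {M. col M}" and e: "pM M1 = pM M2"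
    have "M1 = {x\<in>S. pM M1 x \<noteq> x}" using pM_moved[of M1] a(1) by simp
    also have "\<dots> = {x\<in>S. pM M2 x \<noteq> x}" using e by simp
    also have "\<dots> = M2" using pM_moved[of M2] a(2) by simp
    finally show "M1 = M2" .
  qed
  then show ?thesis using img card_image by simp
qed

end
end

context mm begin
context assumes nc: "\<forall>x\<in>S. pt A x \<noteq> pt B x"
begin

lemma per_ge4: "x \<in> S \<Longrightarrow> 4 \<le> per A B x"
proof -
  assume x: "x \<in> S"
  have "per A B x \<noteq> 2" using per2[OF x] nc x by simp
  then show ?thesis using per_even[OF x] per_ge2[OF x] by presburger
qed

context fixes M assumes c: "col M"
begin

lemma MS: "M \<subseteq> S" using c unfolding col_def by blast

lemma pM_pow: "x \<in> M \<Longrightarrow> (pM M ^^ n) x = wk A B x (2*n)"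
proof (induction n)
  case 0 then show ?case by simp
next
  case (Suc n)
  have xS: "x \<in> S" using Suc.prems MS by blast
  have wM: "wk A B x (2*n) \<in> M" using col_wk[OF c xS, of "2*n"] Suc.prems by simp
  have "(pM M ^^ Suc n) x = pM M (wk A B x (2*n))" using Suc by simp
  also have "\<dots> = pt B (pt A (wk A B x (2*n)))" using wM unfolding pM_def sg_def by simp
  also have "\<dots> = wk A B x (2 * Suc n)" by (simp add: wk.simps(2))
  finally show ?case .
qed

lemma wk_comp: "x \<in> S \<Longrightarrow> wk A B x k \<in> compG S A B x"
  using range_wk comp_wk by blast

lemma orb_M: assumes xM: "x \<in> M" shows "orbit (pM M) x = M \<inter> compG S A B x"
proof -
  have xS: "x \<in> S" using xM MS by blast
  have p: "pM M permutes S" using pM_perm[OF nc c] .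
  have "orbit (pM M) x = {(pM M ^^ n) x | n. True}" using orb_eq[OF p fin] by simp
  also have "\<dots> = {wk A B x (2*n) | n. True}" using pM_pow[OF xM] by simp
  also have "\<dots> = M \<inter> compG S A B x"
  proof
    show "{wk A B x (2*n) | n. True} \<subseteq> M \<inter> compG S A B x"
      using col_wk[OF c xS] xM wk_comp[OF xS] by auto
    show "M \<inter> compG S A B x \<subseteq> {wk A B x (2*n) | n. True}"
    proof
      fix y assume y: "y \<in> M \<inter> compG S A B x"
      then obtain i where i: "y = wk A B x i" using comp_wk[OF xS] by blast
      have "even i" using col_wk[OF c xS, of i] i y xM by simp
      then obtain n where "i = 2*n" by blast
      then show "y \<in> {wk A B x (2*n) | n. True}" using i by blast
    qed
  qed
  finally show ?thesis .
qed

lemma orb_nM: assumes x: "x \<notin> M" shows "orbit (pM M) x = {x}"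
  using orbit_eq_singleton_iff[of "pM M" x] x unfolding pM_def by simp

lemma card_MC: assumes x: "x \<in> S" shows "2 * card (M \<inter> compG S A B x) = card (compG S A B x)"
proof -
  define C where "C = compG S A B x"
  have CS: "C \<subseteq> S" unfolding C_def by (rule comp_sub)
  have fC: "finite C" using CS fin finite_subset by blast
  have img: "pt A ` (M \<inter> C) = C - M"
  proof
    show "pt A ` (M \<inter> C) \<subseteq> C - M"
      using c CS comp_closed_A unfolding col_def C_def by blast
    show "C - M \<subseteq> pt A ` (M \<inter> C)"
    proof
      fix y assume y: "y \<in> C - M"
      have yS: "y \<in> S" using y CS by blast
      have "pt A y \<in> M" using c y yS unfolding col_def by blast
      moreover have "pt A y \<in> C" using comp_closed_A y unfolding C_def by blast
      moreover have "pt A (pt A y) = y" using pt_pt[OF mA yS] .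
      ultimately show "y \<in> pt A ` (M \<inter> C)" by (intro image_eqI[of _ _ "pt A y"]) auto
    qed
  qed
  have inj: "inj_on (pt A) (M \<inter> C)"
  proof (rule inj_onI)
    fix a b assume "a \<in> M \<inter> C" "b \<in> M \<inter> C" "pt A a = pt A b"
    then have "pt A (pt A a) = pt A (pt A b)" by simp
    moreover have "a \<in> S" "b \<in> S" using \<open>a \<in> M \<inter> C\<close> \<open>b \<in> M \<inter> C\<close> CS by auto
    ultimately show "a = b" using pt_pt[OF mA] by simp
  qed
  have "card (C - M) = card (M \<inter> C)" using card_image[OF inj] img by simp
  moreover have "card C = card (M \<inter> C) + card (C - M)"
  proof -
    have "card ((M \<inter> C) \<union> (C - M)) = card (M \<inter> C) + card (C - M)"
      by (rule card_Un_disjoint) (use fC in auto)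
    moreover have "(M \<inter> C) \<union> (C - M) = C" by blast
    ultimately show ?thesis by simp
  qed
  ultimately show ?thesis unfolding C_def by simp
qed

lemma pM_ct: "filter_mset (\<lambda>l. 2 \<le> l) (cycle_type S (pM M)) =
     image_mset (\<lambda>C. card C div 2) (mset_set (compG S A B ` S))"
proof -
  define X where "X = compG S A B ` S"
  define Sing where "Sing = (\<lambda>y. {y}) ` (S - M)"
  define Half where "Half = (\<lambda>C. M \<inter> C) ` X"
  have p: "pM M permutes S" using pM_perm[OF nc c] .
  have fX: "finite X" unfolding X_def using fin by simp
  have cardC: "card (M \<inter> C) = card C div 2" "2 \<le> card (M \<inter> C)" if C: "C \<in> X" for C
  proof -
    obtain x where x: "x \<in> S" "C = compG S A B x" using C unfolding X_def by blast
    have e: "2 * card (M \<inter> C) = card C" using card_MC[OF x(1)] x(2) by simp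
    then show "card (M \<inter> C) = card C div 2" by simp
    have "4 \<le> card C" using per_ge4[OF x(1)] card_comp[OF x(1)] x(2) by simp
    then show "2 \<le> card (M \<inter> C)" using e by simp
  qed
  have orbs: "orbit (pM M) ` S = Sing \<union> Half"
  proof
    show "orbit (pM M) ` S \<subseteq> Sing \<union> Half"
    proof
      fix Ob assume "Ob \<in> orbit (pM M) ` S"
      then obtain y where y: "y \<in> S" "Ob = orbit (pM M) y" by blast
      show "Ob \<in> Sing \<union> Half"
      proof (cases "y \<in> M")
        case True then show ?thesis using orb_M y unfolding Half_def X_def by blast
      next
        case False then show ?thesis using orb_nM y unfolding Sing_def by blast
      qed
    qed
  next
    show "Sing \<union> Half \<subseteq> orbit (pM M) ` S"
    proof
      fix Ob assume Ob: "Ob \<in> Sing \<union> Half"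
      show "Ob \<in> orbit (pM M) ` S"
      proof (cases "Ob \<in> Sing")
        case True
        then obtain y where y: "y \<in> S - M" "Ob = {y}" unfolding Sing_def by blast
        then show ?thesis using orb_nM[of y] by blast
      next
        case False
        then obtain x0 where x0: "x0 \<in> S" "Ob = M \<inter> compG S A B x0" using Ob unfolding Half_def X_def by blast
        show ?thesis
        proof (cases "x0 \<in> M")
          case True then show ?thesis using orb_M[OF True] x0 by blast
        next
          case False
          define a where "a = pt A x0"
          have aM: "a \<in> M" using c x0(1) False unfolding col_def a_def by blast
          have aC: "a \<in> compG S A B x0" unfolding a_def by (rule comp_closed_A[OF self_comp[OF x0(1)]])
          have "compG S A B a = compG S A B x0" using comp_eq[OF aC] .
          then have "Ob = orbit (pM M) a" using orb_M[OF aM] x0(2) by simp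
          moreover have "a \<in> S" using aM MS by blast
          ultimately show ?thesis by blast
        qed
      qed
    qed
  qed
  have fSing: "finite Sing" unfolding Sing_def using fin by simp
  have fHalf: "finite Half" unfolding Half_def using fX by simp
  have c1: "card Ob = 1" if "Ob \<in> Sing" for Ob using that unfolding Sing_def by auto
  have c2: "2 \<le> card Ob" if "Ob \<in> Half" for Ob using that cardC unfolding Half_def by blast
  have dj: "Sing \<inter> Half = {}" using c1 c2 by fastforce
  have "cycle_type S (pM M) = image_mset card (mset_set (Sing \<union> Half))"
    using ct_eq[OF p fin] orbs by simp
  also have "\<dots> = image_mset card (mset_set Sing) + image_mset card (mset_set Half)"
    using mset_set_Union[OF fSing fHalf dj] by simp
  finally have ct: "cycle_type S (pM M) = image_mset card (mset_set Sing) + image_mset card (mset_set Half)" .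
  have f1: "filter_mset (\<lambda>l. 2 \<le> l) (image_mset card (mset_set Sing)) = {#}"
  proof -
    have E: "{Ob \<in> Sing. 2 \<le> card Ob} = {}" using c1 by fastforce
    have "filter_mset (\<lambda>l. 2 \<le> l) (image_mset card (mset_set Sing)) = image_mset card (mset_set {Ob \<in> Sing. 2 \<le> card Ob})"
      using fSing by (simp add: filter_mset_image_mset)
    also have "\<dots> = {#}" unfolding E by simp
    finally show ?thesis .
  qed
  have f2: "filter_mset (\<lambda>l. 2 \<le> l) (image_mset card (mset_set Half)) = image_mset card (mset_set Half)"
  proof -
    have E: "{Ob \<in> Half. 2 \<le> card Ob} = Half" using c2 by blast
    have "filter_mset (\<lambda>l. 2 \<le> l) (image_mset card (mset_set Half)) = image_mset card (mset_set {Ob \<in> Half. 2 \<le> card Ob})"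
      using fHalf by (simp add: filter_mset_image_mset)
    also have "\<dots> = image_mset card (mset_set Half)" unfolding E ..
    finally show ?thesis .
  qed
  have injH: "inj_on (\<lambda>C. M \<inter> C) X"
  proof (rule inj_onI)
    fix C1 C2 assume C: "C1 \<in> X" "C2 \<in> X" and e: "M \<inter> C1 = M \<inter> C2"
    have "M \<inter> C1 \<noteq> {}"
    proof
      assume "M \<inter> C1 = {}"
      then show False using cardC(2)[OF C(1)] by simp
    qed
    then obtain z where "z \<in> C1" "z \<in> C2" using e by blast
    moreover obtain x1 x2 where "C1 = compG S A B x1" "C2 = compG S A B x2" using C unfolding X_def by blast
    ultimately show "C1 = C2" using comp_disj by blast
  qed
  have "image_mset card (mset_set Half) = image_mset (card \<circ> (\<lambda>C. M \<inter> C)) (mset_set X)"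
    unfolding Half_def using image_mset_mset_set[OF injH, symmetric] by (simp add: multiset.map_comp)
  also have "\<dots> = image_mset (\<lambda>C. card C div 2) (mset_set X)"
    by (rule image_mset_cong) (use cardC fX in auto)
  finally show ?thesis using ct f1 f2 unfolding X_def by simp
qed

end
end
end

theorem G_top:
  assumes tau: "\<forall>x\<in>#tau. 2 \<le> x" and k: "sum_mset tau = k" and muk: "sum_mset mu = k"
  shows "Gv mu tau k = (if tau = mu then 2 ^ size tau else 0)"
proof -
  define S where "S = {1..2*k}"
  define A where "A = Imatch k"
  define B where "B = Bc tau k"
  interpret mm S A B unfolding S_def A_def B_def using Bc_mm[OF tau] k by simp
  have pad: "pad1 tau k = tau" unfolding pad1_def using k by simp
  have md: "mdistG S A B = dbl tau" unfolding S_def A_def B_def using Bc_prop(2)[OF tau] k pad by simp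
  have cA: "card A = k" unfolding A_def by (rule card_Imatch)
  have nc: "\<forall>x\<in>S. pt A x \<noteq> pt B x"
  proof
    fix x assume x: "x \<in> S"
    show "pt A x \<noteq> pt B x"
    proof
      assume e: "pt A x = pt B x"
      then have "per A B x = 2" using per2[OF x] by simp
      then have "card (compG S A B x) = 2" using card_comp[OF x] by simp
      then have "2 \<in> card ` (compG S A B ` S)" by (intro image_eqI[of _ _ "compG S A B x"]) (use x in auto)
      then have "2 \<in># mdistG S A B" unfolding mdistG_def using fin by simp
      then have "2 \<in># dbl tau" using md by simp
      then show False using tau unfolding dbl_def by auto
    qed
  qed
  define X where "X = compG S A B ` S"
  have halves: "image_mset (\<lambda>C. card C div 2) (mset_set X) = tau"
  proof -
    have "image_mset (\<lambda>C. card C div 2) (mset_set X) = image_mset (\<lambda>m. m div 2) (mdistG S A B)"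
      unfolding mdistG_def X_def by (simp add: multiset.map_comp comp_def)
    also have "\<dots> = tau" using md unfolding dbl_def by (simp add: multiset.map_comp comp_def)
    finally show ?thesis .
  qed
  have sizeX: "card X = size tau"
  proof -
    have "size (mdistG S A B) = card X" unfolding mdistG_def X_def by simp
    then show ?thesis using md unfolding dbl_def by simp
  qed
  define Q where "Q = {p. p permutes S \<and> filter_mset (\<lambda>l. 2 \<le> l) (cycle_type S p) = mu \<and> act p A = B
       \<and> (True \<longrightarrow> (\<forall>e\<in>A. \<exists>x\<in>e. p x \<noteq> x))}"
  have Gq: "Gv mu tau k = card Q" unfolding Gv_def Q_def cnt_def S_def A_def B_def by simp
  have ftP0: "filter_mset (\<lambda>l. 2 \<le> l) (cycle_type S p) = tau" if p: "p \<in> P0" for p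
  proof -
    have cc: "col {x\<in>S. p x \<noteq> x}" and pe: "p = pM {x\<in>S. p x \<noteq> x}" using P0_char[OF nc p] by auto
    show ?thesis using pM_ct[OF nc cc] pe halves unfolding X_def by metis
  qed
  have QP: "Q = (if tau = mu then P0 else {})"
  proof (cases "tau = mu")
    case True
    have "Q = P0"
    proof
      show "Q \<subseteq> P0"
      proof
        fix p assume "p \<in> Q"
        then have pp: "p permutes S" and ft: "filter_mset (\<lambda>l. 2 \<le> l) (cycle_type S p) = mu"
          and ap: "act p A = B" and t: "\<forall>e\<in>A. \<exists>x\<in>e. p x \<noteq> x" unfolding Q_def by auto
        have "card {x\<in>S. p x \<noteq> x} = card A" using sum_filter_ct[OF pp fin] ft muk cA by simp
        then show "p \<in> P0" unfolding P0_def[OF nc] using pp ap t by simp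
      qed
      show "P0 \<subseteq> Q"
      proof
        fix p assume p: "p \<in> P0"
        then show "p \<in> Q" using ftP0[OF p] True unfolding P0_def[OF nc] Q_def by simp
      qed
    qed
    then show ?thesis using True by simp
  next
    case False
    have "Q = {}"
    proof (rule ccontr)
      assume "Q \<noteq> {}"
      then obtain p where "p \<in> Q" by blast
      then have pp: "p permutes S" and ft: "filter_mset (\<lambda>l. 2 \<le> l) (cycle_type S p) = mu"
        and ap: "act p A = B" and t: "\<forall>e\<in>A. \<exists>x\<in>e. p x \<noteq> x" unfolding Q_def by auto
      have "card {x\<in>S. p x \<noteq> x} = card A" using sum_filter_ct[OF pp fin] ft muk cA by simp
      then have "p \<in> P0" unfolding P0_def[OF nc] using pp ap t by simp
      then have "filter_mset (\<lambda>l. 2 \<le> l) (cycle_type S p) = tau" by (rule ftP0)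
      then show False using ft False by simp
    qed
    then show ?thesis using False by simp
  qed
  have "card P0 = 2 ^ size tau" using card_P0[OF nc] card_col sizeX unfolding X_def by simp
  then show ?thesis using Gq QP by simp
qed

lemma P2n_D: "tau \<in> P2n n \<Longrightarrow> (\<forall>x\<in>#tau. 2 \<le> x) \<and> sum_mset tau \<le> n"
  unfolding P2n_def P2_def by simp

lemma filter_rep1: "filter_mset (\<lambda>l. 2 \<le> l) (replicate_mset k (1::nat)) = {#}"
  by (induction k) auto

lemma filter_pad: "\<forall>x\<in>#tau. 2 \<le> x \<Longrightarrow> filter_mset (\<lambda>l. 2 \<le> l) (pad1 tau m) = tau"
proof -
  assume t: "\<forall>x\<in>#tau. 2 \<le> x"
  have "filter_mset (\<lambda>l. 2 \<le> l) tau = tau" using t by (simp add: filter_mset_eq_conv)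
  then show ?thesis unfolding pad1_def using filter_rep1 by simp
qed

lemma pad_filter: assumes H1: "\<forall>x\<in>#H. 1 \<le> x" and Hs: "sum_mset H = m"
  shows "pad1 (filter_mset (\<lambda>l. 2 \<le> l) H) m = (H :: nat multiset)"
proof -
  have split: "H = filter_mset (\<lambda>l. 2 \<le> l) H + filter_mset (\<lambda>l. \<not> 2 \<le> l) H"
    by (simp add: multiset_partition)
  have ones: "filter_mset (\<lambda>l. \<not> 2 \<le> l) H = replicate_mset (count H 1) 1"
  proof (rule multiset_eqI)
    fix a
    show "count (filter_mset (\<lambda>l. \<not> 2 \<le> l) H) a = count (replicate_mset (count H 1) 1) a"
    proof (cases "a = 1")
      case True then show ?thesis by simp
    next
      case False
      have "a \<in># H \<Longrightarrow> 1 \<le> a" using H1 by blast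
      then show ?thesis using False by (cases "a \<in># H") (auto simp: not_in_iff)
    qed
  qed
  have "sum_mset H = sum_mset (filter_mset (\<lambda>l. 2 \<le> l) H + filter_mset (\<lambda>l. \<not> 2 \<le> l) H)"
    using arg_cong[OF split, of sum_mset] .
  also have "\<dots> = sum_mset (filter_mset (\<lambda>l. 2 \<le> l) H) + sum_mset (filter_mset (\<lambda>l. \<not> 2 \<le> l) H)"
    by (rule sum_mset.union)
  also have "\<dots> = sum_mset (filter_mset (\<lambda>l. 2 \<le> l) H) + count H 1" using ones by simp
  finally have "count H 1 = m - sum_mset (filter_mset (\<lambda>l. 2 \<le> l) H)" using Hs by simp
  then show ?thesis unfolding pad1_def using split ones by simp
qed

lemma undbl: "image_mset (\<lambda>m. m div 2) (dbl M) = M"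
  unfolding dbl_def by (simp add: multiset.map_comp comp_def)

lemma dbl_inj: "dbl M = dbl N \<Longrightarrow> M = N"
  using undbl by metis

lemma pad_inj: assumes t1: "\<forall>x\<in>#tau1. 2 \<le> x" and t2: "\<forall>x\<in>#tau2. 2 \<le> x"
  and e: "dbl (pad1 tau1 n) = dbl (pad1 tau2 n)" shows "tau1 = tau2"
proof -
  have pe: "pad1 tau1 n = pad1 tau2 n" using dbl_inj[OF e] .
  have "tau1 = filter_mset (\<lambda>l. 2 \<le> l) (pad1 tau1 n)" using filter_pad[OF t1, of n] by (rule sym)
  also have "\<dots> = filter_mset (\<lambda>l. 2 \<le> l) (pad1 tau2 n)" by (rule arg_cong[OF pe])
  also have "\<dots> = tau2" by (rule filter_pad[OF t2])
  finally show ?thesis .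
qed

lemma sum_dbl: "sum_mset (dbl M) = 2 * sum_mset M"
  unfolding dbl_def by (induction M) auto

lemma mdist_struct: assumes m: "mm S A B" and cS: "card S = 2 * n"
  shows "\<exists>tau. tau \<in> P2n n \<and> mdistG S A B = dbl (pad1 tau n)"
proof -
  interpret mm S A B by (rule m)
  define H where "H = image_mset (\<lambda>m. m div 2) (mdistG S A B)"
  have dH: "dbl H = mdistG S A B"
  proof -
    have "dbl H = image_mset (\<lambda>m. 2 * (m div 2)) (mdistG S A B)"
      unfolding dbl_def H_def by (simp add: multiset.map_comp comp_def)
    also have "\<dots> = image_mset (\<lambda>m. m) (mdistG S A B)"
      by (rule image_mset_cong) (use mdist_mem in auto)
    finally show ?thesis by simp
  qed
  have H1: "\<forall>x\<in>#H. 1 \<le> x" unfolding H_def using mdist_mem by fastforce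
  have "2 * sum_mset H = 2 * n" using sum_dbl[of H] dH sum_mdist cS by simp
  then have Hs: "sum_mset H = n" by simp
  define tau where "tau = filter_mset (\<lambda>l. 2 \<le> l) H"
  have tP: "tau \<in> P2n n"
  proof -
    have "sum_mset tau \<le> sum_mset H" unfolding tau_def using sum_filter_le .
    then show ?thesis unfolding P2n_def P2_def tau_def using Hs by auto
  qed
  have "pad1 tau n = H" unfolding tau_def by (rule pad_filter[OF H1 Hs])
  then show ?thesis using tP dH by metis
qed

definition dd :: "nat multiset \<Rightarrow> nat \<Rightarrow> nat multiset \<Rightarrow> complex" where
  "dd mu n tau = (if tau \<in> P2n n then of_nat (cnt mu False {1..2*n} (Imatch n) (Bc tau n)) else 0)"

lemma finite_P2n: "finite (P2n n)"
proof -
  have "P2n n \<subseteq> (\<Union>m\<in>{..n}. multisets_of_size {..n} m)"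
  proof
    fix tau assume t: "tau \<in> P2n n"
    then have t2: "\<forall>x\<in>#tau. 2 \<le> x" and ts: "sum_mset tau \<le> n" using P2n_D by auto
    have "x \<le> sum_mset tau" if xt: "x \<in># tau" for x
    proof -
      obtain T where "tau = add_mset x T" using multi_member_split[OF xt] by blast
      then show ?thesis by simp
    qed
    then have "set_mset tau \<subseteq> {..n}" using ts by fastforce
    moreover have "size tau \<le> sum_mset tau"
      using t2 by (induction tau) auto
    ultimately show "tau \<in> (\<Union>m\<in>{..n}. multisets_of_size {..n} m)"
      unfolding multisets_of_size_def using ts by auto
  qed
  moreover have "finite (\<Union>m\<in>{..n}. multisets_of_size {..n} m)" by auto
  ultimately show ?thesis by (rule finite_subset)
qed

lemma Mop_val: assumes A: "A \<in> pmatch n" and B: "B \<in> pmatch n"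
  and md: "mdistG {1..2*n} A B = dbl (pad1 tau0 n)" and t0: "tau0 \<in> P2n n" and t: "tau \<in> P2n n"
  shows "Mop tau n A B = (if tau = tau0 then 1 else 0)"
proof -
  have "sum_mset tau \<le> n" using P2n_D[OF t] by simp
  then have "Mop tau n A B = (if mdistG {1..2*n} A B = dbl (pad1 tau n) then 1 else 0)"
    unfolding Mop_def Nop_def using B mdist_eq by simp
  also have "(mdistG {1..2*n} A B = dbl (pad1 tau n)) \<longleftrightarrow> tau = tau0"
    using md pad_inj[of tau tau0 n] P2n_D[OF t] P2n_D[OF t0] by auto
  finally show ?thesis .
qed

lemma Mop_out: "B \<notin> pmatch n \<Longrightarrow> Mop tau n A B = 0"
  unfolding Mop_def Nop_def by simp

lemma sum_delta_c: "finite P \<Longrightarrow> t0 \<in> P \<Longrightarrow> (\<Sum>t\<in>P. c t * (if t = t0 then 1 else 0)) = (c t0 :: complex)"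
  by (simp add: if_distrib sum.delta' cong: if_cong)

lemma act_pmatch: assumes A: "A \<in> pmatch n" and p: "p permutes {1..2*n}" shows "act p A \<in> pmatch n"
proof -
  have "ismatch (p ` {1..2*n}) (act p A)" using ismatch_act[OF _ permutes_inj_on[OF p]] A pmatch_ismatch by blast
  then show ?thesis using permutes_image[OF p] pmatch_ismatch by simp
qed

lemma fop_out: assumes A: "A \<in> pmatch n" and B: "B \<notin> pmatch n" shows "fop mu n A B = 0"
proof -
  have "act p A \<noteq> B" if "p permutes {1..2*n}" for p using act_pmatch[OF A that] B by auto
  then show ?thesis unfolding fop_cnt cnt_def by (auto simp: card_eq_0_iff)
qed

lemma mm_pm: "A \<in> pmatch n \<Longrightarrow> B \<in> pmatch n \<Longrightarrow> mm {1..2*n} A B"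
  unfolding mm_def pmatch_ismatch by simp

lemma Bc_pm: "tau \<in> P2n n \<Longrightarrow> Bc tau n \<in> pmatch n"
  using Bc_prop(1) P2n_D pmatch_ismatch by blast

lemma I_pm: "Imatch n \<in> pmatch n" using ismatch_I pmatch_ismatch by blast

lemma Bc_md: "tau \<in> P2n n \<Longrightarrow> mdistG {1..2*n} (Imatch n) (Bc tau n) = dbl (pad1 tau n)"
  using Bc_prop(2) P2n_D by blast

lemma expansion: assumes A: "A \<in> pmatch n"
  shows "fop mu n A B = (\<Sum>tau\<in>P2n n. dd mu n tau * Mop tau n A B)"
proof (cases "B \<in> pmatch n")
  case False
  then show ?thesis using fop_out[OF A False] Mop_out[OF False] by simp
next
  case True
  have m: "mm {1..2*n} A B" using mm_pm[OF A True] .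
  obtain tau0 where t0: "tau0 \<in> P2n n" "mdistG {1..2*n} A B = dbl (pad1 tau0 n)"
    using mdist_struct[OF m] by auto
  have "(\<Sum>tau\<in>P2n n. dd mu n tau * Mop tau n A B) = (\<Sum>tau\<in>P2n n. dd mu n tau * (if tau = tau0 then 1 else 0))"
    using Mop_val[OF A True t0(2) t0(1)] by simp
  also have "\<dots> = dd mu n tau0" by (rule sum_delta_c[OF finite_P2n t0(1)])
  also have "\<dots> = of_nat (cnt mu False {1..2*n} (Imatch n) (Bc tau0 n))" unfolding dd_def using t0(1) by simp
  also have "\<dots> = of_nat (cnt mu False {1..2*n} A B)"
    using cnt_iso[OF mm_pm[OF I_pm Bc_pm[OF t0(1)]] m] Bc_md[OF t0(1)] t0(2) by simp
  also have "\<dots> = fop mu n A B" unfolding fop_cnt ..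
  finally show ?thesis by simp
qed

lemma dcoef_dd: "dcoef mu n = dd mu n"
  unfolding dcoef_def
proof (rule the_equality)
  show "(\<forall>tau. tau \<notin> P2n n \<longrightarrow> dd mu n tau = 0) \<and>
        (\<forall>A\<in>pmatch n. fop mu n A = (\<lambda>B. \<Sum>tau\<in>P2n n. dd mu n tau * Mop tau n A B))"
    using expansion by (auto simp: dd_def)
next
  fix d assume h: "(\<forall>tau. tau \<notin> P2n n \<longrightarrow> d tau = 0) \<and>
        (\<forall>A\<in>pmatch n. fop mu n A = (\<lambda>B. \<Sum>tau\<in>P2n n. d tau * Mop tau n A B))"
  show "d = dd mu n"
  proof
    fix tau show "d tau = dd mu n tau"
    proof (cases "tau \<in> P2n n")
      case False then show ?thesis using h unfolding dd_def by simp
    next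
      case True
      define B where "B = Bc tau n"
      have Mv: "Mop t n (Imatch n) B = (if t = tau then 1 else 0)" if "t \<in> P2n n" for t
        using Mop_val[OF I_pm Bc_pm[OF True] Bc_md[OF True] True that] unfolding B_def .
      have "fop mu n (Imatch n) B = (\<Sum>t\<in>P2n n. d t * Mop t n (Imatch n) B)" using h I_pm by metis
      also have "\<dots> = (\<Sum>t\<in>P2n n. d t * (if t = tau then 1 else 0))" using Mv by simp
      also have "\<dots> = d tau" by (rule sum_delta_c[OF finite_P2n True])
      finally have 1: "fop mu n (Imatch n) B = d tau" .
      have "fop mu n (Imatch n) B = (\<Sum>t\<in>P2n n. dd mu n t * Mop t n (Imatch n) B)" using expansion[OF I_pm] .
      also have "\<dots> = (\<Sum>t\<in>P2n n. dd mu n t * (if t = tau then 1 else 0))" using Mv by simp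
      also have "\<dots> = dd mu n tau" by (rule sum_delta_c[OF finite_P2n True])
      finally show ?thesis using 1 by simp
    qed
  qed
qed

lemma dcoef_val: "tau \<in> P2n n \<Longrightarrow> dcoef mu n tau = of_nat (cnt mu False {1..2*n} (Imatch n) (Bc tau n))"
  unfolding dcoef_dd dd_def by simp

lemma dcoef_expansion: "A \<in> pmatch n \<Longrightarrow> fop mu n A B = (\<Sum>tau\<in>P2n n. dcoef mu n tau * Mop tau n A B)"
  unfolding dcoef_dd by (rule expansion)

lemma alt_sum: "(\<Sum>u\<le>m. (-1::int)^(m-u) * int (m choose u)) = (if m = 0 then 1 else 0)"
proof (cases "m = 0")
  case True then show ?thesis by simp
next
  case False
  have "(\<Sum>u\<le>m. (-1::int)^(m-u) * int (m choose u)) = (\<Sum>u\<le>m. (-1)^m * ((-1)^u * int (m choose u)))"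
  proof (rule sum.cong[OF refl])
    fix u assume "u \<in> {..m}" then have u: "u \<le> m" by simp
    have "(-1::int)^(m-u) = (-1)^m * (-1)^u"
      using u by (auto simp: minus_one_power_iff)
    then show "(-1::int)^(m-u) * int (m choose u) = (-1)^m * ((-1)^u * int (m choose u))" by simp
  qed
  also have "\<dots> = (-1)^m * (\<Sum>u\<le>m. (-1)^u * int (m choose u))" by (simp add: sum_distrib_left)
  also have "(\<Sum>u\<le>m. (-1::int)^u * int (m choose u)) = 0" using choose_alternating_sum[of m] False by simp
  finally show ?thesis using False by simp
qed

lemma binom_inv0: fixes g :: "nat \<Rightarrow> int"
  shows "(\<Sum>s\<le>R. (-1)^(R-s) * int (R choose s) * (\<Sum>t\<le>s. int (s choose t) * g t)) = g R"
proof -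
  define a where "a s t = (-1::int)^(R-s) * int (R choose s) * int (s choose t) * g t" for s t
  have "(\<Sum>s\<le>R. (-1)^(R-s) * int (R choose s) * (\<Sum>t\<le>s. int (s choose t) * g t)) = (\<Sum>s\<le>R. \<Sum>t\<le>s. a s t)"
    unfolding a_def by (simp add: sum_distrib_left mult.assoc)
  also have "\<dots> = (\<Sum>s\<in>{..R}. \<Sum>t\<in>{t. t \<in> {..R} \<and> t \<le> s}. a s t)"
    by (intro sum.cong refl) auto
  also have "\<dots> = (\<Sum>t\<in>{..R}. \<Sum>s\<in>{s. s \<in> {..R} \<and> t \<le> s}. a s t)"
    by (rule sum.swap_restrict) auto
  also have "\<dots> = (\<Sum>t\<in>{..R}. int (R choose t) * g t * (if R - t = 0 then 1 else 0))"
  proof (rule sum.cong[OF refl])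
    fix t assume "t \<in> {..R}" then have t: "t \<le> R" by simp
    have "(\<Sum>s\<in>{s. s \<in> {..R} \<and> t \<le> s}. a s t) = (\<Sum>s\<in>{t..R}. int (R choose t) * g t * ((-1)^(R-s) * int ((R - t) choose (s - t))))"
    proof (rule sum.cong)
      show "{s. s \<in> {..R} \<and> t \<le> s} = {t..R}" by auto
    next
      fix s assume "s \<in> {t..R}" then have s: "t \<le> s" "s \<le> R" by auto
      have "int (R choose s) * int (s choose t) = int (R choose t) * int ((R - t) choose (s - t))"
        using choose_mult[OF s(1) s(2)] by (metis of_nat_mult)
      then show "a s t = int (R choose t) * g t * ((-1)^(R-s) * int ((R - t) choose (s - t)))"
        unfolding a_def by (simp add: algebra_simps)
    qed
    also have "\<dots> = int (R choose t) * g t * (\<Sum>s\<in>{t..R}. (-1)^(R-s) * int ((R - t) choose (s - t)))"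
      by (simp add: sum_distrib_left)
    also have "(\<Sum>s\<in>{t..R}. (-1::int)^(R-s) * int ((R - t) choose (s - t))) = (\<Sum>u\<le>R - t. (-1)^(R-t-u) * int ((R - t) choose u))"
    proof -
      have "(\<Sum>s\<in>{t..R}. (-1::int)^(R-s) * int ((R - t) choose (s - t))) = (\<Sum>s\<in>{0+t..(R-t)+t}. (-1::int)^(R-s) * int ((R - t) choose (s - t)))"
        using t by simp
      also have "\<dots> = (\<Sum>u\<in>{0..R-t}. (-1::int)^(R-(u+t)) * int ((R - t) choose (u + t - t)))"
        by (rule sum.shift_bounds_cl_nat_ivl)
      also have "\<dots> = (\<Sum>u\<le>R - t. (-1)^(R-t-u) * int ((R - t) choose u))"
        by (simp add: atLeast0AtMost diff_diff_add add.commute)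
      finally show ?thesis .
    qed
    also have "\<dots> = (if R - t = 0 then 1 else 0)" by (rule alt_sum)
    finally show "(\<Sum>s\<in>{s. s \<in> {..R} \<and> t \<le> s}. a s t) = int (R choose t) * g t * (if R - t = 0 then 1 else 0)" .
  qed
  also have "\<dots> = (\<Sum>t\<in>{..R}. (if t = R then g R else 0))"
  proof (rule sum.cong[OF refl])
    fix t assume "t \<in> {..R}" then have "t \<le> R" by simp
    then show "int (R choose t) * g t * (if R - t = 0 then 1 else 0) = (if t = R then g R else 0)" by auto
  qed
  also have "\<dots> = g R" by simp
  finally show ?thesis .
qed

lemma binom_inv: fixes f :: "nat \<Rightarrow> int" assumes jr: "j \<le> r"
  shows "(\<Sum>s=j..r. (-1)^(r-s) * int ((r-j) choose (s-j)) * (\<Sum>t=j..s. int ((s-j) choose (t-j)) * f t)) = f r"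
proof -
  define g where "g u = f (u + j)" for u
  define R where "R = r - j"
  have inner: "(\<Sum>t=j..s. int ((s-j) choose (t-j)) * f t) = (\<Sum>t\<le>s - j. int ((s-j) choose t) * g t)" if "j \<le> s" for s
  proof -
    have "(\<Sum>t=j..s. int ((s-j) choose (t-j)) * f t) = (\<Sum>t\<in>{0+j..(s-j)+j}. int ((s-j) choose (t-j)) * f t)"
      using that by simp
    also have "\<dots> = (\<Sum>t\<in>{0..s-j}. int ((s-j) choose (t+j-j)) * f (t+j))" by (rule sum.shift_bounds_cl_nat_ivl)
    also have "\<dots> = (\<Sum>t\<le>s - j. int ((s-j) choose t) * g t)" unfolding g_def by (simp add: atLeast0AtMost)
    finally show ?thesis .
  qed
  have "(\<Sum>s=j..r. (-1)^(r-s) * int ((r-j) choose (s-j)) * (\<Sum>t=j..s. int ((s-j) choose (t-j)) * f t))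
      = (\<Sum>s\<in>{0+j..(r-j)+j}. (-1)^(r-s) * int ((r-j) choose (s-j)) * (\<Sum>t\<le>s - j. int ((s-j) choose t) * g t))"
    using jr inner by (intro sum.cong) auto
  also have "\<dots> = (\<Sum>s\<in>{0..R}. (-1)^(r-(s+j)) * int (R choose (s+j-j)) * (\<Sum>t\<le>s+j - j. int ((s+j-j) choose t) * g t))"
    unfolding R_def by (rule sum.shift_bounds_cl_nat_ivl)
  also have "\<dots> = (\<Sum>s\<le>R. (-1)^(R-s) * int (R choose s) * (\<Sum>t\<le>s. int (s choose t) * g t))"
    unfolding R_def by (simp add: atLeast0AtMost add.commute diff_diff_add)
  also have "\<dots> = g R" by (rule binom_inv0)
  also have "\<dots> = f r" unfolding g_def R_def using jr by simp
  finally show ?thesis .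
qed

lemma Gz_big: "2*r < sum_mset mu \<Longrightarrow> Gv mu tau r = 0"
  unfolding Gv_def by (rule cnt_zero_big) auto

lemma Gz_touch: "sum_mset mu < r \<Longrightarrow> Gv mu tau r = 0"
  unfolding Gv_def by (rule cnt_zero_touch[OF ismatch_I]) (auto simp: card_Imatch)

lemma Gz_common: assumes t2: "\<forall>x\<in>#tau. 2 \<le> x" and j: "sum_mset tau = j" and jk: "j < k" and k: "sum_mset mu = k"
  shows "Gv mu tau k = 0"
proof -
  have tk: "sum_mset tau \<le> k" using j jk by simp
  have m: "mm {1..2*k} (Imatch k) (Bc tau k)" using Bc_mm[OF t2 tk] .
  have "card (Imatch k \<inter> Bc tau k) = count (mdistG {1..2*k} (Imatch k) (Bc tau k)) 2"
    using mm.count2[OF m] by simp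
  also have "\<dots> = count (dbl tau + replicate_mset (k - j) 2) 2" using Bc_prop(2)[OF t2 tk] dbl_pad[OF tk] j by simp
  also have "\<dots> = k - j" using count_dbl_tau[OF t2] by simp
  finally have "card (Imatch k \<inter> Bc tau k) > 0" using jk by simp
  then have ne: "Imatch k \<inter> Bc tau k \<noteq> {}" by (metis card.empty less_irrefl)
  show ?thesis unfolding Gv_def by (rule cnt_zero_common[OF m _ ne]) (use card_Imatch k in simp)
qed

lemma mcount_eq: assumes mu2: "\<forall>x\<in>#mu. 2 \<le> x" and k: "sum_mset mu = k" and ks: "k \<le> 2*s"
  shows "mcount (pad1 mu (2*s)) (dbl (pad1 tau s)) = cnt mu False {1..2*s} (Imatch s) (Bc tau s)"
proof -
  have sp: "sum_mset (pad1 mu (2*s)) div 2 = s" unfolding pad1_def using k ks by simp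
  have "mcount (pad1 mu (2*s)) (dbl (pad1 tau s)) = card {p. p permutes {1..2*s} \<and> cycle_type {1..2*s} p = pad1 mu (2*s) \<and> act p (Imatch s) = Bc tau s}"
    unfolding mcount_def Let_def sp Bc_def ..
  also have "{p. p permutes {1..2*s} \<and> cycle_type {1..2*s} p = pad1 mu (2*s) \<and> act p (Imatch s) = Bc tau s}
      = {p. p permutes {1..2*s} \<and> filter_mset (\<lambda>l. 2 \<le> l) (cycle_type {1..2*s} p) = mu \<and> act p (Imatch s) = Bc tau s
          \<and> (False \<longrightarrow> (\<forall>e\<in>Imatch s. \<exists>x\<in>e. p x \<noteq> x))}"
  proof -
    have "cycle_type {1..2*s} p = pad1 mu (2*s) \<longleftrightarrow> filter_mset (\<lambda>l. 2 \<le> l) (cycle_type {1..2*s} p) = mu"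
      if p: "p permutes {1..2*s}" for p
      using ct_filter_pad[OF p _ mu2, of] k ks by simp
    then show ?thesis by blast
  qed
  finally show ?thesis unfolding cnt_def .
qed

theorem part1:
  assumes mu: "mu \<in> P2" and k: "sum_mset mu = k" and kn: "k \<le> n" and tau: "tau \<in> P2n n"
  shows "(sum_mset tau > k \<longrightarrow> dcoef mu n tau = 0) \<and>
            (sum_mset tau = k \<and> tau \<noteq> mu \<longrightarrow> dcoef mu n tau = 0) \<and>
            (tau = mu \<longrightarrow> dcoef mu n tau = 2 ^ size mu) \<and>
            (\<forall>j. sum_mset tau = j \<and> j < k \<longrightarrow>
               dcoef mu n tau = of_int
                 (\<Sum>r = max j ((k + 1) div 2)..k - 1.
                    (\<Sum>s = max j ((k + 1) div 2)..r.
                        (-1) ^ (r - s) * int ((r - j) choose (s - j))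
                        * int (mcount (pad1 mu (2 * s)) (dbl (pad1 tau s))))
                    * int ((n - j) choose (r - j))))"
proof -
  have mu2: "\<forall>x\<in>#mu. 2 \<le> x" using mu unfolding P2_def by simp
  have t2: "\<forall>x\<in>#tau. 2 \<le> x" and tn: "sum_mset tau \<le> n" using P2n_D[OF tau] by auto
  define j0 where "j0 = sum_mset tau"
  have MI: "cnt mu False {1..2*n} (Imatch n) (Bc tau n) = (\<Sum>r = j0..n. ((n - j0) choose (r - j0)) * Gv mu tau r)"
    using main_identity[OF mm_pm[OF I_pm Bc_pm[OF tau]] _ Bc_md[OF tau] t2 j0_def[symmetric]] tn unfolding j0_def
    by simp
  have dc: "dcoef mu n tau = of_nat (\<Sum>r = j0..n. ((n - j0) choose (r - j0)) * Gv mu tau r)"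
    using dcoef_val[OF tau] MI by simp
  have c1: "sum_mset tau > k \<longrightarrow> dcoef mu n tau = 0"
  proof
    assume "sum_mset tau > k"
    then have "Gv mu tau r = 0" if "r \<in> {j0..n}" for r using that Gz_touch[of mu r tau] k unfolding j0_def by simp
    then show "dcoef mu n tau = 0" using dc by simp
  qed
  have eqk: "dcoef mu n tau = (if tau = mu then 2 ^ size mu else 0)" if jk: "sum_mset tau = k"
  proof -
    have "(\<Sum>r = j0..n. ((n - j0) choose (r - j0)) * Gv mu tau r) = (\<Sum>r \<in> {k..n}. (if r = k then Gv mu tau k else 0))"
    proof (rule sum.cong)
      show "{j0..n} = {k..n}" using jk unfolding j0_def by simp
    next
      fix r assume r: "r \<in> {k..n}"
      show "((n - j0) choose (r - j0)) * Gv mu tau r = (if r = k then Gv mu tau k else 0)"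
      proof (cases "r = k")
        case True then show ?thesis using jk unfolding j0_def by simp
      next
        case False then have "k < r" using r by simp
        then show ?thesis using Gz_touch[of mu r tau] k False by simp
      qed
    qed
    also have "\<dots> = Gv mu tau k" using kn by simp
    also have "\<dots> = (if tau = mu then 2 ^ size tau else 0)" by (rule G_top[OF t2 jk k])
    finally show ?thesis using dc by simp
  qed
  have c2: "sum_mset tau = k \<and> tau \<noteq> mu \<longrightarrow> dcoef mu n tau = 0" using eqk by simp
  have c3: "tau = mu \<longrightarrow> dcoef mu n tau = 2 ^ size mu"
  proof
    assume e: "tau = mu"
    then have "sum_mset tau = k" using k by simp
    then show "dcoef mu n tau = 2 ^ size mu" using eqk e by simp
  qed
  have c4: "dcoef mu n tau = of_int
                 (\<Sum>r = max j ((k + 1) div 2)..k - 1.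
                    (\<Sum>s = max j ((k + 1) div 2)..r.
                        (-1) ^ (r - s) * int ((r - j) choose (s - j))
                        * int (mcount (pad1 mu (2 * s)) (dbl (pad1 tau s))))
                    * int ((n - j) choose (r - j)))" if jj: "sum_mset tau = j" "j < k" for j
  proof -
    have j0j: "j0 = j" using jj unfolding j0_def by simp
    define lo where "lo = max j ((k + 1) div 2)"
    define F where "F r = int ((n - j) choose (r - j)) * int (Gv mu tau r)" for r
    have Gz: "Gv mu tau r = 0" if "j \<le> r" "r < lo \<or> k \<le> r" for r
    proof (cases "r < lo")
      case True
      then have "2 * r < k" using that(1) unfolding lo_def by linarith
      then show ?thesis using Gz_big[of r mu tau] k by simp
    next
      case False
      then have "k \<le> r" using that by simp
      show ?thesis
      proof (cases "r = k")
        case True then show ?thesis using Gz_common[OF t2 jj(1) jj(2) k] by simp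
      next
        case False then show ?thesis using Gz_touch[of mu r tau] k \<open>k \<le> r\<close> by simp
      qed
    qed
    have s1: "int (\<Sum>r = j..n. ((n - j) choose (r - j)) * Gv mu tau r) = (\<Sum>r = lo..k - 1. F r)"
    proof -
      have "int (\<Sum>r = j..n. ((n - j) choose (r - j)) * Gv mu tau r) = (\<Sum>r = j..n. F r)"
        unfolding F_def by simp
      also have "\<dots> = (\<Sum>r = lo..k - 1. F r)"
      proof (rule sum.mono_neutral_right)
        show "finite {j..n}" by simp
        show "{lo..k - 1} \<subseteq> {j..n}" using kn unfolding lo_def by auto
        show "\<forall>i\<in>{j..n} - {lo..k - 1}. F i = 0"
        proof
          fix i assume i: "i \<in> {j..n} - {lo..k - 1}"
          then have "j \<le> i" "i < lo \<or> k \<le> i" using jj(2) by auto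
          then show "F i = 0" unfolding F_def using Gz by simp
        qed
      qed
      finally show ?thesis .
    qed
    have s2: "int (Gv mu tau r) = (\<Sum>s = lo..r. (-1) ^ (r - s) * int ((r - j) choose (s - j))
                        * int (mcount (pad1 mu (2 * s)) (dbl (pad1 tau s))))" if r: "r \<in> {lo..k - 1}" for r
    proof -
      have jr: "j \<le> r" using r unfolding lo_def by simp
      have "int (Gv mu tau r) = (\<Sum>s = j..r. (-1)^(r-s) * int ((r-j) choose (s-j)) *
              (\<Sum>t = j..s. int ((s-j) choose (t-j)) * int (Gv mu tau t)))"
        using binom_inv[OF jr, of "\<lambda>t. int (Gv mu tau t)"] by simp
      also have "\<dots> = (\<Sum>s = lo..r. (-1)^(r-s) * int ((r-j) choose (s-j)) *
              (\<Sum>t = j..s. int ((s-j) choose (t-j)) * int (Gv mu tau t)))"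
      proof (rule sum.mono_neutral_right)
        show "finite {j..r}" by simp
        show "{lo..r} \<subseteq> {j..r}" unfolding lo_def by auto
        show "\<forall>i\<in>{j..r} - {lo..r}. (-1)^(r-i) * int ((r-j) choose (i-j)) *
              (\<Sum>t = j..i. int ((i-j) choose (t-j)) * int (Gv mu tau t)) = 0"
        proof
          fix i assume i: "i \<in> {j..r} - {lo..r}"
          then have "i < lo" by auto
          have "Gv mu tau t = 0" if "t \<in> {j..i}" for t using Gz[of t] that \<open>i < lo\<close> by simp
          then show "(-1)^(r-i) * int ((r-j) choose (i-j)) *
              (\<Sum>t = j..i. int ((i-j) choose (t-j)) * int (Gv mu tau t)) = 0" by simp
        qed
      qed
      also have "\<dots> = (\<Sum>s = lo..r. (-1) ^ (r - s) * int ((r - j) choose (s - j))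
                        * int (mcount (pad1 mu (2 * s)) (dbl (pad1 tau s))))"
      proof (rule sum.cong[OF refl])
        fix s assume s: "s \<in> {lo..r}"
        have ks: "k \<le> 2 * s" using s unfolding lo_def by auto
        have js: "sum_mset tau \<le> s" using s jj(1) unfolding lo_def by auto
        have tauS: "tau \<in> P2n s" unfolding P2n_def P2_def using t2 js by simp
        have "cnt mu False {1..2*s} (Imatch s) (Bc tau s) = (\<Sum>t = j..s. ((s - j) choose (t - j)) * Gv mu tau t)"
          using main_identity[OF mm_pm[OF I_pm Bc_pm[OF tauS]] _ Bc_md[OF tauS] t2 jj(1) js[unfolded jj(1)]] by simp
        then have "(\<Sum>t = j..s. int ((s-j) choose (t-j)) * int (Gv mu tau t)) = int (mcount (pad1 mu (2 * s)) (dbl (pad1 tau s)))"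
          using mcount_eq[OF mu2 k ks, of tau] by simp
        then show "(-1)^(r-s) * int ((r-j) choose (s-j)) * (\<Sum>t = j..s. int ((s-j) choose (t-j)) * int (Gv mu tau t))
             = (-1) ^ (r - s) * int ((r - j) choose (s - j)) * int (mcount (pad1 mu (2 * s)) (dbl (pad1 tau s)))"
          by simp
      qed
      finally show ?thesis .
    qed
    have "int (\<Sum>r = j..n. ((n - j) choose (r - j)) * Gv mu tau r) =
       (\<Sum>r = lo..k - 1. (\<Sum>s = lo..r. (-1) ^ (r - s) * int ((r - j) choose (s - j))
                        * int (mcount (pad1 mu (2 * s)) (dbl (pad1 tau s)))) * int ((n - j) choose (r - j)))"
      unfolding s1 F_def using s2 by (intro sum.cong refl) (simp add: mult.commute)
    then show ?thesis using dc j0j unfolding lo_def by (metis of_int_of_nat_eq)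
  qed
  show ?thesis using c1 c2 c3 c4 by blast
qed

lemma act_id: "act id B = B" unfolding act_def by simp

lemma fop_equiv: "equivariant_op n (fop mu n)"
  unfolding equivariant_op_def
proof (intro conjI ballI allI impI)
  fix A B assume A: "A \<in> pmatch n" and B: "B \<notin> pmatch n"
  show "fop mu n A B = 0" by (rule fop_out[OF A B])
next
  fix p A B assume p: "p permutes {1..2*n}" and A: "A \<in> pmatch n"
  have pA: "act p A \<in> pmatch n" by (rule act_pmatch[OF A p])
  show "fop mu n (act p A) (act p B) = fop mu n A B"
  proof (cases "B \<in> pmatch n")
    case True
    have pB: "act p B \<in> pmatch n" by (rule act_pmatch[OF True p])
    have m: "mm {1..2*n} A B" by (rule mm_pm[OF A True])
    have "mdistG (p ` {1..2*n}) (act p A) (act p B) = mdistG {1..2*n} A B"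
      by (rule mm.mdist_act[OF m permutes_inj_on[OF p]])
    then have md: "mdistG {1..2*n} A B = mdistG {1..2*n} (act p A) (act p B)"
      using permutes_image[OF p] by simp
    show ?thesis unfolding fop_cnt using cnt_iso[OF m mm_pm[OF pA pB] md] by simp
  next
    case False
    have "act p B \<notin> pmatch n"
    proof
      assume "act p B \<in> pmatch n"
      then have "act (inv p) (act p B) \<in> pmatch n" using act_pmatch permutes_inv[OF p] by blast
      moreover have "act (inv p) (act p B) = B"
        using act_comp[of "inv p" p B] permutes_inv_o(2)[OF p] act_id by simp
      ultimately show False using False by simp
    qed
    then show ?thesis using fop_out[OF A] fop_out[OF pA] False by simp
  qed
qed

lemma extract_c:
  assumes t1: "tau1 \<in> P2n n" and F: "\<forall>A\<in>pmatch n. \<forall>B. F A B = (\<Sum>tau\<in>P2n n. c tau * Mop tau n A B)"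
  shows "F (Imatch n) (Bc tau1 n) = c tau1"
proof -
  have Mv: "Mop t n (Imatch n) (Bc tau1 n) = (if t = tau1 then 1 else 0)" if "t \<in> P2n n" for t
    using Mop_val[OF I_pm Bc_pm[OF t1] Bc_md[OF t1] t1 that] .
  have "F (Imatch n) (Bc tau1 n) = (\<Sum>t\<in>P2n n. c t * Mop t n (Imatch n) (Bc tau1 n))" using F I_pm by blast
  also have "\<dots> = (\<Sum>t\<in>P2n n. c t * (if t = tau1 then 1 else 0))" using Mv by simp
  also have "\<dots> = c tau1" by (rule sum_delta_c[OF finite_P2n t1])
  finally show ?thesis .
qed

lemma fop_at: "tau1 \<in> P2n n \<Longrightarrow> fop mu n (Imatch n) (Bc tau1 n) = dcoef mu n tau1"
  using extract_c[where F="fop mu n" and c="dcoef mu n"] dcoef_expansion by blast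

lemma P2n_P2: "mu \<in> P2n n \<Longrightarrow> mu \<in> P2" unfolding P2n_def by simp

lemma tri_all: assumes mu: "mu \<in> P2n n" and t: "tau \<in> P2n n"
  shows "(sum_mset tau > sum_mset mu \<longrightarrow> dcoef mu n tau = 0) \<and>
         (sum_mset tau = sum_mset mu \<and> tau \<noteq> mu \<longrightarrow> dcoef mu n tau = 0) \<and>
         (tau = mu \<longrightarrow> dcoef mu n tau = 2 ^ size mu)"
proof -
  have "sum_mset mu \<le> n" using P2n_D[OF mu] by simp
  from part1[OF P2n_P2[OF mu] refl this t] show ?thesis by blast
qed

lemma tri1: "mu \<in> P2n n \<Longrightarrow> tau \<in> P2n n \<Longrightarrow> sum_mset mu < sum_mset tau \<Longrightarrow> dcoef mu n tau = 0"
  using tri_all by blast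
lemma tri2: "mu \<in> P2n n \<Longrightarrow> tau \<in> P2n n \<Longrightarrow> sum_mset tau = sum_mset mu \<Longrightarrow> tau \<noteq> mu \<Longrightarrow> dcoef mu n tau = 0"
  using tri_all by blast
lemma tri3: "mu \<in> P2n n \<Longrightarrow> dcoef mu n mu = 2 ^ size mu"
  using tri_all by blast

lemma indep:
  assumes H: "\<forall>A\<in>pmatch n. \<forall>B. (\<Sum>mu\<in>P2n n. c mu * fop mu n A B) = 0"
  shows "\<forall>mu\<in>P2n n. c mu = 0"
proof (rule ccontr)
  assume "\<not> (\<forall>mu\<in>P2n n. c mu = 0)"
  define Z where "Z = {mu \<in> P2n n. c mu \<noteq> 0}"
  have Zne: "Z \<noteq> {}" using \<open>\<not> (\<forall>mu\<in>P2n n. c mu = 0)\<close> unfolding Z_def by blast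
  have fZ: "finite Z" unfolding Z_def using finite_P2n by simp
  define m where "m = Max (sum_mset ` Z)"
  have "m \<in> sum_mset ` Z" unfolding m_def using fZ Zne by simp
  then obtain mu0 where mu0: "mu0 \<in> Z" "sum_mset mu0 = m" by blast
  have mx: "sum_mset mu \<le> sum_mset mu0" if "mu \<in> Z" for mu using that mu0(2) fZ unfolding m_def by simp
  have m0P: "mu0 \<in> P2n n" and cm0: "c mu0 \<noteq> 0" using mu0(1) unfolding Z_def by auto
  have "0 = (\<Sum>mu\<in>P2n n. c mu * fop mu n (Imatch n) (Bc mu0 n))" using H I_pm by simp
  also have "\<dots> = (\<Sum>mu\<in>P2n n. c mu * dcoef mu n mu0)" using fop_at[OF m0P] by simp
  also have "\<dots> = c mu0 * dcoef mu0 n mu0 + (\<Sum>mu\<in>P2n n - {mu0}. c mu * dcoef mu n mu0)"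
    by (rule sum.remove[OF finite_P2n m0P])
  also have "(\<Sum>mu\<in>P2n n - {mu0}. c mu * dcoef mu n mu0) = 0"
  proof (rule sum.neutral, rule ballI)
    fix mu assume mu: "mu \<in> P2n n - {mu0}"
    show "c mu * dcoef mu n mu0 = 0"
    proof (cases "c mu = 0")
      case True then show ?thesis by simp
    next
      case False
      then have "mu \<in> Z" using mu unfolding Z_def by simp
      then have le: "sum_mset mu \<le> sum_mset mu0" by (rule mx)
      show ?thesis
      proof (cases "sum_mset mu < sum_mset mu0")
        case True then show ?thesis using tri1[of mu n mu0] mu m0P by simp
      next
        case False
        then have "sum_mset mu0 = sum_mset mu" using le by simp
        then show ?thesis using tri2[of mu n mu0] mu m0P by auto
      qed
    qed
  qed
  finally have "c mu0 * dcoef mu0 n mu0 = 0" by simp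
  then show False using tri3[OF m0P] cm0 by simp
qed

definition insp :: "nat \<Rightarrow> (nat set set \<Rightarrow> nat set set \<Rightarrow> complex) \<Rightarrow> bool" where
  "insp n F \<longleftrightarrow> (\<exists>c. \<forall>A\<in>pmatch n. \<forall>B. F A B = (\<Sum>mu\<in>P2n n. c mu * fop mu n A B))"

lemma insp_cong: "insp n G \<Longrightarrow> (\<forall>A\<in>pmatch n. \<forall>B. F A B = G A B) \<Longrightarrow> insp n F"
  unfolding insp_def by simp

lemma insp_sum: assumes fI: "finite I" and h: "\<forall>i\<in>I. insp n (F i)"
  shows "insp n (\<lambda>A B. \<Sum>i\<in>I. w i * F i A B)"
proof -
  have "\<forall>i\<in>I. \<exists>c. \<forall>A\<in>pmatch n. \<forall>B. F i A B = (\<Sum>mu\<in>P2n n. c mu * fop mu n A B)"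
    using h unfolding insp_def by blast
  then obtain C where C: "\<forall>i\<in>I. \<forall>A\<in>pmatch n. \<forall>B. F i A B = (\<Sum>mu\<in>P2n n. C i mu * fop mu n A B)"
    by (metis (no_types) bchoice)
  show ?thesis unfolding insp_def
  proof (intro exI[of _ "\<lambda>mu. \<Sum>i\<in>I. w i * C i mu"] ballI allI)
    fix A B assume A: "A \<in> pmatch n"
    have "(\<Sum>i\<in>I. w i * F i A B) = (\<Sum>i\<in>I. w i * (\<Sum>mu\<in>P2n n. C i mu * fop mu n A B))"
      using C A by simp
    also have "\<dots> = (\<Sum>i\<in>I. \<Sum>mu\<in>P2n n. w i * C i mu * fop mu n A B)"
      by (simp add: sum_distrib_left mult.assoc)
    also have "\<dots> = (\<Sum>mu\<in>P2n n. \<Sum>i\<in>I. w i * C i mu * fop mu n A B)" by (rule sum.swap)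
    also have "\<dots> = (\<Sum>mu\<in>P2n n. (\<Sum>i\<in>I. w i * C i mu) * fop mu n A B)"
      by (simp add: sum_distrib_right)
    finally show "(\<Sum>i\<in>I. w i * F i A B) = (\<Sum>mu\<in>P2n n. (\<Sum>i\<in>I. w i * C i mu) * fop mu n A B)" .
  qed
qed

lemma insp_fop: assumes m: "mu0 \<in> P2n n" shows "insp n (fop mu0 n)"
  unfolding insp_def
proof (intro exI[of _ "\<lambda>mu. if mu = mu0 then 1 else 0"] ballI allI)
  fix A B
  have "(\<Sum>mu\<in>P2n n. (if mu = mu0 then 1 else 0) * fop mu n A B) = (\<Sum>mu\<in>P2n n. fop mu n A B * (if mu = mu0 then 1 else 0))"
    by (simp add: mult.commute)
  also have "\<dots> = fop mu0 n A B" by (rule sum_delta_c[OF finite_P2n m])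
  finally show "fop mu0 n A B = (\<Sum>mu\<in>P2n n. (if mu = mu0 then 1 else 0) * fop mu n A B)" by simp
qed

lemma insp_lin: "insp n F \<Longrightarrow> insp n G \<Longrightarrow> insp n (\<lambda>A B. a * F A B + b * G A B)"
proof -
  assume f: "insp n F" and g: "insp n G"
  have "insp n (\<lambda>A B. \<Sum>i\<in>{True, False}. (if i then a else b) * (if i then F else G) A B)"
    by (rule insp_sum) (use f g in auto)
  then show ?thesis by simp
qed

lemma Mop_insp: "tau \<in> P2n n \<Longrightarrow> insp n (Mop tau n)"
proof (induction "sum_mset tau" arbitrary: tau rule: less_induct)
  case less
  have t: "tau \<in> P2n n" by fact
  define L where "L = {t \<in> P2n n. sum_mset t < sum_mset tau}"
  have fL: "finite L" unfolding L_def using finite_P2n by simp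
  have IH: "\<forall>t\<in>L. insp n (Mop t n)" using less.hyps unfolding L_def by blast
  have exp: "fop tau n A B = 2 ^ size tau * Mop tau n A B + (\<Sum>t\<in>L. dcoef tau n t * Mop t n A B)"
    if A: "A \<in> pmatch n" for A B
  proof -
    have "fop tau n A B = (\<Sum>t\<in>P2n n. dcoef tau n t * Mop t n A B)" by (rule dcoef_expansion[OF A])
    also have "\<dots> = dcoef tau n tau * Mop tau n A B + (\<Sum>t\<in>P2n n - {tau}. dcoef tau n t * Mop t n A B)"
      by (rule sum.remove[OF finite_P2n t])
    also have "(\<Sum>t\<in>P2n n - {tau}. dcoef tau n t * Mop t n A B) = (\<Sum>t\<in>L. dcoef tau n t * Mop t n A B)"
    proof (rule sum.mono_neutral_right)
      show "finite (P2n n - {tau})" using finite_P2n by simp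
      show "L \<subseteq> P2n n - {tau}" unfolding L_def by auto
      show "\<forall>i\<in>P2n n - {tau} - L. dcoef tau n i * Mop i n A B = 0"
      proof
        fix i assume i: "i \<in> P2n n - {tau} - L"
        then have "sum_mset tau \<le> sum_mset i" "i \<in> P2n n" "i \<noteq> tau" unfolding L_def by auto
        then have "dcoef tau n i = 0" using tri1[OF t, of i] tri2[OF t, of i] by (cases "sum_mset tau < sum_mset i") auto
        then show "dcoef tau n i * Mop i n A B = 0" by simp
      qed
    qed
    finally show ?thesis using tri3[OF t] by simp
  qed
  have i1: "insp n (\<lambda>A B. \<Sum>t\<in>L. dcoef tau n t * Mop t n A B)" by (rule insp_sum[OF fL IH])
  have i2: "insp n (\<lambda>A B. (1 / 2 ^ size tau) * fop tau n A B + (- 1 / 2 ^ size tau) * (\<Sum>t\<in>L. dcoef tau n t * Mop t n A B))"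
    by (rule insp_lin[OF insp_fop[OF t] i1])
  show ?case
  proof (rule insp_cong[OF i2], intro ballI allI)
    fix A B assume A: "A \<in> pmatch n"
    have "(2::complex) ^ size tau \<noteq> 0" by simp
    then show "Mop tau n A B = (1 / 2 ^ size tau) * fop tau n A B + (- 1 / 2 ^ size tau) * (\<Sum>t\<in>L. dcoef tau n t * Mop t n A B)"
      using exp[OF A, of B] by (simp add: field_simps)
  qed
qed

lemma span:
  assumes T: "equivariant_op n T"
  shows "\<exists>c :: nat multiset \<Rightarrow> complex. \<forall>A\<in>pmatch n. \<forall>B. T A B = (\<Sum>mu\<in>P2n n. c mu * fop mu n A B)"
proof -
  have T0: "\<forall>A\<in>pmatch n. \<forall>B. B \<notin> pmatch n \<longrightarrow> T A B = 0"
    and Tinv: "\<forall>p. p permutes {1..2*n} \<longrightarrow> (\<forall>A\<in>pmatch n. \<forall>B. T (act p A) (act p B) = T A B)"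
    using T unfolding equivariant_op_def by auto
  have rep: "T A B = (\<Sum>tau\<in>P2n n. T (Imatch n) (Bc tau n) * Mop tau n A B)" if A: "A \<in> pmatch n" for A B
  proof (cases "B \<in> pmatch n")
    case False then show ?thesis using T0 A Mop_out[OF False] by simp
  next
    case True
    have m: "mm {1..2*n} A B" by (rule mm_pm[OF A True])
    obtain tau0 where t0: "tau0 \<in> P2n n" "mdistG {1..2*n} A B = dbl (pad1 tau0 n)"
      using mdist_struct[OF m] by auto
    interpret mm2 "{1..2*n}" A B "{1..2*n}" "Imatch n" "Bc tau0 n"
      unfolding mm2_def using m mm_pm[OF I_pm Bc_pm[OF t0(1)]] by simp
    obtain q where q: "bij_betw q {1..2*n} {1..2*n}" "act q A = Imatch n" "act q B = Bc tau0 n"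
      using iso_exists t0(2) Bc_md[OF t0(1)] by metis
    define q' where "q' x = (if x \<in> {1..2*n} then q x else x)" for x
    have "bij_betw q' {1..2*n} {1..2*n}" using q(1) unfolding q'_def by (rule bij_betw_cong[THEN iffD1, rotated]) simp
    then have qp: "q' permutes {1..2*n}" by (rule bij_imp_permutes) (auto simp: q'_def)
    have aq: "act q' M = act q M" if "ismatch {1..2*n} M" for M
    proof -
      have "q' ` e = q ` e" if "e \<in> M" for e
        using edge_sub[OF \<open>ismatch {1..2*n} M\<close> that] unfolding q'_def by (auto intro!: image_cong)
      then show ?thesis unfolding act_def by (auto intro!: image_cong)
    qed
    have "T (Imatch n) (Bc tau0 n) = T (act q' A) (act q' B)"
      using aq[OF c1.mA] aq[OF c1.mB] q by simp
    also have "\<dots> = T A B" using Tinv qp A by blast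
    finally have e: "T A B = T (Imatch n) (Bc tau0 n)" by simp
    have "(\<Sum>tau\<in>P2n n. T (Imatch n) (Bc tau n) * Mop tau n A B) = (\<Sum>tau\<in>P2n n. T (Imatch n) (Bc tau n) * (if tau = tau0 then 1 else 0))"
      using Mop_val[OF A True t0(2) t0(1)] by simp
    also have "\<dots> = T (Imatch n) (Bc tau0 n)" by (rule sum_delta_c[OF finite_P2n t0(1)])
    finally show ?thesis using e by simp
  qed
  have "insp n (\<lambda>A B. \<Sum>tau\<in>P2n n. T (Imatch n) (Bc tau n) * Mop tau n A B)"
    by (rule insp_sum[OF finite_P2n]) (use Mop_insp in blast)
  then have "insp n T" by (rule insp_cong) (use rep in blast)
  then show ?thesis unfolding insp_def .
qed

theorem fbasis: "f_basis n"
  unfolding f_basis_def using fop_equiv indep span by blast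

theorem theorem3p3:
  shows "(\<forall>mu k n tau. mu \<in> P2 \<and> sum_mset mu = k \<and> k \<le> n \<and> tau \<in> P2n n \<longrightarrow>
            (sum_mset tau > k \<longrightarrow> dcoef mu n tau = 0) \<and>
            (sum_mset tau = k \<and> tau \<noteq> mu \<longrightarrow> dcoef mu n tau = 0) \<and>
            (tau = mu \<longrightarrow> dcoef mu n tau = 2 ^ size mu) \<and>
            (\<forall>j. sum_mset tau = j \<and> j < k \<longrightarrow>
               dcoef mu n tau = of_int
                 (\<Sum>r = max j ((k + 1) div 2)..k - 1.
                    (\<Sum>s = max j ((k + 1) div 2)..r.
                        (-1) ^ (r - s) * int ((r - j) choose (s - j))
                        * int (mcount (pad1 mu (2 * s)) (dbl (pad1 tau s))))
                    * int ((n - j) choose (r - j)))))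
         \<and> (\<forall>n. f_basis n)"
  proof -
  have A: "\<forall>mu k n tau. mu \<in> P2 \<and> sum_mset mu = k \<and> k \<le> n \<and> tau \<in> P2n n \<longrightarrow>
            (sum_mset tau > k \<longrightarrow> dcoef mu n tau = 0) \<and>
            (sum_mset tau = k \<and> tau \<noteq> mu \<longrightarrow> dcoef mu n tau = 0) \<and>
            (tau = mu \<longrightarrow> dcoef mu n tau = 2 ^ size mu) \<and>
            (\<forall>j. sum_mset tau = j \<and> j < k \<longrightarrow>
               dcoef mu n tau = of_int
                 (\<Sum>r = max j ((k + 1) div 2)..k - 1.
                    (\<Sum>s = max j ((k + 1) div 2)..r.
                        (-1) ^ (r - s) * int ((r - j) choose (s - j))
                        * int (mcount (pad1 mu (2 * s)) (dbl (pad1 tau s))))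
                    * int ((n - j) choose (r - j))))"
  proof (intro allI impI)
    fix mu k n tau
    assume h: "mu \<in> P2 \<and> sum_mset mu = k \<and> k \<le> n \<and> tau \<in> P2n n"
    show "(sum_mset tau > k \<longrightarrow> dcoef mu n tau = 0) \<and>
            (sum_mset tau = k \<and> tau \<noteq> mu \<longrightarrow> dcoef mu n tau = 0) \<and>
            (tau = mu \<longrightarrow> dcoef mu n tau = 2 ^ size mu) \<and>
            (\<forall>j. sum_mset tau = j \<and> j < k \<longrightarrow>
               dcoef mu n tau = of_int
                 (\<Sum>r = max j ((k + 1) div 2)..k - 1.
                    (\<Sum>s = max j ((k + 1) div 2)..r.
                        (-1) ^ (r - s) * int ((r - j) choose (s - j))
                        * int (mcount (pad1 mu (2 * s)) (dbl (pad1 tau s))))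
                    * int ((n - j) choose (r - j))))"
      using part1[of mu k n tau] h by blast
  qed
  show ?thesis using A fbasis by blast
qed

end
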